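(* Let $k_0,k_1,k_{-1},k_2,e_T$ be nonnegative real parameters with $k_1\neq0$, $k_2\neq0$, and $k_2e_T<k_0$. Consider the system \[ \dot s = k_0-k_1(e_T-c)s+k_{-1}c,\qquad \dot c = k_1(e_T-c)s-(k_{-1}+k_2)c, \] extended to the Poincaré sphere, and let $P_0=\left(\frac{(k_{-1}+k_2)k_0}{k_1(k_2e_T-k_0)},\frac{k_0}{k_2}\right)$ (a saddle, lying in the second quadrant). Then every solution starting in the first quadrant converges to $P_1$ as $t\to\infty$, and its trajectory in the phase plane is asymptotic to the line $c=e_T$. There is a unique trajectory connecting the saddle $P_0$ to $P_1$ (i.e. with $\alpha$-limit $P_0$ and $\omega$-limit $P_1$).
   Context: The Poincaré sphere compactification: the phase plane is identified with the upper hemisphere of a sphere by central projection from the center, the vector field extends (after multiplication by a positive factor) to the whole sphere with invariant equator, and equator points represent directions at infinity. $P_1$ is the stationary point at infinity corresponding to the ray $\mathbb{R}_+(1,0)$ (the positive $s$-direction). *)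

theory Defs
  imports "HOL-Analysis.Analysis"
begin

definition mm_field :: "real \<Rightarrow> real \<Rightarrow> real \<Rightarrow> real \<Rightarrow> real \<Rightarrow> real \<times> real \<Rightarrow> real \<times> real" where
  "mm_field k0 k1 km1 k2 eT p =
     (let s = fst p; c = snd p in
       (k0 - k1 * (eT - c) * s + km1 * c, k1 * (eT - c) * s - (km1 + k2) * c))"

definition is_solution :: "(real \<times> real \<Rightarrow> real \<times> real) \<Rightarrow> real set \<Rightarrow> (real \<Rightarrow> real \<times> real) \<Rightarrow> bool" where
  "is_solution F I x \<longleftrightarrow> open I \<and> is_interval I \<and> I \<noteq> {} \<and>
     (\<forall>t\<in>I. (x has_vector_derivative F (x t)) (at t))"

definition is_maximal_solution :: "(real \<times> real \<Rightarrow> real \<times> real) \<Rightarrow> real set \<Rightarrow> (real \<Rightarrow> real \<times> real) \<Rightarrow> bool" where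
  "is_maximal_solution F I x \<longleftrightarrow> is_solution F I x \<and>
     (\<forall>J y. is_solution F J y \<and> I \<subseteq> J \<and> (\<forall>t\<in>I. y t = x t) \<longrightarrow> J = I)"

definition lower_end :: "real set \<Rightarrow> real filter" where
  "lower_end I = (if bdd_below I then at_right (Inf I) else at_bot)"

definition upper_end :: "real set \<Rightarrow> real filter" where
  "upper_end I = (if bdd_above I then at_left (Sup I) else at_top)"

text \<open>Central projection of the phase plane onto the upper hemisphere of the unit sphere
  (plane placed at height 1).\<close>
definition poincare :: "real \<times> real \<Rightarrow> real \<times> real \<times> real" where
  "poincare p = (let r = sqrt (1 + (fst p)\<^sup>2 + (snd p)\<^sup>2) in
                   (fst p / r, snd p / r, 1 / r))"

text \<open>Equator point at infinity in direction (1,0).\<close>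
definition P1 :: "real \<times> real \<times> real" where
  "P1 = (1, 0, 0)"

definition P0 :: "real \<Rightarrow> real \<Rightarrow> real \<Rightarrow> real \<Rightarrow> real \<Rightarrow> real \<times> real" where
  "P0 k0 k1 km1 k2 eT = ((km1 + k2) * k0 / (k1 * (k2 * eT - k0)), k0 / k2)"

end

theory Submission
  imports Defs "HOL-Analysis.Analysis"
begin

lemma vec_mvt:
  fixes f :: "real \<Rightarrow> 'a::real_normed_vector"
  assumes der: "\<And>t. t \<in> {a..b} \<Longrightarrow> (f has_vector_derivative f' t) (at t within {a..b})"
    and bd: "\<And>t. t \<in> {a..b} \<Longrightarrow> norm (f' t) \<le> B"
    and x: "x \<in> {a..b}" and y: "y \<in> {a..b}"
  shows "norm (f x - f y) \<le> B * \<bar>x - y\<bar>"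
proof -
  have "norm (f x - f y) \<le> B * norm (x - y)"
  proof (rule differentiable_bound[of "{a..b}" f "\<lambda>t h. h *\<^sub>R f' t" B])
    show "convex {a..b}" by simp
    show "(f has_derivative (\<lambda>h. h *\<^sub>R f' t)) (at t within {a..b})" if "t \<in> {a..b}" for t
      using der[OF that] by (simp add: has_vector_derivative_def)
    show "onorm (\<lambda>h. h *\<^sub>R f' t) \<le> B" if "t \<in> {a..b}" for t
    proof (rule onorm_le)
      fix h :: real
      have "norm (h *\<^sub>R f' t) = \<bar>h\<bar> * norm (f' t)" by simp
      also have "\<dots> \<le> \<bar>h\<bar> * B" using bd[OF that] by (simp add: mult_left_mono)
      finally show "norm (h *\<^sub>R f' t) \<le> B * norm h" by (simp add: mult.commute)
    qed
  qed (use x y in auto)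
  then show ?thesis by simp
qed

lemma barrier:
  fixes f f' :: "real \<Rightarrow> real"
  assumes ab: "a \<le> b"
    and der: "\<And>t. a \<le> t \<Longrightarrow> t \<le> b \<Longrightarrow> (f has_real_derivative f' t) (at t)"
    and sgn: "\<And>t. a \<le> t \<Longrightarrow> t \<le> b \<Longrightarrow> f t > e \<Longrightarrow> f' t \<le> 0"
    and fa: "f a \<le> e"
  shows "f b \<le> e"
proof (rule ccontr)
  assume nb: "\<not> f b \<le> e"
  have cont: "continuous_on {a..b} f"
    using der by (meson DERIV_isCont atLeastAtMost_iff continuous_at_imp_continuous_on)
  define S where "S = {a..b} \<inter> f -` {..e}"
  have cS: "closed S" unfolding S_def
    by (rule continuous_closed_preimage[OF cont]) auto
  have aS: "a \<in> S" using ab fa by (auto simp: S_def)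
  have bdd: "bdd_above S" unfolding S_def by (auto intro: bdd_aboveI[where M=b])
  define \<tau> where "\<tau> = Sup S"
  have tS: "\<tau> \<in> S" unfolding \<tau>_def using closed_contains_Sup[OF _ bdd cS] aS by blast
  have tb0: "\<tau> \<le> b" "f \<tau> \<le> e" using tS by (auto simp: S_def)
  have tb: "\<tau> < b" using tb0 nb by (metis order.order_iff_strict)
  have ta: "a \<le> \<tau>" using tS by (auto simp: S_def)
  have gt: "f t > e" if "\<tau> < t" "t \<le> b" for t
  proof (rule ccontr)
    assume "\<not> f t > e"
    then have "t \<in> S" using that ta by (auto simp: S_def)
    then have "t \<le> \<tau>" unfolding \<tau>_def using bdd by (simp add: cSup_upper)
    then show False using that by simp
  qed
  have "f b \<le> f \<tau>"
  proof (rule DERIV_nonpos_imp_decreasing_open[of \<tau> b f])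
    show "\<tau> \<le> b" using tb by simp
    show "\<exists>y. (f has_real_derivative y) (at x) \<and> y \<le> 0" if "\<tau> < x" "x < b" for x
      using der[of x] sgn[of x] gt[of x] that ta by auto
    show "continuous_on {\<tau>..b} f" by (rule continuous_on_subset[OF cont]) (use ta in auto)
  qed
  then show False using tS nb by (auto simp: S_def)
qed

lemma real_induct:
  fixes a b :: real
  assumes ab: "a \<le> b"
    and closed: "\<And>t. a \<le> t \<Longrightarrow> t \<le> b \<Longrightarrow> (\<And>\<tau>. a \<le> \<tau> \<Longrightarrow> \<tau> < t \<Longrightarrow> P \<tau>) \<Longrightarrow> P t"
    and step: "\<And>t. a \<le> t \<Longrightarrow> t < b \<Longrightarrow> (\<And>\<tau>. a \<le> \<tau> \<Longrightarrow> \<tau> \<le> t \<Longrightarrow> P \<tau>) \<Longrightarrow>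
                 \<exists>d>0. \<forall>\<tau>. t < \<tau> \<and> \<tau> < t + d \<longrightarrow> P \<tau>"
  shows "P b"
proof -
  define S where "S = {t. a \<le> t \<and> t \<le> b \<and> (\<forall>\<tau>. a \<le> \<tau> \<and> \<tau> \<le> t \<longrightarrow> P \<tau>)}"
  have Pa: "P a" using closed[of a] ab by auto
  have aS: "a \<in> S" using ab Pa by (auto simp: S_def)
  have bdd: "bdd_above S" unfolding S_def by (auto intro: bdd_aboveI[where M=b])
  define m where "m = Sup S"
  have am: "a \<le> m" unfolding m_def using aS bdd by (simp add: cSup_upper)
  have mb: "m \<le> b" unfolding m_def using aS by (intro cSup_least) (auto simp: S_def)
  have below: "P \<tau>" if H: "a \<le> \<tau>" "\<tau> < m" for \<tau>
  proof -
    obtain s where "s \<in> S" "\<tau> < s" using less_cSup_iff[of S \<tau>] aS bdd H unfolding m_def by auto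
    then show ?thesis using H by (auto simp: S_def)
  qed
  have Pm: "P m" using closed[OF am mb below] by blast
  have mS: "\<forall>\<tau>. a \<le> \<tau> \<and> \<tau> \<le> m \<longrightarrow> P \<tau>"
    using below Pm by (metis order.not_eq_order_implies_strict)
  show ?thesis
  proof (cases "m < b")
    case True
    obtain d where d: "d > 0" "\<forall>\<tau>. m < \<tau> \<and> \<tau> < m + d \<longrightarrow> P \<tau>"
      using step[OF am True] mS by blast
    define m' where "m' = min (m + d/2) b"
    have m'1: "a \<le> m'" "m' \<le> b" "m < m'" "m' < m + d" using am True d(1) by (auto simp: m'_def)
    have "P \<tau>" if "a \<le> \<tau>" "\<tau> \<le> m'" for \<tau>
    proof (cases "\<tau> \<le> m")
      case True then show ?thesis using mS that by blast
    next
      case False then show ?thesis using d(2) m'1 that by auto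
    qed
    then have "m' \<in> S" unfolding S_def using m'1 by blast
    then have "m' \<le> m" unfolding m_def using bdd by (simp add: cSup_upper)
    then show ?thesis using True d by (auto simp: m'_def)
  next
    case False
    then show ?thesis using mb Pm by simp
  qed
qed

lemma energy_zero:
  fixes e e' :: "real \<Rightarrow> real"
  assumes der: "\<And>t. a \<le> t \<Longrightarrow> t \<le> b \<Longrightarrow> (e has_real_derivative e' t) (at t)"
    and nn: "\<And>t. a \<le> t \<Longrightarrow> t \<le> b \<Longrightarrow> e t \<ge> 0"
    and bd: "\<And>t. a \<le> t \<Longrightarrow> t \<le> b \<Longrightarrow> \<bar>e' t\<bar> \<le> M * e t"
    and tz: "a \<le> tz" "tz \<le> b" and z: "e tz = 0"
    and t: "a \<le> t" "t \<le> b"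
  shows "e t = 0"
proof (cases "tz \<le> t")
  case True
  have "(\<lambda>t. e t * exp (- M * t)) t \<le> (\<lambda>t. e t * exp (- M * t)) tz"
  proof (rule DERIV_nonpos_imp_nonincreasing[OF True])
    fix x assume x: "tz \<le> x" "x \<le> t"
    have "((\<lambda>t. e t * exp (- M * t)) has_real_derivative
        e' x * exp (- M * x) + e x * (exp (- M * x) * (- M))) (at x)"
      using der[of x] x tz t by (auto intro!: derivative_eq_intros)
    moreover have "e' x * exp (- M * x) + e x * (exp (- M * x) * (- M)) \<le> 0"
    proof -
      have "e' x \<le> M * e x" using bd[of x] x tz t by auto
      then have "(e' x - M * e x) * exp (- M * x) \<le> 0"
        by (simp add: mult_nonpos_nonneg)
      then show ?thesis by (simp add: algebra_simps)
    qed
    ultimately show "\<exists>y. ((\<lambda>t. e t * exp (- M * t)) has_real_derivative y) (at x) \<and> y \<le> 0" by blast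
  qed
  then have "e t * exp (- M * t) \<le> 0" using z by simp
  then have "e t \<le> 0" by (simp add: mult_le_0_iff)
  then show ?thesis using nn[OF t] by simp
next
  case False
  then have tt: "t \<le> tz" by simp
  have "(\<lambda>t. e t * exp (M * t)) t \<le> (\<lambda>t. e t * exp (M * t)) tz"
  proof (rule DERIV_nonneg_imp_nondecreasing[OF tt])
    fix x assume x: "t \<le> x" "x \<le> tz"
    have "((\<lambda>t. e t * exp (M * t)) has_real_derivative
        e' x * exp (M * x) + e x * (exp (M * x) * M)) (at x)"
      using der[of x] x tz t by (auto intro!: derivative_eq_intros)
    moreover have "e' x * exp (M * x) + e x * (exp (M * x) * M) \<ge> 0"
    proof -
      have "- e' x \<le> M * e x" using bd[of x] x tz t by auto
      then have "(e' x + M * e x) * exp (M * x) \<ge> 0"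
        by simp
      then show ?thesis by (simp add: algebra_simps)
    qed
    ultimately show "\<exists>y. ((\<lambda>t. e t * exp (M * t)) has_real_derivative y) (at x) \<and> y \<ge> 0" by blast
  qed
  then have "e t * exp (M * t) \<le> 0" using z by simp
  then have "e t \<le> 0" by (simp add: mult_le_0_iff)
  then show ?thesis using nn[OF t] by simp
qed

primrec pic :: "('a::banach \<Rightarrow> 'a) \<Rightarrow> 'a \<Rightarrow> real \<Rightarrow> real \<Rightarrow> nat \<Rightarrow> real \<Rightarrow> 'a" where
  "pic F p a t0 0 = (\<lambda>t. p)"
| "pic F p a t0 (Suc n) = (\<lambda>t. p + (integral {a..t} (\<lambda>\<tau>. F (pic F p a t0 n \<tau>)) -
                                    integral {a..t0} (\<lambda>\<tau>. F (pic F p a t0 n \<tau>))))"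

lemma picard_local:
  fixes F :: "'a::banach \<Rightarrow> 'a"
  assumes Lip: "\<And>x y. x \<in> cball p 1 \<Longrightarrow> y \<in> cball p 1 \<Longrightarrow> norm (F x - F y) \<le> L * norm (x - y)"
    and Bd: "\<And>x. x \<in> cball p 1 \<Longrightarrow> norm (F x) \<le> M"
    and dpos: "0 < \<delta>" and dM: "\<delta> * M \<le> 1" and dL: "\<delta> * L \<le> 1/2" and L0: "0 \<le> L"
  shows "\<exists>z. z t0 = p \<and> (\<forall>t. t0 - \<delta> < t \<and> t < t0 + \<delta> \<longrightarrow> (z has_vector_derivative F (z t)) (at t))"
proof -
  define a where "a = t0 - \<delta>"
  define b where "b = t0 + \<delta>"
  define S where "S = {a..b}"
  define phi where "phi = pic F p a t0"
  have t0S: "t0 \<in> S" using dpos by (auto simp: S_def a_def b_def)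
  have distS: "\<bar>t - t0\<bar> \<le> \<delta>" if "t \<in> S" for t using that by (auto simp: S_def a_def b_def)
  have contF: "continuous_on (cball p 1) F"
  proof (rule lipschitz_on_continuous_on)
    show "L-lipschitz_on (cball p 1) F"
      using Lip L0 by (auto intro!: lipschitz_onI simp: dist_norm)
  qed
  have M0: "0 \<le> M" using Bd[of p] norm_ge_zero[of "F p"] by (smt (verit) centre_in_cball zero_le_one)
  have phiS0: "phi (Suc n) t0 = p" for n by (simp add: phi_def)
  have main: "continuous_on S (phi n) \<and> (\<forall>t\<in>S. phi n t \<in> cball p 1)" for n
  proof (induction n)
    case 0
    then show ?case by (simp add: phi_def)
  next
    case (Suc n)
    have cF: "continuous_on S (\<lambda>\<tau>. F (phi n \<tau>))"
      using Suc by (intro continuous_on_compose2[OF contF]) auto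
    have der: "(phi (Suc n) has_vector_derivative F (phi n t)) (at t within S)" if "t \<in> S" for t
    proof -
      have "((\<lambda>u. integral {a..u} (\<lambda>\<tau>. F (phi n \<tau>))) has_vector_derivative F (phi n t)) (at t within S)"
        using integral_has_vector_derivative[of a b "\<lambda>\<tau>. F (phi n \<tau>)" t] cF that by (simp add: S_def)
      then have "((\<lambda>u. p + (integral {a..u} (\<lambda>\<tau>. F (phi n \<tau>)) - integral {a..t0} (\<lambda>\<tau>. F (phi n \<tau>))))
          has_vector_derivative F (phi n t)) (at t within S)"
        by (auto intro!: derivative_eq_intros)
      then show ?thesis by (simp add: phi_def)
    qed
    have cont: "continuous_on S (phi (Suc n))"
      using der by (meson continuous_on_eq_continuous_within has_vector_derivative_continuous)
    have "phi (Suc n) t \<in> cball p 1" if "t \<in> S" for t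
    proof -
      have "norm (phi (Suc n) t - phi (Suc n) t0) \<le> M * \<bar>t - t0\<bar>"
        using vec_mvt[of a b "phi (Suc n)" "\<lambda>t. F (phi n t)" M t t0] der Bd Suc that t0S
        by (auto simp: S_def)
      also have "\<dots> \<le> M * \<delta>" using distS[OF that] M0 by (simp add: mult_left_mono)
      finally show ?thesis using dM phiS0 by (simp add: dist_norm norm_minus_commute mult.commute)
    qed
    then show ?case using cont by blast
  qed
  have derS: "(phi (Suc n) has_vector_derivative F (phi n t)) (at t within S)" if "t \<in> S" for t n
  proof -
    have cF: "continuous_on S (\<lambda>\<tau>. F (phi n \<tau>))"
      using main[of n] by (intro continuous_on_compose2[OF contF]) auto
    have "((\<lambda>u. integral {a..u} (\<lambda>\<tau>. F (phi n \<tau>))) has_vector_derivative F (phi n t)) (at t within S)"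
      using integral_has_vector_derivative[of a b "\<lambda>\<tau>. F (phi n \<tau>)" t] cF that by (simp add: S_def)
    then have "((\<lambda>u. p + (integral {a..u} (\<lambda>\<tau>. F (phi n \<tau>)) - integral {a..t0} (\<lambda>\<tau>. F (phi n \<tau>))))
        has_vector_derivative F (phi n t)) (at t within S)"
      by (auto intro!: derivative_eq_intros)
    then show ?thesis by (simp add: phi_def)
  qed
  have diff: "\<forall>t\<in>S. norm (phi (Suc n) t - phi n t) \<le> (1/2) ^ n" for n
  proof (induction n)
    case 0
    show ?case
    proof
      fix t assume t: "t \<in> S"
      have "phi (Suc 0) t \<in> cball p 1" using main t by blast
      then show "norm (phi (Suc 0) t - phi 0 t) \<le> (1/2) ^ 0"
        by (simp add: phi_def dist_norm norm_minus_commute)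
    qed
  next
    case (Suc n)
    show ?case
    proof
      fix t assume t: "t \<in> S"
      have d2: "((\<lambda>t. phi (Suc (Suc n)) t - phi (Suc n) t) has_vector_derivative
          F (phi (Suc n) s) - F (phi n s)) (at s within S)" if "s \<in> S" for s
        using derS[OF that, of "Suc n"] derS[OF that, of n] by (intro derivative_intros)
      have bd: "norm (F (phi (Suc n) s) - F (phi n s)) \<le> L * (1/2)^n" if "s \<in> S" for s
      proof -
        have "norm (F (phi (Suc n) s) - F (phi n s)) \<le> L * norm (phi (Suc n) s - phi n s)"
          using Lip main that by blast
        also have "\<dots> \<le> L * (1/2)^n" using Suc that L0 by (simp add: mult_left_mono)
        finally show ?thesis .
      qed
      have "norm ((phi (Suc (Suc n)) t - phi (Suc n) t) - (phi (Suc (Suc n)) t0 - phi (Suc n) t0))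
            \<le> L * (1/2)^n * \<bar>t - t0\<bar>"
        using vec_mvt[of a b "\<lambda>t. phi (Suc (Suc n)) t - phi (Suc n) t"
            "\<lambda>s. F (phi (Suc n) s) - F (phi n s)" "L * (1/2)^n" t t0] d2 bd t t0S
        by (auto simp: S_def)
      also have "\<dots> \<le> L * (1/2)^n * \<delta>" using distS[OF t] L0 by (simp add: mult_left_mono)
      also have "\<dots> = (\<delta> * L) * (1/2)^n" by simp
      also have "\<dots> \<le> (1/2) * (1/2)^n" using dL by (intro mult_right_mono) auto
      finally show "norm (phi (Suc (Suc n)) t - phi (Suc n) t) \<le> (1/2) ^ Suc n"
        using phiS0 by simp
    qed
  qed
  have tele: "norm (phi (n + k) t - phi n t) \<le> 2 * (1/2)^n - 2 * (1/2)^(n+k)" if "t \<in> S" for n k t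
  proof (induction k)
    case 0 then show ?case by simp
  next
    case (Suc k)
    have "norm (phi (n + Suc k) t - phi n t) \<le> norm (phi (Suc (n + k)) t - phi (n+k) t) + norm (phi (n + k) t - phi n t)"
    proof -
      have "phi (n + Suc k) t - phi n t = (phi (Suc (n + k)) t - phi (n+k) t) + (phi (n + k) t - phi n t)"
        by simp
      then show ?thesis by (metis norm_triangle_ineq)
    qed
    also have "\<dots> \<le> (1/2)^(n+k) + (2 * (1/2)^n - 2 * (1/2)^(n+k))"
      using diff[of "n+k"] that Suc by (intro add_mono) auto
    also have "\<dots> = 2 * (1/2)^n - 2 * (1/2)^(n + Suc k)" by simp
    finally show ?case .
  qed
  have tele2: "norm (phi m t - phi n t) \<le> 2 * (1/2)^n" if H: "t \<in> S" "n \<le> m" for n m t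
  proof -
    obtain k where mk: "m = n + k" using le_Suc_ex[OF H(2)] by blast
    have "0 \<le> 2 * (1/2::real)^(n+k)" by simp
    then show ?thesis unfolding mk using tele[OF H(1), of n k] by linarith
  qed
  have cauchy: "Cauchy (\<lambda>n. phi n t)" if "t \<in> S" for t
  proof (rule metric_CauchyI)
    fix e :: real assume e: "e > 0"
    have "(\<lambda>n. 2 * (1/2::real)^n) \<longlonglongrightarrow> 0"
      by (intro tendsto_mult_right_zero LIMSEQ_power_zero) auto
    then have "\<forall>\<^sub>F n in sequentially. 2 * (1/2::real)^n < e"
      using e by (simp add: order_tendsto_iff)
    then obtain N where N: "\<And>n. n \<ge> N \<Longrightarrow> 2 * (1/2::real)^n < e"
      unfolding eventually_sequentially by blast
    show "\<exists>N. \<forall>m\<ge>N. \<forall>n\<ge>N. dist (phi m t) (phi n t) < e"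
    proof (intro exI allI impI)
      fix m n assume "N \<le> m" "N \<le> n"
      show "dist (phi m t) (phi n t) < e"
      proof (cases "n \<le> m")
        case True
        then show ?thesis using tele2[OF that True] N[of n] \<open>N \<le> n\<close> by (simp add: dist_norm)
      next
        case False
        then show ?thesis using tele2[OF that, of m n] N[of m] \<open>N \<le> m\<close> by (simp add: dist_norm norm_minus_commute)
      qed
    qed
  qed
  define \<phi> where "\<phi> t = lim (\<lambda>n. phi n t)" for t
  have conv: "(\<lambda>n. phi n t) \<longlonglongrightarrow> \<phi> t" if "t \<in> S" for t
    using cauchy[OF that] by (simp add: \<phi>_def Cauchy_convergent_iff convergent_LIMSEQ_iff)
  have limbd: "norm (\<phi> t - phi n t) \<le> 2 * (1/2)^n" if "t \<in> S" for t n
  proof (rule LIMSEQ_le_const2)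
    show "(\<lambda>m. norm (phi m t - phi n t)) \<longlonglongrightarrow> norm (\<phi> t - phi n t)"
      by (intro tendsto_intros conv that)
    show "\<exists>N. \<forall>m\<ge>N. norm (phi m t - phi n t) \<le> 2 * (1 / 2) ^ n"
      using tele2[OF that] by blast
  qed
  have \<phi>ball: "\<phi> t \<in> cball p 1" if "t \<in> S" for t
  proof -
    have "norm (\<phi> t - p) \<le> 1"
    proof (rule LIMSEQ_le_const2)
      show "(\<lambda>m. norm (phi m t - p)) \<longlonglongrightarrow> norm (\<phi> t - p)"
        by (intro tendsto_intros conv that)
      show "\<exists>N. \<forall>m\<ge>N. norm (phi m t - p) \<le> 1"
        using main that by (auto simp: dist_norm norm_minus_commute)
    qed
    then show ?thesis by (simp add: dist_norm norm_minus_commute)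
  qed
  obtain g where g: "\<forall>t\<in>S. (\<lambda>n. phi (Suc n) t) \<longlonglongrightarrow> g t \<and>
      (g has_derivative (\<lambda>h. h *\<^sub>R F (\<phi> t))) (at t within S)"
  proof -
    have "\<exists>g. \<forall>t\<in>S. (\<lambda>n. phi (Suc n) t) \<longlonglongrightarrow> g t \<and>
      (g has_derivative (\<lambda>h. h *\<^sub>R F (\<phi> t))) (at t within S)"
    proof (rule has_derivative_sequence[where f'="\<lambda>n t h. h *\<^sub>R F (phi n t)"])
      show "convex S" by (simp add: S_def)
      show "(phi (Suc n) has_derivative (\<lambda>h. h *\<^sub>R F (phi n t))) (at t within S)" if "t \<in> S" for n t
        using derS[OF that, of n] by (simp add: has_vector_derivative_def)
      show "t0 \<in> S" by (rule t0S)
      show "(\<lambda>n. phi (Suc n) t0) \<longlonglongrightarrow> p" by (simp add: phiS0)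
      fix e :: real assume e: "0 < e"
      have "(\<lambda>n. 2 * L * (1/2::real)^n) \<longlonglongrightarrow> 0"
        by (intro tendsto_mult_right_zero LIMSEQ_power_zero) auto
      then have ev: "\<forall>\<^sub>F n in sequentially. 2 * L * (1/2::real)^n < e"
        using e by (simp add: order_tendsto_iff)
      show "\<forall>\<^sub>F n in sequentially. \<forall>t\<in>S. \<forall>h. norm (h *\<^sub>R F (phi n t) - h *\<^sub>R F (\<phi> t)) \<le> e * norm h"
        using ev
      proof eventually_elim
        case (elim n)
        show ?case
        proof (intro ballI allI)
          fix t h assume t: "t \<in> S"
          have "norm (F (phi n t) - F (\<phi> t)) \<le> L * norm (phi n t - \<phi> t)"
            using Lip main \<phi>ball t by blast
          also have "\<dots> \<le> L * (2 * (1/2)^n)"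
            using limbd[OF t, of n] L0 by (simp add: mult_left_mono norm_minus_commute)
          also have "\<dots> \<le> e" using elim by simp
          finally have *: "norm (F (phi n t) - F (\<phi> t)) \<le> e" .
          have "norm (h *\<^sub>R F (phi n t) - h *\<^sub>R F (\<phi> t)) = \<bar>h\<bar> * norm (F (phi n t) - F (\<phi> t))"
            by (metis norm_scaleR scaleR_right_diff_distrib)
          also have "\<dots> \<le> \<bar>h\<bar> * e" using * by (simp add: mult_left_mono)
          finally show "norm (h *\<^sub>R F (phi n t) - h *\<^sub>R F (\<phi> t)) \<le> e * norm h"
            by (simp add: mult.commute)
        qed
      qed
    qed
    then show ?thesis using that by blast
  qed
  have g\<phi>: "g t = \<phi> t" if "t \<in> S" for t
  proof -
    have "(\<lambda>n. phi (Suc n) t) \<longlonglongrightarrow> \<phi> t" using conv[OF that] by (rule LIMSEQ_Suc)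
    moreover have "(\<lambda>n. phi (Suc n) t) \<longlonglongrightarrow> g t" using g that by blast
    ultimately show ?thesis using LIMSEQ_unique by metis
  qed
  show ?thesis
  proof (intro exI conjI allI impI)
    have "(\<lambda>n. phi (Suc n) t0) \<longlonglongrightarrow> g t0" using g t0S by blast
    then show "g t0 = p" using phiS0 by (simp add: LIMSEQ_const_iff)
    fix t assume t: "t0 - \<delta> < t \<and> t < t0 + \<delta>"
    then have tS: "t \<in> S" by (auto simp: S_def a_def b_def)
    have "(g has_vector_derivative F (g t)) (at t within S)"
      using g tS g\<phi>[OF tS] by (simp add: has_vector_derivative_def)
    moreover have "at t within S = at t"
      unfolding S_def by (rule at_within_Icc_at) (use t in \<open>auto simp: a_def b_def\<close>)
    ultimately show "(g has_vector_derivative F (g t)) (at t)" by simp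
  qed
qed

lemma comp_der:
  assumes "(x has_vector_derivative v) F"
  shows "((\<lambda>t. fst (x t)) has_real_derivative fst v) F"
    and "((\<lambda>t. snd (x t)) has_real_derivative snd v) F"
  using has_derivative_fst[OF assms[unfolded has_vector_derivative_def]]
    has_derivative_snd[OF assms[unfolded has_vector_derivative_def]]
  by (auto simp: has_real_derivative_iff_has_vector_derivative has_vector_derivative_def)

lemma abs_fst_le: "\<bar>fst v\<bar> \<le> norm (v::real\<times>real)"
  using norm_fst_le[of "fst v" "snd v"] by simp
lemma abs_snd_le: "\<bar>snd v\<bar> \<le> norm (v::real\<times>real)"
  using norm_snd_le[of "snd v" "fst v"] by simp
lemma norm_le_fst_snd: "norm (v::real\<times>real) \<le> \<bar>fst v\<bar> + \<bar>snd v\<bar>"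
  using norm_Pair_le[of "fst v" "snd v"] by simp

locale mm =
  fixes k0 k1 km1 k2 eT :: real
  assumes k0: "k0 \<ge> 0" and k1: "k1 \<ge> 0" and km1: "km1 \<ge> 0" and k2: "k2 \<ge> 0" and eT: "eT \<ge> 0"
    and k1n: "k1 \<noteq> 0" and k2n: "k2 \<noteq> 0" and lt: "k2 * eT < k0"
begin

abbreviation "F \<equiv> mm_field k0 k1 km1 k2 eT"

lemma F_simps: "fst (F x) = k0 - k1 * (eT - snd x) * fst x + km1 * snd x"
  "snd (F x) = k1 * (eT - snd x) * fst x - (km1 + k2) * snd x"
  by (simp_all add: mm_field_def Let_def)

lemma k1p: "k1 > 0" using k1 k1n by simp
lemma k2p: "k2 > 0" using k2 k2n by simp
lemma k0p: "k0 > 0" using lt k2 eT by (smt (verit) mult_nonneg_nonneg)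

lemma F_lip:
  assumes "norm x \<le> R" "norm y \<le> R"
  shows "norm (F x - F y) \<le> (2 * k1 * eT + 4 * k1 * R + 2 * km1 + k2) * norm (x - y)"
proof -
  define n where "n = norm (x - y)"
  have hs: "\<bar>fst x - fst y\<bar> \<le> n" using abs_fst_le[of "x - y"] by (simp add: n_def)
  have hc: "\<bar>snd x - snd y\<bar> \<le> n" using abs_snd_le[of "x - y"] by (simp add: n_def)
  have c1: "\<bar>snd x\<bar> \<le> R" using abs_snd_le[of x] assms by simp
  have s2: "\<bar>fst y\<bar> \<le> R" using abs_fst_le[of y] assms by simp
  have R0: "0 \<le> R" using assms(1) norm_ge_zero order_trans by blast
  have prod: "\<bar>snd x * fst x - snd y * fst y\<bar> \<le> 2 * R * n"
  proof -
    have "snd x * fst x - snd y * fst y = snd x * (fst x - fst y) + fst y * (snd x - snd y)"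
      by (simp add: algebra_simps)
    then have "\<bar>snd x * fst x - snd y * fst y\<bar> \<le> \<bar>snd x\<bar> * \<bar>fst x - fst y\<bar> + \<bar>fst y\<bar> * \<bar>snd x - snd y\<bar>"
      by (metis abs_mult abs_triangle_ineq)
    also have "\<dots> \<le> R * n + R * n"
      by (intro add_mono mult_mono c1 s2 hs hc) (use R0 in auto)
    finally show ?thesis by simp
  qed
  have d1: "fst (F x - F y) = - k1 * eT * (fst x - fst y) + k1 * (snd x * fst x - snd y * fst y) + km1 * (snd x - snd y)"
    by (simp add: F_simps algebra_simps)
  have d2: "snd (F x - F y) = k1 * eT * (fst x - fst y) - k1 * (snd x * fst x - snd y * fst y) - (km1 + k2) * (snd x - snd y)"
    by (simp add: F_simps algebra_simps)
  have a1: "\<bar>k1 * eT * (fst x - fst y)\<bar> \<le> k1 * eT * n"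
    using hs k1 eT by (simp add: abs_mult mult_left_mono)
  have a2: "\<bar>k1 * (snd x * fst x - snd y * fst y)\<bar> \<le> k1 * (2 * R * n)"
    using prod k1 by (simp add: abs_mult mult_left_mono)
  have a3: "\<bar>km1 * (snd x - snd y)\<bar> \<le> km1 * n"
    using hc km1 by (simp add: abs_mult mult_left_mono)
  have a4: "\<bar>(km1 + k2) * (snd x - snd y)\<bar> \<le> (km1 + k2) * n"
    using hc km1 k2 by (simp add: abs_mult mult_left_mono)
  have "\<bar>fst (F x - F y)\<bar> \<le> k1 * eT * n + k1 * (2 * R * n) + km1 * n"
    unfolding d1 using a1 a2 a3 by linarith
  moreover have "\<bar>snd (F x - F y)\<bar> \<le> k1 * eT * n + k1 * (2 * R * n) + (km1 + k2) * n"
    unfolding d2 using a1 a2 a4 by linarith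
  ultimately have "norm (F x - F y) \<le> (k1 * eT * n + k1 * (2 * R * n) + km1 * n) + (k1 * eT * n + k1 * (2 * R * n) + (km1 + k2) * n)"
    using norm_le_fst_snd[of "F x - F y"] by linarith
  then show ?thesis by (simp add: n_def algebra_simps)
qed

definition LL :: "real \<Rightarrow> real" where "LL R = 2 * k1 * eT + 4 * k1 * \<bar>R\<bar> + 2 * km1 + k2"

lemma LL_nonneg: "LL R \<ge> 0" using k1 eT km1 k2 by (simp add: LL_def)

lemma F_lip': "norm x \<le> R \<Longrightarrow> norm y \<le> R \<Longrightarrow> norm (F x - F y) \<le> LL R * norm (x - y)"
  using F_lip[of x R y] by (simp add: LL_def) (smt (verit, best) norm_ge_zero)

lemma local_exist:
  assumes "R \<ge> 0"
  shows "\<exists>\<delta>>0. \<forall>p t0. norm p \<le> R \<longrightarrow> (\<exists>z. z t0 = p \<and>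
      (\<forall>t. t0 - \<delta> < t \<and> t < t0 + \<delta> \<longrightarrow> (z has_vector_derivative F (z t)) (at t)))"
proof -
  define L where "L = LL (R + 1)"
  define M where "M = norm (F 0) + L * (R + 1)"
  have L0: "L \<ge> 0" by (simp add: L_def LL_nonneg)
  have M0: "M \<ge> 0" using L0 assms by (simp add: M_def)
  define \<delta> where "\<delta> = 1 / (M + 2 * L + 1)"
  have dpos: "\<delta> > 0" using L0 M0 by (simp add: \<delta>_def)
  have dM: "\<delta> * M \<le> 1" using L0 M0 by (simp add: \<delta>_def field_simps)
  have dL: "\<delta> * L \<le> 1/2" using L0 M0 by (simp add: \<delta>_def field_simps)
  have "\<forall>p t0. norm p \<le> R \<longrightarrow> (\<exists>z. z t0 = p \<and>
      (\<forall>t. t0 - \<delta> < t \<and> t < t0 + \<delta> \<longrightarrow> (z has_vector_derivative F (z t)) (at t)))"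
  proof (intro allI impI)
    fix p :: "real \<times> real" and t0 :: real assume p: "norm p \<le> R"
    have inb: "norm x \<le> R + 1" if "x \<in> cball p 1" for x
      using that p norm_triangle_ineq[of p "x - p"] by (auto simp: dist_norm norm_minus_commute)
    show "\<exists>z. z t0 = p \<and> (\<forall>t. t0 - \<delta> < t \<and> t < t0 + \<delta> \<longrightarrow> (z has_vector_derivative F (z t)) (at t))"
    proof (rule picard_local[OF _ _ dpos dM dL L0])
      show "norm (F x - F y) \<le> L * norm (x - y)" if "x \<in> cball p 1" "y \<in> cball p 1" for x y
        using F_lip'[OF inb[OF that(1)] inb[OF that(2)]] by (simp add: L_def)
      show "norm (F x) \<le> M" if "x \<in> cball p 1" for x
      proof -
        have "norm (F x - F 0) \<le> L * norm (x - 0)"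
          using F_lip'[OF inb[OF that], of 0] assms by (simp add: L_def)
        then have "norm (F x) \<le> norm (F 0) + L * norm x"
          using norm_triangle_ineq2[of "F x" "F 0"] by simp
        also have "\<dots> \<le> norm (F 0) + L * (R + 1)"
          using inb[OF that] L0 by (simp add: mult_left_mono)
        finally show ?thesis by (simp add: M_def)
      qed
    qed
  qed
  note main = this
  show ?thesis
    apply (rule exI[where x=\<delta>])
    apply (rule conjI[OF dpos])
    by (rule main)
qed

lemma unique:
  assumes K: "is_interval K"
    and dx: "\<And>t. t \<in> K \<Longrightarrow> (x has_vector_derivative F (x t)) (at t)"
    and dy: "\<And>t. t \<in> K \<Longrightarrow> (y has_vector_derivative F (y t)) (at t)"
    and t1: "t1 \<in> K" and eq: "x t1 = y t1" and t: "t \<in> K"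
  shows "x t = y t"
proof -
  define a where "a = min t t1"
  define b where "b = max t t1"
  have aK: "a \<in> K" using t t1 by (simp add: a_def min_def)
  have bK: "b \<in> K" using t t1 by (simp add: b_def max_def)
  have sub: "{a..b} \<subseteq> K"
  proof
    fix \<tau> assume "\<tau> \<in> {a..b}"
    then have "a \<le> \<tau> \<and> \<tau> \<le> b" by simp
    then show "\<tau> \<in> K" using K[unfolded is_interval_1, rule_format, OF aK bK] by blast
  qed
  have cx: "continuous_on {a..b} x"
  proof (rule continuous_at_imp_continuous_on, rule ballI)
    fix \<tau> assume "\<tau> \<in> {a..b}"
    then have "\<tau> \<in> K" using sub by auto
    then show "isCont x \<tau>" using dx has_vector_derivative_continuous by blast
  qed
  have cy: "continuous_on {a..b} y"
  proof (rule continuous_at_imp_continuous_on, rule ballI)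
    fix \<tau> assume "\<tau> \<in> {a..b}"
    then have "\<tau> \<in> K" using sub by auto
    then show "isCont y \<tau>" using dy has_vector_derivative_continuous by blast
  qed
  obtain R1 where R1': "\<forall>z\<in>x ` {a..b}. norm z \<le> R1"
    using compact_imp_bounded[OF compact_continuous_image[OF cx compact_Icc]]
    unfolding bounded_iff by blast
  have R1: "norm (x \<tau>) \<le> R1" if "\<tau> \<in> {a..b}" for \<tau> using R1' that by blast
  obtain R2 where R2': "\<forall>z\<in>y ` {a..b}. norm z \<le> R2"
    using compact_imp_bounded[OF compact_continuous_image[OF cy compact_Icc]]
    unfolding bounded_iff by blast
  have R2: "norm (y \<tau>) \<le> R2" if "\<tau> \<in> {a..b}" for \<tau> using R2' that by blast
  define R where "R = max R1 R2"
  define L where "L = LL R"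
  define e where "e \<tau> = (fst (x \<tau>) - fst (y \<tau>))\<^sup>2 + (snd (x \<tau>) - snd (y \<tau>))\<^sup>2" for \<tau>
  define e' where "e' \<tau> = 2 * (fst (x \<tau>) - fst (y \<tau>)) * fst (F (x \<tau>) - F (y \<tau>))
      + 2 * (snd (x \<tau>) - snd (y \<tau>)) * snd (F (x \<tau>) - F (y \<tau>))" for \<tau>
  have enorm: "e \<tau> = (norm (x \<tau> - y \<tau>))\<^sup>2" for \<tau>
    by (simp add: e_def norm_Pair norm_prod_def)
  show ?thesis
  proof -
    have "e t = 0"
    proof (rule energy_zero[where e=e and e'=e' and M="2 * L" and a=a and b=b and tz=t1 and t=t])
      fix \<tau> assume \<tau>: "a \<le> \<tau>" "\<tau> \<le> b"
      then have \<tau>K: "\<tau> \<in> K" using sub by auto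
      show "(e has_real_derivative e' \<tau>) (at \<tau>)"
        unfolding e_def e'_def
        using comp_der[OF dx[OF \<tau>K]] comp_der[OF dy[OF \<tau>K]]
        by (auto intro!: derivative_eq_intros simp: algebra_simps)
      show "e \<tau> \<ge> 0" by (simp add: e_def)
      have nx: "norm (x \<tau>) \<le> R" "norm (y \<tau>) \<le> R" using R1[of \<tau>] R2[of \<tau>] \<tau> by (auto simp: R_def)
      have "e' \<tau> = 2 * inner (x \<tau> - y \<tau>) (F (x \<tau>) - F (y \<tau>))"
        by (simp add: e'_def inner_prod_def algebra_simps)
      then have "\<bar>e' \<tau>\<bar> \<le> 2 * (norm (x \<tau> - y \<tau>) * norm (F (x \<tau>) - F (y \<tau>)))"
        using Cauchy_Schwarz_ineq2[of "x \<tau> - y \<tau>" "F (x \<tau>) - F (y \<tau>)"] by simp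
      also have "\<dots> \<le> 2 * (norm (x \<tau> - y \<tau>) * (L * norm (x \<tau> - y \<tau>)))"
        using F_lip'[OF nx] by (simp add: L_def mult_left_mono)
      also have "\<dots> = 2 * L * e \<tau>" by (simp add: enorm power2_eq_square)
      finally show "\<bar>e' \<tau>\<bar> \<le> 2 * L * e \<tau>" .
    qed (use t t1 eq in \<open>auto simp: a_def b_def e_def\<close>)
    then have "norm (x t - y t) = 0" using enorm[of t] by simp
    then show ?thesis by simp
  qed
qed

end

context mm begin

lemma sol_unique:
  assumes "is_solution F J1 y1" "is_solution F J2 y2" "t1 \<in> J1" "t1 \<in> J2" "y1 t1 = y2 t1"
    "t \<in> J1" "t \<in> J2"
  shows "y1 t = y2 t"
proof (rule unique[where K="J1 \<inter> J2"])
  show "is_interval (J1 \<inter> J2)" using assms(1,2) by (simp add: is_solution_def is_interval_Int)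
qed (use assms in \<open>auto simp: is_solution_def\<close>)

lemma max_exist: "\<exists>I x. is_maximal_solution F I x \<and> t0 \<in> I \<and> x t0 = p"
proof -
  define Sols where "Sols = {(J, y). is_solution F J y \<and> t0 \<in> J \<and> y t0 = p}"
  define I where "I = \<Union> (fst ` Sols)"
  define x where "x t = (SOME y. \<exists>J. (J, y) \<in> Sols \<and> t \<in> J) t" for t
  have memI: "t \<in> I \<longleftrightarrow> (\<exists>J y. (J, y) \<in> Sols \<and> t \<in> J)" for t
    unfolding I_def by force
  have agree: "y1 t = y2 t" if "(J1, y1) \<in> Sols" "(J2, y2) \<in> Sols" "t \<in> J1" "t \<in> J2" for J1 J2 y1 y2 t
    using sol_unique[of J1 y1 J2 y2 t0 t] that by (auto simp: Sols_def)
  have xeq: "x t = y t" if "(J, y) \<in> Sols" "t \<in> J" for J y t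
  proof -
    have ex: "\<exists>y'. \<exists>J'. (J', y') \<in> Sols \<and> t \<in> J'" using that by blast
    obtain J' where J': "(J', SOME y. \<exists>J. (J, y) \<in> Sols \<and> t \<in> J) \<in> Sols \<and> t \<in> J'"
      using someI_ex[OF ex] by blast
    then show ?thesis unfolding x_def using agree[OF _ that(1) _ that(2)] by blast
  qed
  obtain \<delta> where \<delta>: "\<delta> > 0" "\<forall>p' t0'. norm p' \<le> norm p \<longrightarrow> (\<exists>z. z t0' = p' \<and>
      (\<forall>t. t0' - \<delta> < t \<and> t < t0' + \<delta> \<longrightarrow> (z has_vector_derivative F (z t)) (at t)))"
    using local_exist[of "norm p"] by auto
  obtain z where z: "z t0 = p" "\<forall>t. t0 - \<delta> < t \<and> t < t0 + \<delta> \<longrightarrow> (z has_vector_derivative F (z t)) (at t)"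
    using \<delta>(2) by blast
  have zS: "({t0 - \<delta> <..< t0 + \<delta>}, z) \<in> Sols"
    using z \<delta>(1) by (auto simp: Sols_def is_solution_def is_interval_1)
  have t0I: "t0 \<in> I" using zS \<delta>(1) memI by auto
  have xt0: "x t0 = p" using xeq[OF zS] \<delta>(1) z(1) by auto
  have openI: "open I" unfolding I_def by (auto simp: Sols_def is_solution_def)
  have intI: "is_interval I"
    unfolding is_interval_1
  proof (intro ballI allI impI)
    fix a b c assume a: "a \<in> I" and b: "b \<in> I" and c: "a \<le> c \<and> c \<le> b"
    obtain J1 y1 where 1: "(J1, y1) \<in> Sols" "a \<in> J1" using a memI by blast
    obtain J2 y2 where 2: "(J2, y2) \<in> Sols" "b \<in> J2" using b memI by blast
    have i1: "is_interval J1" "t0 \<in> J1" and i2: "is_interval J2" "t0 \<in> J2"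
      using 1 2 by (auto simp: Sols_def is_solution_def)
    show "c \<in> I"
    proof (cases "c \<le> t0")
      case True
      then have "c \<in> J1" using i1 1(2) c unfolding is_interval_1 by blast
      then show ?thesis using 1(1) memI by blast
    next
      case False
      then have "c \<in> J2" using i2 2(2) c unfolding is_interval_1 by (meson linear)
      then show ?thesis using 2(1) memI by blast
    qed
  qed
  have solI: "is_solution F I x"
    unfolding is_solution_def
  proof (intro conjI ballI)
    show "open I" "is_interval I" by (fact openI, fact intI)
    show "I \<noteq> {}" using t0I by blast
    fix t assume "t \<in> I"
    then obtain J y where Jy: "(J, y) \<in> Sols" "t \<in> J" using memI by blast
    have sol: "is_solution F J y" using Jy by (auto simp: Sols_def)
    have "(y has_vector_derivative F (y t)) (at t)" using sol Jy(2) by (auto simp: is_solution_def)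
    then have "(x has_vector_derivative F (y t)) (at t)"
      by (rule has_vector_derivative_transform_within_open[where S=J])
         (use sol Jy xeq in \<open>auto simp: is_solution_def\<close>)
    then show "(x has_vector_derivative F (x t)) (at t)" using xeq[OF Jy] by simp
  qed
  have "is_maximal_solution F I x"
    unfolding is_maximal_solution_def
  proof (intro conjI allI impI solI)
    fix J y assume H: "is_solution F J y \<and> I \<subseteq> J \<and> (\<forall>t\<in>I. y t = x t)"
    then have "(J, y) \<in> Sols" using t0I xt0 by (auto simp: Sols_def)
    then have "J \<subseteq> I" by (auto simp: I_def)
    then show "J = I" using H by blast
  qed
  then show ?thesis using t0I xt0 by blast
qed

lemma glue:
  assumes solx: "is_solution F I x" and solz: "is_solution F J z" and t1: "t1 \<in> I" "t1 \<in> J"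
    and eq: "x t1 = z t1"
  shows "is_solution F (I \<union> J) (\<lambda>t. if t \<in> I then x t else z t)"
proof -
  have oI: "open I" "is_interval I" and oJ: "open J" "is_interval J"
    using solx solz by (auto simp: is_solution_def)
  have agree: "x t = z t" if "t \<in> I" "t \<in> J" for t
    using sol_unique[OF solx solz t1 eq that] .
  show ?thesis
    unfolding is_solution_def
  proof (intro conjI ballI)
    show "open (I \<union> J)" using oI oJ by auto
    show "is_interval (I \<union> J)"
    proof -
      have "connected I" "connected J" using oI(2) oJ(2) by (simp_all add: is_interval_connected_1)
      moreover have "I \<inter> J \<noteq> {}" using t1 by blast
      ultimately have "connected (I \<union> J)" by (rule connected_Un)
      then show ?thesis by (simp add: is_interval_connected_1)
    qed
    show "I \<union> J \<noteq> {}" using t1 by blast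
    fix t assume t: "t \<in> I \<union> J"
    show "((\<lambda>t. if t \<in> I then x t else z t) has_vector_derivative
        F (if t \<in> I then x t else z t)) (at t)"
    proof (cases "t \<in> I")
      case True
      have "(x has_vector_derivative F (x t)) (at t)" using solx True by (auto simp: is_solution_def)
      then have "((\<lambda>t. if t \<in> I then x t else z t) has_vector_derivative F (x t)) (at t)"
        by (rule has_vector_derivative_transform_within_open[where S=I]) (use oI True in auto)
      then show ?thesis using True by simp
    next
      case False
      then have tJ: "t \<in> J" using t by blast
      have "(z has_vector_derivative F (z t)) (at t)" using solz tJ by (auto simp: is_solution_def)
      then have "((\<lambda>t. if t \<in> I then x t else z t) has_vector_derivative F (z t)) (at t)"
        by (rule has_vector_derivative_transform_within_open[where S=J]) (use oJ tJ agree in auto)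
      then show ?thesis using False by simp
    qed
  qed
qed

lemma blowup_right:
  assumes mx: "is_maximal_solution F I x" and t0: "t0 \<in> I"
    and bd: "\<And>t. t \<in> I \<Longrightarrow> t \<ge> t0 \<Longrightarrow> norm (x t) \<le> R"
  shows "\<not> bdd_above I"
proof
  assume bdd: "bdd_above I"
  have solx: "is_solution F I x" using mx by (simp add: is_maximal_solution_def)
  have oI: "open I" "is_interval I" using solx by (auto simp: is_solution_def)
  define T where "T = Sup I"
  have le: "t \<le> T" if "t \<in> I" for t using bdd that by (simp add: T_def cSup_upper)
  obtain \<delta> where \<delta>: "\<delta> > 0" "\<forall>p' t0'. norm p' \<le> max R 0 \<longrightarrow> (\<exists>z. z t0' = p' \<and>
      (\<forall>t. t0' - \<delta> < t \<and> t < t0' + \<delta> \<longrightarrow> (z has_vector_derivative F (z t)) (at t)))"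
    using local_exist[of "max R 0"] by auto
  define t1 where "t1 = max t0 (T - \<delta>/2)"
  have t1I: "t1 \<in> I"
  proof (cases "t0 \<le> T - \<delta>/2")
    case True
    then have "T - \<delta>/2 < Sup I" using \<delta>(1) by (simp add: T_def)
    then obtain s where s: "s \<in> I" "T - \<delta>/2 < s" using less_cSup_iff[of I] bdd t0 by auto
    have "t1 = T - \<delta>/2" using True by (simp add: t1_def)
    then show ?thesis using oI(2) t0 s True unfolding is_interval_1 by (meson less_imp_le)
  next
    case False
    then show ?thesis using t0 by (simp add: t1_def)
  qed
  have nt1: "norm (x t1) \<le> max R 0" using bd[OF t1I] by (simp add: t1_def)
  obtain z where z: "z t1 = x t1" "\<forall>t. t1 - \<delta> < t \<and> t < t1 + \<delta> \<longrightarrow> (z has_vector_derivative F (z t)) (at t)"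
    using \<delta>(2) nt1 by blast
  have solz: "is_solution F {t1 - \<delta> <..< t1 + \<delta>} z"
    using z \<delta>(1) by (auto simp: is_solution_def is_interval_1)
  have g: "is_solution F (I \<union> {t1 - \<delta> <..< t1 + \<delta>}) (\<lambda>t. if t \<in> I then x t else z t)"
    by (rule glue[OF solx solz t1I]) (use z \<delta>(1) in auto)
  have "I \<union> {t1 - \<delta> <..< t1 + \<delta>} = I"
  proof -
    have m: "\<forall>J y. is_solution F J y \<and> I \<subseteq> J \<and> (\<forall>t\<in>I. y t = x t) \<longrightarrow> J = I"
      using mx unfolding is_maximal_solution_def by blast
    show ?thesis
      using m[rule_format, of "I \<union> {t1 - \<delta> <..< t1 + \<delta>}" "\<lambda>t. if t \<in> I then x t else z t"] g
      by auto
  qed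
  moreover have "t1 + 3*\<delta>/4 \<in> {t1 - \<delta> <..< t1 + \<delta>}" using \<delta>(1) by simp
  moreover have "t1 + 3*\<delta>/4 > T" using \<delta>(1) by (simp add: t1_def)
  ultimately show False using le by fastforce
qed

lemma blowup_left:
  assumes mx: "is_maximal_solution F I x" and t0: "t0 \<in> I"
    and bd: "\<And>t. t \<in> I \<Longrightarrow> t \<le> t0 \<Longrightarrow> norm (x t) \<le> R"
  shows "\<not> bdd_below I"
proof
  assume bdd: "bdd_below I"
  have solx: "is_solution F I x" using mx by (simp add: is_maximal_solution_def)
  have oI: "open I" "is_interval I" using solx by (auto simp: is_solution_def)
  define T where "T = Inf I"
  have le: "T \<le> t" if "t \<in> I" for t using bdd that by (simp add: T_def cInf_lower)
  obtain \<delta> where \<delta>: "\<delta> > 0" "\<forall>p' t0'. norm p' \<le> max R 0 \<longrightarrow> (\<exists>z. z t0' = p' \<and>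
      (\<forall>t. t0' - \<delta> < t \<and> t < t0' + \<delta> \<longrightarrow> (z has_vector_derivative F (z t)) (at t)))"
    using local_exist[of "max R 0"] by auto
  define t1 where "t1 = min t0 (T + \<delta>/2)"
  have t1I: "t1 \<in> I"
  proof (cases "T + \<delta>/2 \<le> t0")
    case True
    then have "Inf I < T + \<delta>/2" using \<delta>(1) by (simp add: T_def)
    then obtain s where s: "s \<in> I" "s < T + \<delta>/2" using cInf_less_iff[of I] bdd t0 by auto
    have "t1 = T + \<delta>/2" using True by (simp add: t1_def)
    then show ?thesis using oI(2) t0 s True unfolding is_interval_1 by (meson less_imp_le)
  next
    case False
    then show ?thesis using t0 by (simp add: t1_def)
  qed
  have nt1: "norm (x t1) \<le> max R 0" using bd[OF t1I] by (simp add: t1_def)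
  obtain z where z: "z t1 = x t1" "\<forall>t. t1 - \<delta> < t \<and> t < t1 + \<delta> \<longrightarrow> (z has_vector_derivative F (z t)) (at t)"
    using \<delta>(2) nt1 by blast
  have solz: "is_solution F {t1 - \<delta> <..< t1 + \<delta>} z"
    using z \<delta>(1) by (auto simp: is_solution_def is_interval_1)
  have g: "is_solution F (I \<union> {t1 - \<delta> <..< t1 + \<delta>}) (\<lambda>t. if t \<in> I then x t else z t)"
    by (rule glue[OF solx solz t1I]) (use z \<delta>(1) in auto)
  have "I \<union> {t1 - \<delta> <..< t1 + \<delta>} = I"
  proof -
    have m: "\<forall>J y. is_solution F J y \<and> I \<subseteq> J \<and> (\<forall>t\<in>I. y t = x t) \<longrightarrow> J = I"
      using mx unfolding is_maximal_solution_def by blast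
    show ?thesis
      using m[rule_format, of "I \<union> {t1 - \<delta> <..< t1 + \<delta>}" "\<lambda>t. if t \<in> I then x t else z t"] g
      by auto
  qed
  moreover have "t1 - 3*\<delta>/4 \<in> {t1 - \<delta> <..< t1 + \<delta>}" using \<delta>(1) by simp
  moreover have "t1 - 3*\<delta>/4 < T" using \<delta>(1) by (simp add: t1_def)
  ultimately show False using le by fastforce
qed

end

lemma cont_left_ge:
  fixes f :: "real \<Rightarrow> real"
  assumes "isCont f t" "a < t" "\<And>\<tau>. a < \<tau> \<Longrightarrow> \<tau> < t \<Longrightarrow> f \<tau> \<ge> v"
  shows "f t \<ge> v"
proof (rule tendsto_lowerbound)
  show "(f \<longlongrightarrow> f t) (at_left t)"
    using assms(1) by (simp add: isCont_def filterlim_at_split)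
  show "\<forall>\<^sub>F x in at_left t. v \<le> f x"
    using eventually_at_left_real[OF assms(2)] by eventually_elim (use assms(3) in auto)
qed simp

lemma pos_right:
  fixes f :: "real \<Rightarrow> real"
  assumes der: "(f has_real_derivative f') (at t)" and h: "f t > 0 \<or> (f t \<ge> 0 \<and> f' > 0)"
  shows "\<exists>d>0. \<forall>h. 0 < h \<and> h < d \<longrightarrow> f (t + h) > 0"
proof (cases "f t > 0")
  case True
  have "(f \<longlongrightarrow> f t) (at t)" using DERIV_isCont[OF der] by (simp add: isCont_def)
  then have "\<forall>\<^sub>F y in at t. f y > 0" using True by (simp add: order_tendsto_iff)
  then obtain d where d: "d > 0" "\<And>y. y \<noteq> t \<Longrightarrow> dist y t < d \<Longrightarrow> f y > 0"
    unfolding eventually_at by auto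
  show ?thesis
    by (rule exI[where x=d]) (use d in \<open>auto simp: dist_real_def\<close>)
next
  case False
  then have "f t \<ge> 0" "f' > 0" using h by auto
  then show ?thesis using DERIV_pos_inc_right[OF der] by (meson order_le_less_trans)
qed

lemma poincare_P1:
  fixes s c :: "'a \<Rightarrow> real"
  assumes s: "filterlim s at_top F" and c: "\<forall>\<^sub>F t in F. \<bar>c t\<bar> \<le> C"
  shows "((\<lambda>t. poincare (s t, c t)) \<longlongrightarrow> P1) F"
proof -
  define r where "r t = sqrt (1 + (s t)\<^sup>2 + (c t)\<^sup>2)" for t
  have spos: "\<forall>\<^sub>F t in F. s t > 0" using s by (simp add: filterlim_at_top_dense)
  have i0: "((\<lambda>t. inverse (s t)) \<longlongrightarrow> 0) F" by (rule tendsto_inverse_0_at_top[OF s])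
  have cs0: "((\<lambda>t. c t / s t) \<longlongrightarrow> 0) F"
  proof (rule tendsto_sandwich[where f="\<lambda>t. - \<bar>C\<bar> * inverse (s t)" and h="\<lambda>t. \<bar>C\<bar> * inverse (s t)"])
    show "\<forall>\<^sub>F n in F. - \<bar>C\<bar> * inverse (s n) \<le> c n / s n"
      using spos c
    proof eventually_elim
      case (elim t)
      then have "\<bar>c t / s t\<bar> \<le> \<bar>C\<bar> * inverse (s t)"
        by (simp add: abs_divide divide_right_mono field_simps)
      then show ?case using abs_le_D2 by fastforce
    qed
    show "\<forall>\<^sub>F n in F. c n / s n \<le> \<bar>C\<bar> * inverse (s n)"
      using spos c
    proof eventually_elim
      case (elim t)
      then have "\<bar>c t / s t\<bar> \<le> \<bar>C\<bar> * inverse (s t)"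
        by (simp add: abs_divide divide_right_mono field_simps)
      then show ?case using abs_le_D1 by fastforce
    qed
    show "((\<lambda>t. - \<bar>C\<bar> * inverse (s t)) \<longlongrightarrow> 0) F" using tendsto_mult[OF tendsto_const i0, of "- \<bar>C\<bar>"] by simp
    show "((\<lambda>t. \<bar>C\<bar> * inverse (s t)) \<longlongrightarrow> 0) F" using tendsto_mult[OF tendsto_const i0, of "\<bar>C\<bar>"] by simp
  qed
  have q: "((\<lambda>t. sqrt ((inverse (s t))\<^sup>2 + 1 + (c t / s t)\<^sup>2)) \<longlongrightarrow> 1) F"
    using tendsto_real_sqrt[OF tendsto_add[OF tendsto_add[OF tendsto_power[OF i0, of 2] tendsto_const[of 1]] tendsto_power[OF cs0, of 2]]]
    by simp
  have eq: "\<forall>\<^sub>F t in F. sqrt ((inverse (s t))\<^sup>2 + 1 + (c t / s t)\<^sup>2) = r t / s t"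
    using spos
  proof eventually_elim
    case (elim t)
    have "(inverse (s t))\<^sup>2 + 1 + (c t / s t)\<^sup>2 = (1 + (s t)\<^sup>2 + (c t)\<^sup>2) / (s t)\<^sup>2"
      using elim by (simp add: field_simps power2_eq_square)
    then have "sqrt ((inverse (s t))\<^sup>2 + 1 + (c t / s t)\<^sup>2) = sqrt (1 + (s t)\<^sup>2 + (c t)\<^sup>2) / s t"
      using elim by (simp add: real_sqrt_divide)
    then show ?case by (simp add: r_def)
  qed
  have rs: "((\<lambda>t. r t / s t) \<longlongrightarrow> 1) F" using Lim_transform_eventually[OF q eq] .
  have sr: "((\<lambda>t. s t / r t) \<longlongrightarrow> 1) F"
  proof -
    have "((\<lambda>t. inverse (r t / s t)) \<longlongrightarrow> inverse 1) F" by (rule tendsto_inverse[OF rs]) simp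
    moreover have "\<forall>\<^sub>F t in F. inverse (r t / s t) = s t / r t" by simp
    ultimately show ?thesis using Lim_transform_eventually by fastforce
  qed
  have cr: "((\<lambda>t. c t / r t) \<longlongrightarrow> 0) F"
  proof -
    have "((\<lambda>t. (c t / s t) * (s t / r t)) \<longlongrightarrow> 0 * 1) F" by (rule tendsto_mult[OF cs0 sr])
    moreover have "\<forall>\<^sub>F t in F. (c t / s t) * (s t / r t) = c t / r t" using spos by eventually_elim simp
    ultimately show ?thesis using Lim_transform_eventually by fastforce
  qed
  have ir: "((\<lambda>t. 1 / r t) \<longlongrightarrow> 0) F"
  proof -
    have "((\<lambda>t. inverse (s t) * (s t / r t)) \<longlongrightarrow> 0 * 1) F" by (rule tendsto_mult[OF i0 sr])
    moreover have "\<forall>\<^sub>F t in F. inverse (s t) * (s t / r t) = 1 / r t" using spos by eventually_elim (simp add: field_simps)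
    ultimately show ?thesis using Lim_transform_eventually by fastforce
  qed
  have "((\<lambda>t. (s t / r t, c t / r t, 1 / r t)) \<longlongrightarrow> (1, 0, 0)) F"
    by (intro tendsto_Pair sr cr ir)
  then show ?thesis by (simp add: poincare_def P1_def r_def Let_def)
qed

lemma poincare_cont: "isCont poincare p"
proof -
  have pos: "1 + (fst p)\<^sup>2 + (snd p)\<^sup>2 > 0" by (simp add: add_pos_nonneg)
  show ?thesis unfolding poincare_def Let_def
    by (intro continuous_intros) (use pos in auto)
qed

definition unpoinc :: "real \<times> real \<times> real \<Rightarrow> real \<times> real" where
  "unpoinc q = (fst q / snd (snd q), fst (snd q) / snd (snd q))"

lemma unpoinc_poincare: "unpoinc (poincare p) = p"
proof -
  have "sqrt (1 + (fst p)\<^sup>2 + (snd p)\<^sup>2) > 0" by (simp add: add_pos_nonneg)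
  then show ?thesis by (simp add: unpoinc_def poincare_def Let_def)
qed

lemma unpoinc_cont: "isCont unpoinc (poincare p)"
proof -
  have "sqrt (1 + (fst p)\<^sup>2 + (snd p)\<^sup>2) > 0" by (simp add: add_pos_nonneg)
  then have "snd (snd (poincare p)) \<noteq> 0" by (simp add: poincare_def Let_def)
  then show ?thesis unfolding unpoinc_def by (intro continuous_intros) auto
qed

lemma poincare_tendsto_iff:
  "((\<lambda>t. poincare (x t)) \<longlongrightarrow> poincare p) F \<longleftrightarrow> (x \<longlongrightarrow> p) F"
proof
  assume "((\<lambda>t. poincare (x t)) \<longlongrightarrow> poincare p) F"
  from isCont_tendsto_compose[OF unpoinc_cont this] show "(x \<longlongrightarrow> p) F"
    by (simp add: unpoinc_poincare)
next
  assume "(x \<longlongrightarrow> p) F"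
  from isCont_tendsto_compose[OF poincare_cont this] show "((\<lambda>t. poincare (x t)) \<longlongrightarrow> poincare p) F" .
qed

context mm begin

lemma sol_der:
  assumes "is_solution F I x" "t \<in> I"
  shows "((\<lambda>t. fst (x t)) has_real_derivative (k0 - k1 * (eT - snd (x t)) * fst (x t) + km1 * snd (x t))) (at t)"
    "((\<lambda>t. snd (x t)) has_real_derivative (k1 * (eT - snd (x t)) * fst (x t) - (km1 + k2) * snd (x t))) (at t)"
proof -
  have d: "(x has_vector_derivative F (x t)) (at t)" using assms by (auto simp: is_solution_def)
  show "((\<lambda>t. fst (x t)) has_real_derivative (k0 - k1 * (eT - snd (x t)) * fst (x t) + km1 * snd (x t))) (at t)"
    using comp_der(1)[OF d] by (simp add: F_simps)
  show "((\<lambda>t. snd (x t)) has_real_derivative (k1 * (eT - snd (x t)) * fst (x t) - (km1 + k2) * snd (x t))) (at t)"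
    using comp_der(2)[OF d] by (simp add: F_simps)
qed

lemma part1:
  assumes mx: "is_maximal_solution F I x" and I0: "0 \<in> I" and s0: "fst (x 0) \<ge> 0" and c0: "snd (x 0) \<ge> 0"
  shows "((\<lambda>t. poincare (x t)) \<longlongrightarrow> P1) (upper_end I) \<and> ((\<lambda>t. snd (x t)) \<longlongrightarrow> eT) (upper_end I)"
proof -
  have sol: "is_solution F I x" using mx by (simp add: is_maximal_solution_def)
  define s where "s = (\<lambda>t. fst (x t))"
  define c where "c = (\<lambda>t. snd (x t))"
  have ds: "(s has_real_derivative (k0 - k1 * (eT - c t) * s t + km1 * c t)) (at t)" if "t \<in> I" for t
    using sol_der(1)[OF sol that] by (simp add: s_def c_def)
  have dc: "(c has_real_derivative (k1 * (eT - c t) * s t - (km1 + k2) * c t)) (at t)" if "t \<in> I" for t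
    using sol_der(2)[OF sol that] by (simp add: s_def c_def)
  have intI: "is_interval I" using sol by (simp add: is_solution_def)
  have seg: "t \<in> I" if "a \<in> I" "b \<in> I" "a \<le> t" "t \<le> b" for a b t
    using intI[unfolded is_interval_1, rule_format, OF that(1,2)] that(3,4) by blast
  have quad: "s b \<ge> 0 \<and> c b \<ge> 0" if b: "b \<in> I" "0 \<le> b" for b
  proof -
    have inI: "\<tau> \<in> I" if "0 \<le> \<tau>" "\<tau> \<le> b" for \<tau> using seg[OF I0 b(1) that] .
    show ?thesis
    proof (rule real_induct[where a=0 and b=b and P="\<lambda>\<tau>. s \<tau> \<ge> 0 \<and> c \<tau> \<ge> 0"])
      show "0 \<le> b" by (rule b(2))
    next
      fix t assume t: "0 \<le> t" "t \<le> b" and H: "\<And>\<tau>. 0 \<le> \<tau> \<Longrightarrow> \<tau> < t \<Longrightarrow> s \<tau> \<ge> 0 \<and> c \<tau> \<ge> 0"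
      show "s t \<ge> 0 \<and> c t \<ge> 0"
      proof (cases "t = 0")
        case True then show ?thesis using s0 c0 by (simp add: s_def c_def)
      next
        case False
        then have tp: "0 < t" using t by simp
        have "s t \<ge> 0" by (rule cont_left_ge[OF DERIV_isCont[OF ds[OF inI[OF t]]] tp]) (use H in auto)
        moreover have "c t \<ge> 0" by (rule cont_left_ge[OF DERIV_isCont[OF dc[OF inI[OF t]]] tp]) (use H in auto)
        ultimately show ?thesis by simp
      qed
    next
      fix t assume t: "0 \<le> t" "t < b" and H: "\<And>\<tau>. 0 \<le> \<tau> \<Longrightarrow> \<tau> \<le> t \<Longrightarrow> s \<tau> \<ge> 0 \<and> c \<tau> \<ge> 0"
      have tI: "t \<in> I" using inI t by simp
      have Pt: "s t \<ge> 0" "c t \<ge> 0" using H[of t] t by auto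
      obtain d1 where d1: "d1 > 0" "\<And>h. 0 < h \<Longrightarrow> h < d1 \<Longrightarrow> s (t + h) > 0"
      proof -
        have "s t > 0 \<or> (s t \<ge> 0 \<and> k0 - k1 * (eT - c t) * s t + km1 * c t > 0)"
        proof (cases "s t > 0")
          case False
          then have "s t = 0" using Pt by simp
          then show ?thesis using k0p km1 Pt by (simp add: add_pos_nonneg)
        qed simp
        from pos_right[OF ds[OF tI] this] show ?thesis using that by blast
      qed
      define d where "d = min d1 (b - t)"
      have dpos: "d > 0" using d1 t by (simp add: d_def)
      have "\<forall>\<tau>. t < \<tau> \<and> \<tau> < t + d \<longrightarrow> s \<tau> \<ge> 0 \<and> c \<tau> \<ge> 0"
      proof (intro allI impI)
        fix \<tau> assume \<tau>: "t < \<tau> \<and> \<tau> < t + d"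
        have sge: "s u \<ge> 0" if "t \<le> u" "u \<le> \<tau>" for u
        proof (cases "u = t")
          case True then show ?thesis using Pt by simp
        next
          case False
          then have "0 < u - t" "u - t < d1" using that \<tau> by (auto simp: d_def)
          then show ?thesis using d1(2)[of "u - t"] by simp
        qed
        have uI: "u \<in> I" if "t \<le> u" "u \<le> \<tau>" for u using inI that t \<tau> by (auto simp: d_def)
        have "- c \<tau> \<le> 0"
        proof (rule barrier[where f="\<lambda>u. - c u" and f'="\<lambda>u. - (k1 * (eT - c u) * s u - (km1 + k2) * c u)"])
          show "t \<le> \<tau>" using \<tau> by simp
          show "((\<lambda>u. - c u) has_real_derivative - (k1 * (eT - c u) * s u - (km1 + k2) * c u)) (at u)"
            if "t \<le> u" "u \<le> \<tau>" for u using DERIV_minus[OF dc[OF uI[OF that]]] .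
          show "- (k1 * (eT - c u) * s u - (km1 + k2) * c u) \<le> 0" if u: "t \<le> u" "u \<le> \<tau>" "0 < - c u" for u
          proof -
            have "k1 * (eT - c u) * s u \<ge> 0" using k1 eT u sge[OF u(1,2)] by simp
            moreover have "(km1 + k2) * c u \<le> 0" using km1 k2 u(3) by (simp add: mult_nonneg_nonpos)
            ultimately show ?thesis by linarith
          qed
          show "- c t \<le> 0" using Pt by simp
        qed
        then show "s \<tau> \<ge> 0 \<and> c \<tau> \<ge> 0" using sge[of \<tau>] \<tau> by simp
      qed
      then show "\<exists>d>0. \<forall>\<tau>. t < \<tau> \<and> \<tau> < t + d \<longrightarrow> s \<tau> \<ge> 0 \<and> c \<tau> \<ge> 0"
        using dpos by blast
    qed
  qed
  have unb: "\<not> bdd_above I"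
  proof
    assume bdd: "bdd_above I"
    define T where "T = Sup I"
    have le: "t \<le> T" if "t \<in> I" for t using bdd that by (simp add: T_def cSup_upper)
    have "norm (x t) \<le> s 0 + c 0 + k0 * T" if t: "t \<in> I" "t \<ge> 0" for t
    proof -
      have "s t + c t - k0 * t \<le> s 0 + c 0 - k0 * 0"
      proof (rule DERIV_nonpos_imp_nonincreasing[where f="\<lambda>u. s u + c u - k0 * u"])
        show "0 \<le> t" by (rule t(2))
        fix u assume u: "0 \<le> u" "u \<le> t"
        have uI: "u \<in> I" using seg[OF I0 t(1) u] .
        have "((\<lambda>u. s u + c u - k0 * u) has_real_derivative
            (k0 - k1 * (eT - c u) * s u + km1 * c u) + (k1 * (eT - c u) * s u - (km1 + k2) * c u) - k0 * 1) (at u)"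
          by (auto intro!: derivative_eq_intros ds[OF uI] dc[OF uI])
        moreover have "(k0 - k1 * (eT - c u) * s u + km1 * c u) + (k1 * (eT - c u) * s u - (km1 + k2) * c u) - k0 * 1 \<le> 0"
          using quad[OF uI u(1)] k2 by (simp add: algebra_simps)
        ultimately show "\<exists>y. ((\<lambda>u. s u + c u - k0 * u) has_real_derivative y) (at u) \<and> y \<le> 0" by blast
      qed
      moreover have "norm (x t) \<le> \<bar>s t\<bar> + \<bar>c t\<bar>" using norm_le_fst_snd[of "x t"] by (simp add: s_def c_def)
      moreover have "k0 * t \<le> k0 * T" using le[OF t(1)] k0 by (simp add: mult_left_mono)
      ultimately show ?thesis using quad[OF t] by simp
    qed
    then show False using blowup_right[OF mx I0, of "s 0 + c 0 + k0 * T"] bdd by blast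
  qed
  have allI': "t \<in> I" if "0 \<le> t" for t
  proof -
    obtain t' where "t' \<in> I" "t < t'" using unb unfolding bdd_above_def by (meson not_le)
    then show ?thesis using seg[OF I0, of t' t] that by simp
  qed
  have ue: "upper_end I = at_top" using unb by (simp add: upper_end_def)
  have sc0: "s t \<ge> 0" "c t \<ge> 0" if "t \<ge> 0" for t using quad[OF allI'[OF that] that] by auto
  have ds': "(s has_real_derivative (k0 - k1 * (eT - c t) * s t + km1 * c t)) (at t)" if "t \<ge> 0" for t
    using ds[OF allI'[OF that]] .
  have dc': "(c has_real_derivative (k1 * (eT - c t) * s t - (km1 + k2) * c t)) (at t)" if "t \<ge> 0" for t
    using dc[OF allI'[OF that]] .
  have lev: "c t \<le> l" if "l \<ge> eT" "0 \<le> t1" "t1 \<le> t" "c t1 \<le> l" for l t1 t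
  proof (rule barrier[where f=c and f'="\<lambda>u. k1 * (eT - c u) * s u - (km1 + k2) * c u" and a=t1])
    show "(c has_real_derivative k1 * (eT - c u) * s u - (km1 + k2) * c u) (at u)" if "t1 \<le> u" "u \<le> t" for u
      using dc' that \<open>0 \<le> t1\<close> by simp
    show "k1 * (eT - c u) * s u - (km1 + k2) * c u \<le> 0" if u: "t1 \<le> u" "u \<le> t" "l < c u" for u
    proof -
      have u0: "0 \<le> u" using u \<open>0 \<le> t1\<close> by simp
      have "k1 * (eT - c u) * s u \<le> 0"
        using k1 u \<open>l \<ge> eT\<close> sc0[OF u0] by (simp add: mult_nonneg_nonpos mult_nonpos_nonneg)
      moreover have "(km1 + k2) * c u \<ge> 0" using km1 k2 sc0[OF u0] by simp
      ultimately show ?thesis by linarith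
    qed
  qed (use that in auto)
  define C where "C = max (c 0) eT"
  have cC: "c t \<le> C" if "t \<ge> 0" for t using lev[of C 0 t] that by (simp add: C_def)
  have reach_up: "\<exists>t1\<ge>0. c t1 \<le> eT + \<epsilon>" if \<epsilon>: "\<epsilon> > 0" for \<epsilon>
  proof (rule ccontr)
    assume "\<not> (\<exists>t1\<ge>0. c t1 \<le> eT + \<epsilon>)"
    then have gt: "c t > eT + \<epsilon>" if "t \<ge> 0" for t using that by force
    define N where "N = c 0 / (k2 * \<epsilon>) + 1"
    have N0: "N \<ge> 0" using sc0[of 0] k2p \<epsilon> by (simp add: N_def)
    have "c N + k2 * \<epsilon> * N \<le> c 0 + k2 * \<epsilon> * 0"
    proof (rule DERIV_nonpos_imp_nonincreasing[where f="\<lambda>u. c u + k2 * \<epsilon> * u"])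
      show "0 \<le> N" by (rule N0)
      fix u assume u: "0 \<le> u" "u \<le> N"
      have "((\<lambda>u. c u + k2 * \<epsilon> * u) has_real_derivative
          (k1 * (eT - c u) * s u - (km1 + k2) * c u) + k2 * \<epsilon> * 1) (at u)"
        by (auto intro!: derivative_eq_intros dc'[OF u(1)])
      moreover have "(k1 * (eT - c u) * s u - (km1 + k2) * c u) + k2 * \<epsilon> * 1 \<le> 0"
      proof -
        have cu: "c u > eT + \<epsilon>" using gt[OF u(1)] .
        have "k1 * (eT - c u) * s u \<le> 0"
          using k1 cu \<epsilon> sc0[OF u(1)] by (simp add: mult_nonneg_nonpos mult_nonpos_nonneg)
        moreover have "km1 * c u \<ge> 0" using km1 sc0[OF u(1)] by simp
        moreover have "k2 * c u \<ge> k2 * (eT + \<epsilon>)" using k2 cu by (simp add: mult_left_mono)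
        moreover have "k2 * eT \<ge> 0" using k2 eT by simp
        ultimately show ?thesis by (simp add: algebra_simps)
      qed
      ultimately show "\<exists>y. ((\<lambda>u. c u + k2 * \<epsilon> * u) has_real_derivative y) (at u) \<and> y \<le> 0" by blast
    qed
    moreover have "k2 * \<epsilon> * N = c 0 + k2 * \<epsilon>" using k2p \<epsilon> by (simp add: N_def field_simps)
    ultimately have "c N \<le> - k2 * \<epsilon>" by simp
    moreover have "k2 * \<epsilon> > 0" using k2p \<epsilon> by simp
    ultimately show False using sc0[OF N0] by simp
  qed
  have ev_up: "\<forall>\<^sub>F t in at_top. c t \<le> eT + \<epsilon>" if ep: "\<epsilon> > 0" for \<epsilon>
  proof -
    obtain t1 where t1: "t1 \<ge> 0" "c t1 \<le> eT + \<epsilon>" using reach_up[OF ep] by blast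
    show ?thesis unfolding eventually_at_top_linorder
      using lev[of "eT + \<epsilon>" t1] t1 ep by (intro exI[where x=t1]) auto
  qed
  define \<eta> where "\<eta> = (k0 - k2 * eT) / 2"
  have \<eta>p: "\<eta> > 0" using lt by (simp add: \<eta>_def)
  obtain t1 where t1: "t1 \<ge> 0" "\<And>t. t \<ge> t1 \<Longrightarrow> c t \<le> eT + \<eta> / k2"
  proof -
    have "\<eta> / k2 > 0" using \<eta>p k2p by simp
    from reach_up[OF this] obtain t1 where "t1 \<ge> 0" "c t1 \<le> eT + \<eta> / k2" by blast
    then show ?thesis using that lev[of "eT + \<eta> / k2" t1] \<eta>p k2p by (simp add: divide_nonneg_nonneg)
  qed
  have sgrow: "s t \<ge> \<eta> * (t - t1) - C" if "t \<ge> t1" for t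
  proof -
    have "s t1 + c t1 - \<eta> * t1 \<le> s t + c t - \<eta> * t"
    proof (rule DERIV_nonneg_imp_nondecreasing[where f="\<lambda>u. s u + c u - \<eta> * u"])
      show "t1 \<le> t" by (rule that)
      fix u assume u: "t1 \<le> u" "u \<le> t"
      have u0: "0 \<le> u" using u t1 by simp
      have "((\<lambda>u. s u + c u - \<eta> * u) has_real_derivative
          (k0 - k1 * (eT - c u) * s u + km1 * c u) + (k1 * (eT - c u) * s u - (km1 + k2) * c u) - \<eta> * 1) (at u)"
        by (auto intro!: derivative_eq_intros ds'[OF u0] dc'[OF u0])
      moreover have "(k0 - k1 * (eT - c u) * s u + km1 * c u) + (k1 * (eT - c u) * s u - (km1 + k2) * c u) - \<eta> * 1 \<ge> 0"
      proof -
        have "k2 * c u \<le> k2 * (eT + \<eta> / k2)" using t1(2)[of u] u k2 by (simp add: mult_left_mono)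
        also have "\<dots> = k2 * eT + \<eta>" using k2p by (simp add: field_simps)
        finally have "k2 * c u \<le> k2 * eT + \<eta>" .
        moreover have "(k0 - k1 * (eT - c u) * s u + km1 * c u) + (k1 * (eT - c u) * s u - (km1 + k2) * c u) - \<eta> * 1
            = k0 - k2 * c u - \<eta>" by (simp add: algebra_simps)
        moreover have "2 * \<eta> = k0 - k2 * eT" by (simp add: \<eta>_def)
        ultimately show ?thesis by linarith
      qed
      ultimately show "\<exists>y. ((\<lambda>u. s u + c u - \<eta> * u) has_real_derivative y) (at u) \<and> y \<ge> 0" by blast
    qed
    then show ?thesis using sc0[OF t1(1)] cC[of t] that t1 by (simp add: algebra_simps)
  qed
  have slim: "filterlim s at_top at_top"
    unfolding filterlim_at_top eventually_at_top_linorder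
  proof
    fix Z
    show "\<exists>N. \<forall>t\<ge>N. Z \<le> s t"
    proof (intro exI allI impI)
      fix t assume t: "t1 + \<bar>Z + C\<bar> / \<eta> \<le> t"
      have "\<bar>Z + C\<bar> \<le> \<eta> * (t - t1)" using t \<eta>p by (simp add: field_simps)
      then show "Z \<le> s t" using sgrow[of t] t \<eta>p by (smt (verit) divide_nonneg_pos)
    qed
  qed
  have ev_lo: "\<forall>\<^sub>F t in at_top. c t \<ge> eT - \<epsilon>" if \<epsilon>: "\<epsilon> > 0" for \<epsilon>
  proof -
    define S0 where "S0 = ((km1 + k2) * C + 1) / (k1 * \<epsilon>)"
    obtain N where N: "\<And>t. t \<ge> N \<Longrightarrow> S0 \<le> s t"
      using slim unfolding filterlim_at_top eventually_at_top_linorder by blast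
    define t2 where "t2 = max N 0"
    have t2: "t2 \<ge> 0" "\<And>t. t \<ge> t2 \<Longrightarrow> S0 \<le> s t" using N by (auto simp: t2_def)
    have C0: "C \<ge> 0" using sc0[of 0] by (simp add: C_def)
    have cgrow: "k1 * (eT - c u) * s u - (km1 + k2) * c u \<ge> 1" if u: "u \<ge> t2" "c u < eT - \<epsilon>" for u
    proof -
      have u0: "u \<ge> 0" using u t2 by simp
      have "k1 * \<epsilon> * S0 \<le> k1 * (eT - c u) * s u"
      proof (rule mult_mono)
        show "k1 * \<epsilon> \<le> k1 * (eT - c u)" using k1 u by (simp add: mult_left_mono)
        show "S0 \<le> s u" using t2(2)[OF u(1)] .
        show "0 \<le> k1 * (eT - c u)" using k1 u sc0[OF u0] \<epsilon> by simp
        show "0 \<le> S0" using km1 k2 C0 k1 \<epsilon> by (simp add: S0_def)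
      qed
      moreover have "k1 * \<epsilon> * S0 = (km1 + k2) * C + 1" using k1p \<epsilon> by (simp add: S0_def)
      moreover have "(km1 + k2) * c u \<le> (km1 + k2) * C" using cC[OF u0] km1 k2 by (simp add: mult_left_mono)
      ultimately show ?thesis by linarith
    qed
    have reach: "\<exists>t3\<ge>t2. c t3 \<ge> eT - \<epsilon>"
    proof (rule ccontr)
      assume "\<not> (\<exists>t3\<ge>t2. c t3 \<ge> eT - \<epsilon>)"
      then have lt': "c t < eT - \<epsilon>" if "t \<ge> t2" for t using that by force
      have "c t2 - t2 \<le> c (t2 + C + 1) - (t2 + C + 1)"
      proof (rule DERIV_nonneg_imp_nondecreasing[where f="\<lambda>u. c u - u"])
        show "t2 \<le> t2 + C + 1" using C0 by simp
        fix u assume u: "t2 \<le> u" "u \<le> t2 + C + 1"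
        have u0: "u \<ge> 0" using u t2 by simp
        have "((\<lambda>u. c u - u) has_real_derivative (k1 * (eT - c u) * s u - (km1 + k2) * c u) - 1) (at u)"
          using DERIV_diff[OF dc'[OF u0] DERIV_ident] by simp
        moreover have "(k1 * (eT - c u) * s u - (km1 + k2) * c u) - 1 \<ge> 0"
          using cgrow[OF u(1) lt'[OF u(1)]] by simp
        ultimately show "\<exists>y. ((\<lambda>u. c u - u) has_real_derivative y) (at u) \<and> y \<ge> 0" by blast
      qed
      then have "c (t2 + C + 1) \<ge> C + 1" using sc0[OF t2(1)] by simp
      moreover have "c (t2 + C + 1) \<le> C" using cC C0 t2 by simp
      ultimately show False by simp
    qed
    then obtain t3 where t3: "t3 \<ge> t2" "c t3 \<ge> eT - \<epsilon>" by blast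
    show ?thesis unfolding eventually_at_top_linorder
    proof (intro exI allI impI)
      fix t assume t: "t3 \<le> t"
      have "- c t \<le> - (eT - \<epsilon>)"
      proof (rule barrier[where f="\<lambda>u. - c u" and f'="\<lambda>u. - (k1 * (eT - c u) * s u - (km1 + k2) * c u)" and a=t3])
        show "t3 \<le> t" by (rule t)
        show "((\<lambda>u. - c u) has_real_derivative - (k1 * (eT - c u) * s u - (km1 + k2) * c u)) (at u)"
          if "t3 \<le> u" "u \<le> t" for u using DERIV_minus[OF dc'[of u]] that t3 t2 by simp
        show "- (k1 * (eT - c u) * s u - (km1 + k2) * c u) \<le> 0"
          if "t3 \<le> u" "u \<le> t" "- (eT - \<epsilon>) < - c u" for u using cgrow[of u] that t3 by simp
        show "- c t3 \<le> - (eT - \<epsilon>)" using t3 by simp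
      qed
      then show "eT - \<epsilon> \<le> c t" by simp
    qed
  qed
  have clim: "(c \<longlongrightarrow> eT) at_top"
  proof (rule order_tendstoI)
    fix a assume aeT: "a < eT"
    then have "(eT - a) / 2 > 0" by simp
    from ev_lo[OF this] show "\<forall>\<^sub>F t in at_top. a < c t"
    proof (rule eventually_mono)
      fix t assume "eT - (eT - a) / 2 \<le> c t"
      then show "a < c t" using aeT by argo
    qed
  next
    fix a assume aeT: "eT < a"
    then have "(a - eT) / 2 > 0" by simp
    from ev_up[OF this] show "\<forall>\<^sub>F t in at_top. c t < a"
    proof (rule eventually_mono)
      fix t assume "c t \<le> eT + (a - eT) / 2"
      then show "c t < a" using aeT by argo
    qed
  qed
  have cb: "\<forall>\<^sub>F t in at_top. \<bar>c t\<bar> \<le> C"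
    unfolding eventually_at_top_linorder using cC sc0 by (intro exI[where x=0]) auto
  have plim: "((\<lambda>t. poincare (s t, c t)) \<longlongrightarrow> P1) at_top" by (rule poincare_P1[OF slim cb])
  show ?thesis using plim clim unfolding ue by (simp add: s_def c_def)
qed

end

lemma quad_inv:
  fixes U W \<phi> :: "real \<Rightarrow> real"
  assumes ab: "a > 0" "b > 0" and t12: "ta \<le> tb"
    and dU: "\<And>t. ta \<le> t \<Longrightarrow> t \<le> tb \<Longrightarrow> (U has_real_derivative a * W t) (at t)"
    and dW: "\<And>t. ta \<le> t \<Longrightarrow> t \<le> tb \<Longrightarrow> (W has_real_derivative b * U t - W t * \<phi> t) (at t)"
    and U1: "U ta > 0" and W1: "W ta > 0"
  shows "U tb > 0 \<and> W tb > 0"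
proof -
  have main: "U t \<ge> U ta \<and> W t \<ge> 0" if t: "ta \<le> t" "t \<le> tb" for t
  proof (rule real_induct[where a=ta and b=t and P="\<lambda>\<tau>. U \<tau> \<ge> U ta \<and> W \<tau> \<ge> 0"])
    show "ta \<le> t" by (rule t(1))
  next
    fix \<tau> assume \<tau>: "ta \<le> \<tau>" "\<tau> \<le> t" and H: "\<And>\<sigma>. ta \<le> \<sigma> \<Longrightarrow> \<sigma> < \<tau> \<Longrightarrow> U \<sigma> \<ge> U ta \<and> W \<sigma> \<ge> 0"
    show "U \<tau> \<ge> U ta \<and> W \<tau> \<ge> 0"
    proof (cases "\<tau> = ta")
      case True then show ?thesis using W1 by simp
    next
      case False
      then have lt: "ta < \<tau>" using \<tau> by simp
      have "U \<tau> \<ge> U ta" by (rule cont_left_ge[OF DERIV_isCont[OF dU] lt]) (use \<tau> t H in auto)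
      moreover have "W \<tau> \<ge> 0" by (rule cont_left_ge[OF DERIV_isCont[OF dW] lt]) (use \<tau> t H in auto)
      ultimately show ?thesis by simp
    qed
  next
    fix \<tau> assume \<tau>: "ta \<le> \<tau>" "\<tau> < t" and H: "\<And>\<sigma>. ta \<le> \<sigma> \<Longrightarrow> \<sigma> \<le> \<tau> \<Longrightarrow> U \<sigma> \<ge> U ta \<and> W \<sigma> \<ge> 0"
    have P\<tau>: "U \<tau> \<ge> U ta" "W \<tau> \<ge> 0" using H[of \<tau>] \<tau> by auto
    have dW\<tau>: "(W has_real_derivative b * U \<tau> - W \<tau> * \<phi> \<tau>) (at \<tau>)" using dW \<tau> t by simp
    have "W \<tau> > 0 \<or> (W \<tau> \<ge> 0 \<and> b * U \<tau> - W \<tau> * \<phi> \<tau> > 0)"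
    proof (cases "W \<tau> > 0")
      case False
      then have "W \<tau> = 0" using P\<tau> by simp
      then show ?thesis using ab U1 P\<tau> by simp
    qed simp
    from pos_right[OF dW\<tau> this] obtain d1 where d1: "d1 > 0" "\<And>h. 0 < h \<Longrightarrow> h < d1 \<Longrightarrow> W (\<tau> + h) > 0"
      by blast
    define d where "d = min d1 (t - \<tau>)"
    have dpos: "d > 0" using d1 \<tau> by (simp add: d_def)
    have "\<forall>\<sigma>. \<tau> < \<sigma> \<and> \<sigma> < \<tau> + d \<longrightarrow> U \<sigma> \<ge> U ta \<and> W \<sigma> \<ge> 0"
    proof (intro allI impI)
      fix \<sigma> assume \<sigma>: "\<tau> < \<sigma> \<and> \<sigma> < \<tau> + d"
      have Wge: "W u \<ge> 0" if "\<tau> \<le> u" "u \<le> \<sigma>" for u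
      proof (cases "u = \<tau>")
        case True then show ?thesis using P\<tau> by simp
      next
        case False
        then have "0 < u - \<tau>" "u - \<tau> < d1" using that \<sigma> by (auto simp: d_def)
        then show ?thesis using d1(2)[of "u - \<tau>"] by simp
      qed
      have "U \<tau> \<le> U \<sigma>"
      proof (rule DERIV_nonneg_imp_nondecreasing[where f=U])
        show "\<tau> \<le> \<sigma>" using \<sigma> by simp
        fix u assume u: "\<tau> \<le> u" "u \<le> \<sigma>"
        have "d \<le> t - \<tau>" by (simp add: d_def)
        then have "ta \<le> u" "u \<le> tb" using u \<tau> \<sigma> t by linarith+
        then have "(U has_real_derivative a * W u) (at u)" using dU by simp
        moreover have "a * W u \<ge> 0" using ab Wge[OF u] by simp
        ultimately show "\<exists>y. (U has_real_derivative y) (at u) \<and> 0 \<le> y" by blast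
      qed
      then show "U \<sigma> \<ge> U ta \<and> W \<sigma> \<ge> 0" using P\<tau> Wge[of \<sigma>] \<sigma> by simp
    qed
    then show "\<exists>d>0. \<forall>\<sigma>. \<tau> < \<sigma> \<and> \<sigma> < \<tau> + d \<longrightarrow> U \<sigma> \<ge> U ta \<and> W \<sigma> \<ge> 0"
      using dpos by blast
  qed
  have "W tb > 0"
  proof (cases "tb = ta")
    case True then show ?thesis using W1 by simp
  next
    case False
    then have lt: "ta < tb" using t12 by simp
    show ?thesis
    proof (rule ccontr)
      assume "\<not> W tb > 0"
      then have W0: "W tb = 0" using main[of tb] t12 by simp
      have "b * U tb - W tb * \<phi> tb > 0" using W0 main[of tb] t12 ab U1 by simp
      from DERIV_pos_inc_left[OF dW[OF t12 order.refl] this] obtain d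
        where d: "d > 0" "\<And>h. 0 < h \<Longrightarrow> h < d \<Longrightarrow> W (tb - h) < W tb" by blast
      define h where "h = min (d/2) (tb - ta)"
      have h: "0 < h" "h < d" "ta \<le> tb - h" using d lt by (auto simp: h_def)
      have "W (tb - h) < 0" using d(2)[OF h(1,2)] W0 by simp
      moreover have "W (tb - h) \<ge> 0" using main[of "tb - h"] h by simp
      ultimately show False by simp
    qed
  qed
  moreover have "U tb > 0" using main[of tb] t12 U1 by simp
  ultimately show ?thesis by simp
qed

lemma alg_W:
  fixes k1 km1 k2 eT c0 dd s0 s c :: real
  assumes "eT = c0 - dd" "(km1 + k2) * c0 = - k1 * dd * s0"
  shows "-(k1 * (eT - c) * s - (km1 + k2) * c) = k1 * dd * (s + c - s0 - c0)
     - (c0 - c) * (k1 * ((s + c - s0 - c0) + (c0 - c)) + (k1 * s0 - k1 * dd + km1 + k2))"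
  using assms by algebra

context mm begin

definition c0 :: real where "c0 = k0 / k2"
definition s0 :: real where "s0 = (km1 + k2) * k0 / (k1 * (k2 * eT - k0))"
definition dd :: real where "dd = c0 - eT"
definition bb :: real where "bb = k1 * s0 - k1 * dd + km1 + k2"
definition msl :: real where "msl = (- bb + sqrt (bb\<^sup>2 + 4 * k2 * (k1 * dd))) / (2 * k2)"
definition UU :: "real \<times> real \<Rightarrow> real" where "UU p = fst p + snd p - s0 - c0"
definition WW :: "real \<times> real \<Rightarrow> real" where "WW p = c0 - snd p"
definition pt :: "real \<Rightarrow> real \<Rightarrow> real \<times> real" where "pt u w = (s0 + u + w, c0 - w)"
definition HH :: "real \<Rightarrow> real \<Rightarrow> real" where
  "HH u w = (k1 * dd * u - w * (k1 * (u + w) + bb)) / (k2 * w)"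
definition aa :: real where "aa = min msl (k1 * dd / (k2 + k1 * dd + \<bar>bb\<bar> + 1))"
definition ell :: "real \<Rightarrow> real" where "ell u = aa * dd * u / (dd + aa * u)"
definition Dl :: real where "Dl = max msl (max dd (\<bar>bb\<bar> / k1))"

lemma c0_eq: "k2 * c0 = k0" using k2p by (simp add: c0_def)
lemma dd_pos: "dd > 0"
proof -
  have "k2 * eT < k2 * c0" using lt c0_eq by simp
  then show ?thesis using k2p by (simp add: dd_def)
qed
lemma eT_eq: "eT = c0 - dd" by (simp add: dd_def)
lemma ident: "(km1 + k2) * c0 = - k1 * dd * s0"
proof -
  have ne: "k2 * eT - k0 \<noteq> 0" using lt by simp
  have "k1 * dd * s0 = (k0 / k2 - eT) * ((km1 + k2) * k0 / (k2 * eT - k0))"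
    using k1p by (simp add: dd_def c0_def s0_def)
  also have "\<dots> = - (km1 + k2) * k0 / k2"
    using ne k2p by (simp add: field_simps)
  finally have "k1 * dd * s0 = - (km1 + k2) * k0 / k2" .
  then have "(km1 + k2) * k0 / k2 = - k1 * dd * s0" by linarith
  then show ?thesis by (simp add: c0_def)
qed
lemma P0_eq: "P0 k0 k1 km1 k2 eT = (s0, c0)" by (simp add: P0_def s0_def c0_def)
lemma UU_pt[simp]: "UU (pt u w) = u" by (simp add: UU_def pt_def)
lemma WW_pt[simp]: "WW (pt u w) = w" by (simp add: WW_def pt_def)
lemma pt_UW: "pt (UU p) (WW p) = p" by (simp add: UU_def WW_def pt_def prod_eq_iff)
lemma pt_zero: "pt 0 0 = (s0, c0)" by (simp add: pt_def)
lemma UW_zero: "UU p = 0 \<Longrightarrow> WW p = 0 \<Longrightarrow> p = (s0, c0)"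
  using pt_UW[of p] by (simp add: pt_def)

lemma F_P0: "F (s0, c0) = 0"
proof -
  have "fst (F (s0, c0)) + snd (F (s0, c0)) = k0 - k2 * c0" by (simp add: F_simps algebra_simps)
  then have 1: "fst (F (s0, c0)) + snd (F (s0, c0)) = 0" using c0_eq by simp
  have "- snd (F (s0, c0)) = k1 * dd * (s0 + c0 - s0 - c0) - (c0 - c0) * (k1 * ((s0 + c0 - s0 - c0) + (c0 - c0)) + bb)"
    unfolding F_simps bb_def using alg_W[OF eT_eq ident, of c0 s0] by simp
  then have 2: "snd (F (s0, c0)) = 0" by simp
  show ?thesis using 1 2 by (simp add: prod_eq_iff)
qed

lemma msl_facts: "msl > 0" "k2 * msl\<^sup>2 + bb * msl = k1 * dd" "k2 * msl + bb > 0"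
proof -
  define D where "D = bb\<^sup>2 + 4 * k2 * (k1 * dd)"
  have Dp: "D > bb\<^sup>2" using k2p k1p dd_pos by (simp add: D_def)
  have r: "sqrt D > \<bar>bb\<bar>" using Dp by (metis real_sqrt_abs real_sqrt_less_iff)
  have D0: "D \<ge> 0" using Dp zero_le_power2[of bb] by linarith
  have rr: "(sqrt D)\<^sup>2 = D" using D0 by simp
  show mp: "msl > 0" using r k2p by (simp add: msl_def D_def[symmetric] divide_pos_pos)
  show eq: "k2 * msl\<^sup>2 + bb * msl = k1 * dd"
  proof -
    have g: "k2 * ((r - bb) / (2 * k2))\<^sup>2 + bb * ((r - bb) / (2 * k2)) = (r\<^sup>2 - bb\<^sup>2) / (4 * k2)" for r
      using k2p by (simp add: field_simps power2_eq_square)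
    have m: "msl = (sqrt D - bb) / (2 * k2)" by (simp add: msl_def D_def)
    have "k2 * msl\<^sup>2 + bb * msl = ((sqrt D)\<^sup>2 - bb\<^sup>2) / (4 * k2)"
      unfolding m by (rule g)
    also have "\<dots> = (D - bb\<^sup>2) / (4 * k2)" using rr by simp
    also have "\<dots> = k1 * dd" using k2p by (simp add: D_def)
    finally show ?thesis .
  qed
  have "(k2 * msl + bb) * msl = k1 * dd" using eq by (simp add: algebra_simps power2_eq_square)
  moreover have "k1 * dd > 0" using k1p dd_pos by simp
  ultimately show "k2 * msl + bb > 0" using mp by (metis zero_less_mult_pos2)
qed

lemma UW_der:
  assumes "is_solution F I x" "t \<in> I"
  shows "((\<lambda>t. UU (x t)) has_real_derivative k2 * WW (x t)) (at t)"
    "((\<lambda>t. WW (x t)) has_real_derivative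
        k1 * dd * UU (x t) - WW (x t) * (k1 * (UU (x t) + WW (x t)) + bb)) (at t)"
proof -
  note d1 = sol_der(1)[OF assms] and d2 = sol_der(2)[OF assms]
  have "((\<lambda>t. fst (x t) + snd (x t) - s0 - c0) has_real_derivative
      (k0 - k1 * (eT - snd (x t)) * fst (x t) + km1 * snd (x t)) +
      (k1 * (eT - snd (x t)) * fst (x t) - (km1 + k2) * snd (x t))) (at t)"
    using DERIV_diff[OF DERIV_diff[OF DERIV_add[OF d1 d2] DERIV_const] DERIV_const] by simp
  moreover have "(k0 - k1 * (eT - snd (x t)) * fst (x t) + km1 * snd (x t)) +
      (k1 * (eT - snd (x t)) * fst (x t) - (km1 + k2) * snd (x t)) = k2 * WW (x t)"
    using c0_eq by (simp add: WW_def algebra_simps)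
  ultimately show "((\<lambda>t. UU (x t)) has_real_derivative k2 * WW (x t)) (at t)"
    by (simp add: UU_def)
  have "((\<lambda>t. c0 - snd (x t)) has_real_derivative
      - (k1 * (eT - snd (x t)) * fst (x t) - (km1 + k2) * snd (x t))) (at t)"
    using DERIV_diff[OF DERIV_const d2] by simp
  then show "((\<lambda>t. WW (x t)) has_real_derivative
        k1 * dd * UU (x t) - WW (x t) * (k1 * (UU (x t) + WW (x t)) + bb)) (at t)"
    unfolding WW_def UU_def bb_def using alg_W[OF eT_eq ident, of "snd (x t)" "fst (x t)"] by simp
qed

lemma HH_mul: "w \<noteq> 0 \<Longrightarrow> k2 * w * HH u w = k1 * dd * u - w * (k1 * (u + w) + bb)"
  using k2p by (simp add: HH_def)

lemma HH_diff: "w1 \<noteq> 0 \<Longrightarrow> w2 \<noteq> 0 \<Longrightarrow>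
    HH u w1 - HH u w2 = - (w1 - w2) * (k1 * dd * u / (k2 * w1 * w2) + k1 / k2)"
  using k2p by (simp add: HH_def field_simps)

end

context mm begin

lemma aa_facts: "aa > 0" "aa \<le> msl" "k1 * dd / aa \<ge> k2 + k1 * dd + \<bar>bb\<bar> + 1"
proof -
  define q where "q = k1 * dd / (k2 + k1 * dd + \<bar>bb\<bar> + 1)"
  have den: "k2 + k1 * dd + \<bar>bb\<bar> + 1 > 0" using k2p k1p dd_pos by (simp add: add_pos_nonneg)
  have qp: "q > 0" using k1p dd_pos den by (simp add: q_def)
  have aq: "aa = min msl q" by (simp add: aa_def q_def)
  show ap: "aa > 0" using aq qp msl_facts(1) by simp
  show "aa \<le> msl" using aq by simp
  have "aa \<le> q" using aq by simp
  then have "k1 * dd / q \<le> k1 * dd / aa" using ap k1p dd_pos by (intro divide_left_mono) auto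
  moreover have "k1 * dd / q = k2 + k1 * dd + \<bar>bb\<bar> + 1" using den k1p dd_pos by (simp add: q_def)
  ultimately show "k1 * dd / aa \<ge> k2 + k1 * dd + \<bar>bb\<bar> + 1" by simp
qed

lemma ell_facts:
  assumes "u \<ge> 0"
  shows "ell u \<ge> 0" "ell u \<le> aa * u" "ell u < dd" "u > 0 \<Longrightarrow> ell u > 0"
    "(ell has_real_derivative aa * dd\<^sup>2 / (dd + aa * u)\<^sup>2) (at u)"
    "aa * dd\<^sup>2 / (dd + aa * u)\<^sup>2 \<le> aa"
proof -
  have ap: "aa > 0" using aa_facts by simp
  have q: "dd + aa * u > 0" "dd + aa * u \<ge> dd" using dd_pos ap assms by (auto simp: add_pos_nonneg)
  show "ell u \<ge> 0" using ap dd_pos assms q by (simp add: ell_def)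
  show "ell u \<le> aa * u"
  proof -
    have "aa * dd * u \<le> aa * u * (dd + aa * u)" using ap assms by (simp add: algebra_simps)
    then show ?thesis using q by (simp add: ell_def divide_le_eq)
  qed
  show "ell u < dd"
  proof -
    have "aa * dd * u < dd * (dd + aa * u)" using dd_pos by (simp add: algebra_simps power2_eq_square)
    then show ?thesis using q by (simp add: ell_def divide_less_eq)
  qed
  show "u > 0 \<Longrightarrow> ell u > 0" unfolding ell_def using ap dd_pos q(1)
    by (intro divide_pos_pos mult_pos_pos) auto
  have "((\<lambda>u. aa * dd * u / (dd + aa * u)) has_real_derivative
      ((aa * dd * 1) * (dd + aa * u) - aa * dd * u * (0 + aa * 1)) / (dd + aa * u)\<^sup>2) (at u)"
    using q by (intro derivative_eq_intros) (auto simp: power2_eq_square)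
  moreover have "((aa * dd * 1) * (dd + aa * u) - aa * dd * u * (0 + aa * 1)) = aa * dd\<^sup>2"
    by (simp add: algebra_simps power2_eq_square)
  ultimately show "(ell has_real_derivative aa * dd\<^sup>2 / (dd + aa * u)\<^sup>2) (at u)"
    by (simp add: ell_def[abs_def])
  have "dd\<^sup>2 \<le> (dd + aa * u)\<^sup>2" using q dd_pos by (intro power_mono) auto
  then have "dd\<^sup>2 / (dd + aa * u)\<^sup>2 \<le> 1" using q by simp
  then show "aa * dd\<^sup>2 / (dd + aa * u)\<^sup>2 \<le> aa" using ap mult_left_mono[of _ 1 aa] by fastforce
qed

lemma ell_mono: "0 \<le> u \<Longrightarrow> u \<le> v \<Longrightarrow> ell u \<le> ell v"
proof -
  assume uv: "0 \<le> u" "u \<le> v"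
  show "ell u \<le> ell v"
  proof (rule DERIV_nonneg_imp_nondecreasing[where f=ell, OF uv(2)])
    fix x assume "u \<le> x" "x \<le> v"
    then have x: "x \<ge> 0" using uv by simp
    have "aa * dd\<^sup>2 / (dd + aa * x)\<^sup>2 \<ge> 0" using aa_facts by simp
    then show "\<exists>y. (ell has_real_derivative y) (at x) \<and> 0 \<le> y" using ell_facts(5)[OF x] by blast
  qed
qed

context
  fixes U W :: "real \<Rightarrow> real" and t1 t2 :: real
  assumes t12: "t1 \<le> t2"
    and dU: "\<And>t. t1 \<le> t \<Longrightarrow> t \<le> t2 \<Longrightarrow> (U has_real_derivative k2 * W t) (at t)"
    and dW: "\<And>t. t1 \<le> t \<Longrightarrow> t \<le> t2 \<Longrightarrow>
        (W has_real_derivative k1 * dd * U t - W t * (k1 * (U t + W t) + bb)) (at t)"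
    and pos: "\<And>t. t1 \<le> t \<Longrightarrow> t \<le> t2 \<Longrightarrow> U t > 0 \<and> W t > 0"
begin

lemma bar_m: "W t1 \<le> msl * U t1 \<Longrightarrow> W t2 \<le> msl * U t2"
proof -
  assume h: "W t1 \<le> msl * U t1"
  have "W t2 - msl * U t2 \<le> 0"
  proof (rule barrier[where f="\<lambda>t. W t - msl * U t" and
        f'="\<lambda>t. (k1 * dd * U t - W t * (k1 * (U t + W t) + bb)) - msl * (k2 * W t)", OF t12])
    show "((\<lambda>t. W t - msl * U t) has_real_derivative
        (k1 * dd * U t - W t * (k1 * (U t + W t) + bb)) - msl * (k2 * W t)) (at t)"
      if "t1 \<le> t" "t \<le> t2" for t
      by (rule DERIV_diff[OF dW[OF that] DERIV_cmult[OF dU[OF that]]])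
    show "(k1 * dd * U t - W t * (k1 * (U t + W t) + bb)) - msl * (k2 * W t) \<le> 0"
      if t: "t1 \<le> t" "t \<le> t2" "0 < W t - msl * U t" for t
    proof -
      have eq: "(k1 * dd * U t - W t * (k1 * (U t + W t) + bb)) - msl * (k2 * W t)
          = (k2 * msl + bb) * (msl * U t - W t) - k1 * (W t * (U t + W t))"
        using msl_facts(2) by (simp add: algebra_simps power2_eq_square) (metis mult.assoc mult.commute distrib_left)
      have "(k2 * msl + bb) * (msl * U t - W t) \<le> 0"
        using msl_facts(3) t(3) by (simp add: mult_nonneg_nonpos)
      moreover have "k1 * (W t * (U t + W t)) \<ge> 0" using pos[OF t(1,2)] k1 by simp
      ultimately show ?thesis using eq by linarith
    qed
    show "W t1 - msl * U t1 \<le> 0" using h by simp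
  qed
  then show ?thesis by simp
qed

lemma bar_D: "W t1 \<le> L \<Longrightarrow> Dl \<le> L \<Longrightarrow> W t2 \<le> L"
proof -
  assume h: "W t1 \<le> L" "Dl \<le> L"
  show "W t2 \<le> L"
  proof (rule barrier[where f=W and f'="\<lambda>t. k1 * dd * U t - W t * (k1 * (U t + W t) + bb)", OF t12])
    show "(W has_real_derivative k1 * dd * U t - W t * (k1 * (U t + W t) + bb)) (at t)"
      if "t1 \<le> t" "t \<le> t2" for t using dW[OF that] .
    show "k1 * dd * U t - W t * (k1 * (U t + W t) + bb) \<le> 0" if t: "t1 \<le> t" "t \<le> t2" "L < W t" for t
    proof -
      have Wd: "W t > dd" "W t > \<bar>bb\<bar> / k1" using h(2) t(3) by (auto simp: Dl_def)
      have "k1 * W t > \<bar>bb\<bar>" using Wd(2) k1p by (simp add: divide_less_eq mult.commute)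
      then have kb: "k1 * W t + bb > 0" by linarith
      have e: "k1 * dd * U t - W t * (k1 * (U t + W t) + bb) = k1 * U t * (dd - W t) - W t * (k1 * W t + bb)"
        by (simp add: algebra_simps)
      have "k1 * U t * (dd - W t) \<le> 0" using pos[OF t(1,2)] k1 Wd(1) by (simp add: mult_nonneg_nonpos)
      moreover have "W t * (k1 * W t + bb) > 0" using pos[OF t(1,2)] kb by simp
      ultimately show ?thesis using e by linarith
    qed
    show "W t1 \<le> L" by (rule h(1))
  qed
qed

lemma bar_ell: "ell (U t1) \<le> W t1 \<Longrightarrow> ell (U t2) \<le> W t2"
proof -
  assume h: "ell (U t1) \<le> W t1"
  define ed where "ed u = aa * dd\<^sup>2 / (dd + aa * u)\<^sup>2" for u
  have "ell (U t2) - W t2 \<le> 0"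
  proof (rule barrier[where f="\<lambda>t. ell (U t) - W t" and
        f'="\<lambda>t. ed (U t) * (k2 * W t) - (k1 * dd * U t - W t * (k1 * (U t + W t) + bb))", OF t12])
    show "((\<lambda>t. ell (U t) - W t) has_real_derivative
        ed (U t) * (k2 * W t) - (k1 * dd * U t - W t * (k1 * (U t + W t) + bb))) (at t)"
      if t: "t1 \<le> t" "t \<le> t2" for t
    proof -
      have u0: "U t \<ge> 0" using pos[OF t] by simp
      show ?thesis
        using DERIV_diff[OF DERIV_chain2[OF ell_facts(5)[OF u0] dU[OF t]] dW[OF t]] by (simp add: ed_def)
    qed
    show "ed (U t) * (k2 * W t) - (k1 * dd * U t - W t * (k1 * (U t + W t) + bb)) \<le> 0"
      if t: "t1 \<le> t" "t \<le> t2" "0 < ell (U t) - W t" for t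
    proof -
      define u where "u = U t"
      define w where "w = W t"
      define X where "X = k1 * dd / aa"
      have up: "u > 0" and wp: "w > 0" using pos[OF t(1,2)] by (auto simp: u_def w_def)
      have ap: "aa > 0" using aa_facts by simp
      have X: "X \<ge> k2 + k1 * dd + \<bar>bb\<bar> + 1" using aa_facts by (simp add: X_def)
      have q: "dd + aa * u > 0" using dd_pos ap up by (simp add: add_pos_pos)
      have wl: "w < ell u" using t(3) by (simp add: u_def w_def)
      then have wq: "w * (dd + aa * u) < aa * dd * u" using q by (simp add: ell_def less_divide_eq)
      have wdd: "w < dd" using wl ell_facts(3)[of u] up by simp
      have t1': "ed u * (k2 * w) \<le> k2 * w"
      proof -
        have "ed u \<le> aa" using ell_facts(6)[of u] up by (simp add: ed_def)
        also have "aa \<le> 1"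
        proof -
          have "k1 * dd / aa \<ge> k1 * dd" using X k2p abs_ge_zero[of bb] unfolding X_def by linarith
          then have "k1 * dd \<le> k1 * dd / aa" .
          then have "k1 * dd * aa \<le> k1 * dd" using ap by (simp add: le_divide_eq)
          then show ?thesis using k1p dd_pos by (simp add: mult_le_cancel_left1)
        qed
        finally have "ed u \<le> 1" .
        then show ?thesis using k2p wp by (simp add: mult_left_le_one_le)
      qed
      have kdu: "k1 * dd * u > X * w + k1 * w * u"
      proof -
        have "(k1 / aa) * (w * (dd + aa * u)) < (k1 / aa) * (aa * dd * u)"
          using wq k1p ap by (intro mult_strict_left_mono) auto
        moreover have "(k1 / aa) * (w * (dd + aa * u)) = X * w + k1 * w * u"
          using ap by (simp add: X_def field_simps)
        moreover have "(k1 / aa) * (aa * dd * u) = k1 * dd * u" using ap by simp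
        ultimately show ?thesis by linarith
      qed
      have ww: "k1 * w * w \<le> k1 * dd * w" using wdd wp k1 by (intro mult_mono) auto
      have "ed u * (k2 * w) - (k1 * dd * u - w * (k1 * (u + w) + bb))
          \<le> k2 * w - (k1 * dd * u - k1 * w * u - k1 * w * w - bb * w)"
        using t1' by (simp add: algebra_simps)
      also have "\<dots> < k2 * w - (X * w - k1 * dd * w - bb * w)" using kdu ww by linarith
      also have "\<dots> = w * (k2 + k1 * dd + bb - X)" by (simp add: algebra_simps)
      also have "\<dots> \<le> 0"
      proof -
        have "k2 + k1 * dd + bb - X \<le> 0" using X by linarith
        then show ?thesis using wp by (simp add: mult_nonneg_nonpos)
      qed
      finally show ?thesis by (simp add: u_def w_def)
    qed
    show "ell (U t1) - W t1 \<le> 0" using h by simp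
  qed
  then show ?thesis by simp
qed

end

end

context mm begin

lemma norm_pt: "norm (pt u w) \<le> \<bar>s0\<bar> + \<bar>c0\<bar> + \<bar>u\<bar> + 2 * \<bar>w\<bar>"
proof -
  have "norm (pt u w) \<le> \<bar>s0 + u + w\<bar> + \<bar>c0 - w\<bar>" using norm_le_fst_snd[of "pt u w"] by (simp add: pt_def)
  then show ?thesis by linarith
qed

lemma fwd:
  assumes mx: "is_maximal_solution F I x" and I0: "0 \<in> I"
    and U0: "UU (x 0) > 0" and W0: "WW (x 0) > 0" and hm: "WW (x 0) \<le> msl * UU (x 0)"
    and hl: "ell (UU (x 0)) \<le> WW (x 0)" and hD: "WW (x 0) \<le> Dl"
  shows "\<not> bdd_above I"
    and "\<And>t. t \<ge> 0 \<Longrightarrow> t \<in> I \<and> UU (x t) > 0 \<and> WW (x t) > 0 \<and> WW (x t) \<le> msl * UU (x t) \<and>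
            ell (UU (x t)) \<le> WW (x t) \<and> WW (x t) \<le> Dl \<and> UU (x t) \<ge> UU (x 0) + k2 * ell (UU (x 0)) * t"
proof -
  have sol: "is_solution F I x" using mx by (simp add: is_maximal_solution_def)
  have intI: "is_interval I" using sol by (simp add: is_solution_def)
  have seg: "t \<in> I" if "a \<in> I" "b \<in> I" "a \<le> t" "t \<le> b" for a b t
    using intI[unfolded is_interval_1, rule_format, OF that(1,2)] that(3,4) by blast
  define U where "U = (\<lambda>t. UU (x t))"
  define W where "W = (\<lambda>t. WW (x t))"
  have dU: "(U has_real_derivative k2 * W t) (at t)" if "t \<in> I" for t
    using UW_der(1)[OF sol that] by (simp add: U_def W_def)
  have dW: "(W has_real_derivative k1 * dd * U t - W t * (k1 * (U t + W t) + bb)) (at t)" if "t \<in> I" for t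
    using UW_der(2)[OF sol that] by (simp add: U_def W_def)
  have main: "U t > 0 \<and> W t > 0 \<and> W t \<le> msl * U t \<and> ell (U t) \<le> W t \<and> W t \<le> Dl \<and>
      U t \<ge> U 0 + k2 * ell (U 0) * t \<and> U t \<le> U 0 + k2 * Dl * t" if t: "t \<in> I" "t \<ge> 0" for t
  proof -
    have inI: "\<tau> \<in> I" if "0 \<le> \<tau>" "\<tau> \<le> t" for \<tau> using seg[OF I0 t(1) that] .
    have pos: "U \<tau> > 0 \<and> W \<tau> > 0" if "0 \<le> \<tau>" "\<tau> \<le> t" for \<tau>
    proof (rule quad_inv[where a=k2 and b="k1 * dd" and \<phi>="\<lambda>t. k1 * (U t + W t) + bb" and ta=0 and tb=\<tau> and U=U and W=W])
      show "k2 > 0" by (rule k2p)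
      show "k1 * dd > 0" using k1p dd_pos by simp
      show "0 \<le> \<tau>" by (rule that(1))
      show "(U has_real_derivative k2 * W s) (at s)" if "0 \<le> s" "s \<le> \<tau>" for s
        using dU inI that \<open>\<tau> \<le> t\<close> by simp
      show "(W has_real_derivative k1 * dd * U s - W s * (k1 * (U s + W s) + bb)) (at s)" if "0 \<le> s" "s \<le> \<tau>" for s
        using dW inI that \<open>\<tau> \<le> t\<close> by simp
      show "U 0 > 0" "W 0 > 0" using U0 W0 by (simp_all add: U_def W_def)
    qed
    have dU': "(U has_real_derivative k2 * W s) (at s)" if "0 \<le> s" "s \<le> t" for s using dU inI that by simp
    have dW': "(W has_real_derivative k1 * dd * U s - W s * (k1 * (U s + W s) + bb)) (at s)"
      if "0 \<le> s" "s \<le> t" for s using dW inI that by simp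
    have m: "W t \<le> msl * U t"
      by (rule bar_m[OF t(2) dU' dW' pos]) (use hm in \<open>auto simp: U_def W_def\<close>)
    have l: "ell (U t) \<le> W t"
      by (rule bar_ell[OF t(2) dU' dW' pos]) (use hl in \<open>auto simp: U_def W_def\<close>)
    have D: "W t \<le> Dl"
      by (rule bar_D[OF t(2) dU' dW' pos]) (use hD in \<open>auto simp: U_def W_def\<close>)
    have Umono: "U 0 \<le> U s" if "0 \<le> s" "s \<le> t" for s
    proof (rule DERIV_nonneg_imp_nondecreasing[where f=U, OF that(1)])
      fix y assume "0 \<le> y" "y \<le> s"
      then show "\<exists>d. (U has_real_derivative d) (at y) \<and> 0 \<le> d"
        using dU'[of y] pos[of y] that k2 by (intro exI[where x="k2 * W y"]) auto
    qed
    have lo: "U 0 - k2 * ell (U 0) * 0 \<le> U t - k2 * ell (U 0) * t"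
    proof (rule DERIV_nonneg_imp_nondecreasing[where f="\<lambda>s. U s - k2 * ell (U 0) * s", OF t(2)])
      fix y assume y: "0 \<le> y" "y \<le> t"
      have "((\<lambda>s. U s - k2 * ell (U 0) * s) has_real_derivative k2 * W y - k2 * ell (U 0)) (at y)"
        using DERIV_diff[OF dU'[OF y] DERIV_cmult[OF DERIV_ident, of "k2 * ell (U 0)"]] by simp
      moreover have "k2 * W y - k2 * ell (U 0) \<ge> 0"
      proof -
        have "ell (U 0) \<le> ell (U y)" using Umono[OF y] pos[of 0] t by (intro ell_mono) auto
        also have "\<dots> \<le> W y" by (rule bar_ell[OF y(1) dU' dW' pos]) (use hl y in \<open>auto simp: U_def W_def\<close>)
        finally show ?thesis using k2 by (simp add: mult_left_mono)
      qed
      ultimately show "\<exists>d. ((\<lambda>s. U s - k2 * ell (U 0) * s) has_real_derivative d) (at y) \<and> 0 \<le> d" by blast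
    qed
    have hi: "U t - k2 * Dl * t \<le> U 0 - k2 * Dl * 0"
    proof (rule DERIV_nonpos_imp_nonincreasing[where f="\<lambda>s. U s - k2 * Dl * s", OF t(2)])
      fix y assume y: "0 \<le> y" "y \<le> t"
      have "((\<lambda>s. U s - k2 * Dl * s) has_real_derivative k2 * W y - k2 * Dl) (at y)"
        using DERIV_diff[OF dU'[OF y] DERIV_cmult[OF DERIV_ident, of "k2 * Dl"]] by simp
      moreover have "k2 * W y - k2 * Dl \<le> 0"
      proof -
        have "W y \<le> Dl" by (rule bar_D[OF y(1) dU' dW' pos]) (use hD y in \<open>auto simp: U_def W_def\<close>)
        then show ?thesis using k2 by (simp add: mult_left_mono)
      qed
      ultimately show "\<exists>d. ((\<lambda>s. U s - k2 * Dl * s) has_real_derivative d) (at y) \<and> d \<le> 0" by blast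
    qed
    show ?thesis using pos[of t] t m l D lo hi by simp
  qed
  show unb: "\<not> bdd_above I"
  proof
    assume bdd: "bdd_above I"
    define T where "T = Sup I"
    have le: "t \<le> T" if "t \<in> I" for t using bdd that by (simp add: T_def cSup_upper)
    have "norm (x t) \<le> \<bar>s0\<bar> + \<bar>c0\<bar> + (U 0 + k2 * Dl * T) + 2 * Dl" if t: "t \<in> I" "t \<ge> 0" for t
    proof -
      have "norm (x t) = norm (pt (U t) (W t))" using pt_UW[of "x t"] by (simp add: U_def W_def)
      also have "\<dots> \<le> \<bar>s0\<bar> + \<bar>c0\<bar> + \<bar>U t\<bar> + 2 * \<bar>W t\<bar>" by (rule norm_pt)
      also have "\<dots> \<le> \<bar>s0\<bar> + \<bar>c0\<bar> + (U 0 + k2 * Dl * T) + 2 * Dl"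
      proof -
        have "k2 * Dl * t \<le> k2 * Dl * T"
        proof (rule mult_left_mono)
          show "t \<le> T" using le[OF t(1)] .
          have "Dl \<ge> 0" using msl_facts(1) by (simp add: Dl_def)
          then show "0 \<le> k2 * Dl" using k2 by simp
        qed
        then show ?thesis using main[OF t] by simp
      qed
      finally show ?thesis .
    qed
    then show False using blowup_right[OF mx I0] bdd by blast
  qed
  fix t :: real assume t: "t \<ge> 0"
  have tI: "t \<in> I"
  proof -
    obtain t' where "t' \<in> I" "t < t'" using unb unfolding bdd_above_def by (meson not_le)
    then show ?thesis using seg[OF I0, of t' t] t by simp
  qed
  show "t \<in> I \<and> UU (x t) > 0 \<and> WW (x t) > 0 \<and> WW (x t) \<le> msl * UU (x t) \<and>
      ell (UU (x t)) \<le> WW (x t) \<and> WW (x t) \<le> Dl \<and> UU (x t) \<ge> UU (x 0) + k2 * ell (UU (x 0)) * t"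
    using main[OF tI t] tI by (simp add: U_def W_def)
qed

end

context mm begin

lemma graph_exists:
  assumes v0: "0 < v0" "v0 \<le> 1"
  shows "\<exists>g. (\<forall>v>v0. (g has_real_derivative HH v (g v)) (at v)) \<and>
             (\<forall>v>v0. ell v \<le> g v \<and> g v \<le> msl * v \<and> g v \<le> Dl)"
proof -
  obtain I x where mx: "is_maximal_solution F I x" and I0: "0 \<in> I" and x0: "x 0 = pt v0 (msl * v0)"
    using max_exist by blast
  have sol: "is_solution F I x" using mx by (simp add: is_maximal_solution_def)
  define U where "U = (\<lambda>t. UU (x t))"
  define W where "W = (\<lambda>t. WW (x t))"
  have U0: "U 0 = v0" and W0: "W 0 = msl * v0" using x0 by (simp_all add: U_def W_def)
  have mp: "msl > 0" by (rule msl_facts(1))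
  have hl: "ell v0 \<le> msl * v0"
    using ell_facts(2)[of v0] aa_facts(2) v0 by (meson less_imp_le mult_right_mono order_trans)
  have hD: "msl * v0 \<le> Dl"
  proof -
    have "msl * v0 \<le> msl" using mp v0 by (simp add: mult_le_cancel_left1)
    then show ?thesis by (simp add: Dl_def)
  qed
  note F = fwd[OF mx I0, unfolded x0 UU_pt WW_pt]
  have fw: "t \<in> I \<and> U t > 0 \<and> W t > 0 \<and> W t \<le> msl * U t \<and> ell (U t) \<le> W t \<and> W t \<le> Dl \<and>
      U t \<ge> v0 + k2 * ell v0 * t" if "t \<ge> 0" for t
    using F(2)[OF _ _ _ hl hD that] v0 mp by (simp add: U_def W_def x0)
  have dU: "(U has_real_derivative k2 * W t) (at t)" if "t \<ge> 0" for t
    using UW_der(1)[OF sol] fw[OF that] by (simp add: U_def W_def)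
  have dW: "(W has_real_derivative k1 * dd * U t - W t * (k1 * (U t + W t) + bb)) (at t)" if "t \<ge> 0" for t
    using UW_der(2)[OF sol] fw[OF that] by (simp add: U_def W_def)
  have smono: "U a < U b" if "0 \<le> a" "a < b" for a b
  proof (rule DERIV_pos_imp_increasing[OF that(2)])
    fix y assume "a \<le> y" "y \<le> b"
    then have y: "y \<ge> 0" using that by simp
    show "\<exists>d. (U has_real_derivative d) (at y) \<and> d > 0"
      using dU[OF y] fw[OF y] k2p by (intro exI[where x="k2 * W y"]) simp
  qed
  have inj: "a = b" if "0 \<le> a" "0 \<le> b" "U a = U b" for a b
    using smono[of a b] smono[of b a] that by (cases a b rule: linorder_cases) auto
  have ell0: "ell v0 > 0" using ell_facts(4)[of v0] v0 by simp
  have ex: "\<exists>t\<ge>0. U t = v" if v: "v \<ge> v0" for v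
  proof -
    define T where "T = (v - v0) / (k2 * ell v0)"
    have T0: "T \<ge> 0" using v k2p ell0 by (simp add: T_def)
    have "U T \<ge> v0 + k2 * ell v0 * T" using fw[OF T0] by simp
    moreover have "k2 * ell v0 * T = v - v0" using k2p ell0 by (simp add: T_def)
    ultimately have UT: "v \<le> U T" by simp
    have cont: "continuous_on {0..T} U"
      using dU by (meson DERIV_isCont atLeastAtMost_iff continuous_at_imp_continuous_on)
    obtain t where "0 \<le> t" "t \<le> T" "U t = v" using IVT'[of U 0 v T, OF _ UT T0 cont] U0 v by auto
    then show ?thesis by blast
  qed
  define \<tau> where "\<tau> v = (THE t. 0 \<le> t \<and> U t = v)" for v
  have \<tau>: "0 \<le> \<tau> v \<and> U (\<tau> v) = v" if vv: "v \<ge> v0" for v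
  proof -
    obtain t where t: "0 \<le> t" "U t = v" using ex[OF vv] by blast
    have "0 \<le> \<tau> v \<and> U (\<tau> v) = v" unfolding \<tau>_def
      by (rule theI[of "\<lambda>t. 0 \<le> t \<and> U t = v" t]) (use t inj in auto)
    then show ?thesis .
  qed
  have \<tau>U: "\<tau> (U t) = t" if "t \<ge> 0" for t
  proof -
    have "U t \<ge> v0" using smono[of 0 t] that U0 by (cases "t = 0") auto
    then show ?thesis using \<tau>[of "U t"] inj[of "\<tau> (U t)" t] that by auto
  qed
  define g where "g v = W (\<tau> v)" for v
  have gder: "(g has_real_derivative HH v (g v)) (at v)" if v: "v > v0" for v
  proof -
    define t where "t = \<tau> v"
    have t: "0 \<le> t" "U t = v" using \<tau>[of v] v by (auto simp: t_def)
    have tpos: "t > 0" using t U0 v by (cases "t = 0") auto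
    have Wt: "W t > 0" using fw[OF t(1)] by simp
    have D0: "k2 * W t \<noteq> 0" using k2p Wt by simp
    have ic: "isCont \<tau> v"
    proof -
      have "isCont \<tau> (U t)"
      proof (rule isCont_inverse_function[where d="t/2" and f=U and g=\<tau> and x=t])
        show "0 < t / 2" using tpos by simp
        show "\<tau> (U z) = z" if zz: "\<bar>z - t\<bar> \<le> t / 2" for z
        proof -
          have "z \<ge> 0" using abs_le_D2[OF zz] tpos by linarith
          then show ?thesis using \<tau>U[of z] by simp
        qed
        show "isCont U z" if zz: "\<bar>z - t\<bar> \<le> t / 2" for z
        proof -
          have "z \<ge> 0" using abs_le_D2[OF zz] tpos by linarith
          then show ?thesis using DERIV_isCont[OF dU[of z]] by simp
        qed
      qed
      then show ?thesis using t by simp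
    qed
    have d\<tau>: "(\<tau> has_real_derivative inverse (k2 * W t)) (at v)"
    proof (rule DERIV_inverse_function[where f=U and a=v0 and b="v+1"])
      show "(U has_real_derivative k2 * W t) (at (\<tau> v))" using dU[OF t(1)] by (simp add: t_def)
      show "k2 * W t \<noteq> 0" by (rule D0)
      show "v0 < v" "v < v + 1" using v by simp_all
      show "U (\<tau> y) = y" if "v0 < y" "y < v + 1" for y using \<tau>[of y] that by simp
      show "isCont \<tau> v" by (rule ic)
    qed
    have "((\<lambda>v. W (\<tau> v)) has_real_derivative
        (k1 * dd * U t - W t * (k1 * (U t + W t) + bb)) * inverse (k2 * W t)) (at v)"
      using DERIV_chain2[OF _ d\<tau>, of W] dW[OF t(1)] by (simp add: t_def)
    moreover have "(k1 * dd * U t - W t * (k1 * (U t + W t) + bb)) * inverse (k2 * W t) = HH v (g v)"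
    proof -
      have "k2 * W t * HH v (W t) = k1 * dd * v - W t * (k1 * (v + W t) + bb)"
        using HH_mul[of "W t" v] Wt by simp
      then have "HH v (W t) = (k1 * dd * v - W t * (k1 * (v + W t) + bb)) / (k2 * W t)"
        using D0 by (simp add: field_simps)
      then show ?thesis using t by (simp add: g_def t_def[symmetric] divide_inverse)
    qed
    ultimately show ?thesis by (simp add: g_def[abs_def])
  qed
  have gb: "ell v \<le> g v \<and> g v \<le> msl * v \<and> g v \<le> Dl" if v: "v > v0" for v
    using fw[of "\<tau> v"] \<tau>[of v] v by (simp add: g_def)
  show ?thesis using gder gb by blast
qed

end

context mm begin

definition Pg :: "real \<Rightarrow> (real \<Rightarrow> real) \<Rightarrow> bool" where
  "Pg v0 g \<longleftrightarrow> (\<forall>v>v0. (g has_real_derivative HH v (g v)) (at v)) \<and>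
             (\<forall>v>v0. ell v \<le> g v \<and> g v \<le> msl * v \<and> g v \<le> Dl)"

definition gs :: "nat \<Rightarrow> real \<Rightarrow> real" where "gs n = (SOME g. Pg (1 / (real n + 1)) g)"

lemma gs_P: "Pg (1 / (real n + 1)) (gs n)"
proof -
  have "\<exists>g. Pg (1 / (real n + 1)) g" using graph_exists[of "1 / (real n + 1)"] by (simp add: Pg_def)
  then show ?thesis unfolding gs_def by (rule someI_ex)
qed

lemma gs_der: "v > 1 / (real n + 1) \<Longrightarrow> (gs n has_real_derivative HH v (gs n v)) (at v)"
  using gs_P[of n] by (simp add: Pg_def)
lemma gs_bd: "v > 1 / (real n + 1) \<Longrightarrow> ell v \<le> gs n v \<and> gs n v \<le> msl * v \<and> gs n v \<le> Dl"
  using gs_P[of n] by (simp add: Pg_def)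

lemma HH_diff_abs:
  assumes "u > 0" "w1 > 0" "w2 > 0"
  shows "\<bar>HH u w1 - HH u w2\<bar> = \<bar>w1 - w2\<bar> * (k1 * dd * u / (k2 * w1 * w2) + k1 / k2)"
proof -
  have "k1 * dd * u / (k2 * w1 * w2) + k1 / k2 \<ge> 0" using assms k1 k2p dd_pos by simp
  moreover have "\<bar>- (w1 - w2)\<bar> = \<bar>w1 - w2\<bar>" by simp
  ultimately show ?thesis using HH_diff[of w1 w2 u] assms by (simp only: abs_mult)
qed

lemma contract:
  assumes a0: "a \<ge> 0"
    and d1: "\<And>u. u > a \<Longrightarrow> (g1 has_real_derivative HH u (g1 u)) (at u)"
    and d2: "\<And>u. u > a \<Longrightarrow> (g2 has_real_derivative HH u (g2 u)) (at u)"
    and p1: "\<And>u. u > a \<Longrightarrow> g1 u > 0" and p2: "\<And>u. u > a \<Longrightarrow> g2 u > 0"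
    and v: "a < v" "v \<le> v'"
  shows "\<bar>g1 v' - g2 v'\<bar> \<le> \<bar>g1 v - g2 v\<bar>"
proof -
  have "(g1 v' - g2 v')\<^sup>2 \<le> (g1 v - g2 v)\<^sup>2"
  proof (rule DERIV_nonpos_imp_nonincreasing[where f="\<lambda>u. (g1 u - g2 u)\<^sup>2", OF v(2)])
    fix u assume u: "v \<le> u" "u \<le> v'"
    then have ua: "u > a" using v by simp
    have "((\<lambda>u. (g1 u - g2 u)\<^sup>2) has_real_derivative
        2 * (g1 u - g2 u) * (HH u (g1 u) - HH u (g2 u))) (at u)"
      using DERIV_power[OF DERIV_diff[OF d1[OF ua] d2[OF ua]], of 2] by (simp add: algebra_simps)
    moreover have "2 * (g1 u - g2 u) * (HH u (g1 u) - HH u (g2 u)) \<le> 0"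
    proof -
      have "HH u (g1 u) - HH u (g2 u) = - (g1 u - g2 u) * (k1 * dd * u / (k2 * g1 u * g2 u) + k1 / k2)"
        using HH_diff p1[OF ua] p2[OF ua] by simp
      moreover have "k1 * dd * u / (k2 * g1 u * g2 u) + k1 / k2 \<ge> 0"
        using k1 k2p dd_pos p1[OF ua] p2[OF ua] ua a0 by simp
      ultimately show ?thesis
      proof -
        assume h1: "HH u (g1 u) - HH u (g2 u) = - (g1 u - g2 u) * (k1 * dd * u / (k2 * g1 u * g2 u) + k1 / k2)"
          and h2: "k1 * dd * u / (k2 * g1 u * g2 u) + k1 / k2 \<ge> 0"
        define E where "E = g1 u - g2 u"
        define K where "K = k1 * dd * u / (k2 * g1 u * g2 u) + k1 / k2"
        have "2 * (g1 u - g2 u) * (HH u (g1 u) - HH u (g2 u)) = 2 * E * (- E * K)"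
          unfolding h1 E_def K_def by (rule refl)
        also have "\<dots> = - (2 * (E * E) * K)" by (simp add: algebra_simps)
        finally have "2 * (g1 u - g2 u) * (HH u (g1 u) - HH u (g2 u)) = - (2 * (E * E) * K)" .
        moreover have "E * E * K \<ge> 0" using h2 by (simp add: K_def)
        ultimately show ?thesis by simp
      qed
    qed
    ultimately show "\<exists>y. ((\<lambda>u. (g1 u - g2 u)\<^sup>2) has_real_derivative y) (at u) \<and> y \<le> 0" by blast
  qed
  then show ?thesis by (simp add: abs_le_square_iff)
qed

lemma gs_pos: "v > 1 / (real n + 1) \<Longrightarrow> gs n v > 0"
proof -
  assume v: "v > 1 / (real n + 1)"
  have "v > 0" using v by (smt (verit) divide_nonneg_nonneg of_nat_0_le_iff)
  then show ?thesis using gs_bd[OF v] ell_facts(4)[of v] by simp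
qed

lemma gs_close:
  assumes k: "k \<ge> 1" and j: "j \<ge> k" and v: "v \<ge> 1 / real k"
  shows "\<bar>gs j v - gs k v\<bar> \<le> msl / real k"
proof -
  define a where "a = 1 / (real k + 1)"
  have a0: "a \<ge> 0" by (simp add: a_def)
  have ak: "a < 1 / real k" using k by (simp add: a_def frac_less2)
  have aj: "1 / (real j + 1) \<le> a" using j by (simp add: a_def frac_le)
  have "\<bar>gs j v - gs k v\<bar> \<le> \<bar>gs j (1 / real k) - gs k (1 / real k)\<bar>"
  proof (rule contract[OF a0 _ _ _ _ ak v])
    show "(gs j has_real_derivative HH u (gs j u)) (at u)" if "u > a" for u using gs_der that aj by simp
    show "(gs k has_real_derivative HH u (gs k u)) (at u)" if "u > a" for u using gs_der that by (simp add: a_def)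
    show "gs j u > 0" if "u > a" for u using gs_pos that aj by simp
    show "gs k u > 0" if "u > a" for u using gs_pos that by (simp add: a_def)
  qed
  also have "\<dots> \<le> msl / real k"
  proof -
    have "1 / real k > 1 / (real j + 1)" using aj ak by simp
    then have bj: "0 < gs j (1 / real k)" "gs j (1 / real k) \<le> msl * (1 / real k)"
      using gs_pos[of j "1 / real k"] gs_bd[of j "1 / real k"] by auto
    have bk: "0 < gs k (1 / real k)" "gs k (1 / real k) \<le> msl * (1 / real k)"
      using gs_pos[of k "1 / real k"] gs_bd[of k "1 / real k"] ak by (auto simp: a_def)
    show ?thesis using bj bk by (simp add: abs_le_iff)
  qed
  finally show ?thesis .
qed

definition Winf :: "real \<Rightarrow> real" where "Winf v = lim (\<lambda>j. gs j v)"

lemma exists_k: "v > 0 \<Longrightarrow> e > 0 \<Longrightarrow> \<exists>k::nat. k \<ge> 1 \<and> 1 / real k \<le> v \<and> msl / real k < e"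
proof -
  assume v: "v > 0" and e: "e > 0"
  define k where "k = nat (ceiling (1 / v)) + nat (ceiling (msl / e)) + 1"
  have k1': "real k \<ge> 1 / v" "real k > msl / e" "k \<ge> 1" unfolding k_def
    by (simp_all add: add.commute) (linarith, linarith)
  have kp: "real k > 0" using k1' by simp
  have "1 / real k \<le> v" using k1'(1) v kp by (simp add: divide_le_eq mult.commute)
  moreover have "msl / real k < e" using k1'(2) e kp by (simp add: divide_less_eq mult.commute)
  ultimately show ?thesis using k1'(3) by blast
qed

lemma Winf_conv: "v > 0 \<Longrightarrow> (\<lambda>j. gs j v) \<longlonglongrightarrow> Winf v"
proof -
  assume v: "v > 0"
  have "Cauchy (\<lambda>j. gs j v)"
  proof (rule metric_CauchyI)
    fix e :: real assume e: "e > 0"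
    obtain k where k: "k \<ge> 1" "1 / real k \<le> v" "msl / real k < e / 2"
      using exists_k[OF v, of "e/2"] e by auto
    show "\<exists>M. \<forall>m\<ge>M. \<forall>n\<ge>M. dist (gs m v) (gs n v) < e"
    proof (intro exI allI impI)
      fix m n assume mn: "k \<le> m" "k \<le> n"
      have "\<bar>gs m v - gs k v\<bar> \<le> msl / real k" by (rule gs_close[OF k(1) mn(1) k(2)])
      moreover have "\<bar>gs n v - gs k v\<bar> \<le> msl / real k" by (rule gs_close[OF k(1) mn(2) k(2)])
      moreover have "\<bar>gs m v - gs n v\<bar> \<le> \<bar>gs m v - gs k v\<bar> + \<bar>gs n v - gs k v\<bar>"
        using abs_triangle_ineq[of "gs m v - gs k v" "gs k v - gs n v"] by (simp add: abs_minus_commute)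
      ultimately have "\<bar>gs m v - gs n v\<bar> < e" using k(3) by linarith
      then show "dist (gs m v) (gs n v) < e" by (simp add: dist_real_def)
    qed
  qed
  then show ?thesis by (simp add: Winf_def Cauchy_convergent_iff convergent_LIMSEQ_iff)
qed

lemma Winf_close:
  assumes k: "k \<ge> 1" and v: "v \<ge> 1 / real k"
  shows "\<bar>Winf v - gs k v\<bar> \<le> msl / real k"
proof -
  have "1 / real k > 0" using k by simp
  then have vp: "v > 0" using v by linarith
  show ?thesis
  proof (rule LIMSEQ_le_const2)
    show "(\<lambda>j. \<bar>gs j v - gs k v\<bar>) \<longlonglongrightarrow> \<bar>Winf v - gs k v\<bar>"
      by (intro tendsto_intros Winf_conv[OF vp])
    show "\<exists>N. \<forall>j\<ge>N. \<bar>gs j v - gs k v\<bar> \<le> msl / real k"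
      using gs_close[OF k _ v] by blast
  qed
qed

lemma Winf_bd:
  assumes v: "v > 0"
  shows "ell v \<le> Winf v" "Winf v \<le> msl * v" "Winf v \<le> Dl" "Winf v > 0"
proof -
  obtain N :: nat where N: "1 / (real N + 1) < v"
  proof -
    obtain k where k: "k \<ge> 1" "1 / real k \<le> v" "msl / real k < 1" using exists_k[OF v, of 1] by auto
    have "1 / (real k + 1) < 1 / real k" using k(1) by (simp add: frac_less2)
    then show ?thesis using that k(2) by (meson order_less_le_trans)
  qed
  have ev: "\<forall>\<^sub>F j in sequentially. ell v \<le> gs j v \<and> gs j v \<le> msl * v \<and> gs j v \<le> Dl"
    unfolding eventually_sequentially
  proof (intro exI allI impI)
    fix j assume "N \<le> j"
    then have "1 / (real j + 1) \<le> 1 / (real N + 1)" by (simp add: frac_le)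
    then show "ell v \<le> gs j v \<and> gs j v \<le> msl * v \<and> gs j v \<le> Dl" using gs_bd N by simp
  qed
  have c: "(\<lambda>j. gs j v) \<longlonglongrightarrow> Winf v" by (rule Winf_conv[OF v])
  show l: "ell v \<le> Winf v" by (rule tendsto_lowerbound[OF c]) (use ev in \<open>auto elim: eventually_mono\<close>)
  show "Winf v \<le> msl * v" by (rule tendsto_upperbound[OF c]) (use ev in \<open>auto elim: eventually_mono\<close>)
  show "Winf v \<le> Dl" by (rule tendsto_upperbound[OF c]) (use ev in \<open>auto elim: eventually_mono\<close>)
  show "Winf v > 0" using l ell_facts(4)[of v] v by simp
qed

end

context mm begin

lemma Winf_der:
  assumes v: "v > 0"
  shows "(Winf has_real_derivative HH v (Winf v)) (at v)"
proof -
  obtain N :: nat where N: "N \<ge> 1" "1 / real N \<le> v / 2"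
    using exists_k[of "v/2" 1] v by auto
  define S where "S = {v / 2 .. 2 * v}"
  define f where "f j = gs (j + N)" for j
  have Npos: "real N > 0" using N by simp
  have uS: "u > 0" "u \<ge> 1 / real N" "u \<le> 2 * v" "u \<ge> v / 2" if "u \<in> S" for u
    using that N v Npos by (auto simp: S_def)
  have fder: "(f j has_real_derivative HH u (f j u)) (at u)" if "u \<in> S" for j u
  proof -
    have "1 / (real (j + N) + 1) < 1 / real N" using Npos by (simp add: frac_less2)
    then have "u > 1 / (real (j + N) + 1)" using uS[OF that] by linarith
    then show ?thesis using gs_der by (simp add: f_def)
  qed
  have lv: "ell (v / 2) > 0" using ell_facts(4)[of "v/2"] v by simp
  define Kc where "Kc = k1 * dd * (2 * v) / (k2 * (ell (v / 2))\<^sup>2) + k1 / k2"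
  have Kc0: "Kc \<ge> 0" using k1 dd_pos v k2p by (simp add: Kc_def)
  have closeb: "\<bar>f j u - Winf u\<bar> \<le> msl / real (j + N)" if u: "u \<in> S" for j u
  proof -
    have "1 / real (j + N) \<le> 1 / real N" using Npos by (simp add: frac_le)
    then have "u \<ge> 1 / real (j + N)" using uS[OF u] by linarith
    then show ?thesis using Winf_close[of "j + N" u] N by (simp add: f_def abs_minus_commute)
  qed
  have lowb: "f j u \<ge> ell (v / 2)" "Winf u \<ge> ell (v / 2)" if u: "u \<in> S" for j u
  proof -
    have m: "ell (v / 2) \<le> ell u" using uS[OF u] v by (intro ell_mono) auto
    have "1 / (real (j + N) + 1) < 1 / real N" using Npos by (simp add: frac_less2)
    then have "u > 1 / (real (j + N) + 1)" using uS[OF u] by linarith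
    then show "f j u \<ge> ell (v / 2)" using gs_bd[of "j + N" u] m by (simp add: f_def)
    show "Winf u \<ge> ell (v / 2)" using Winf_bd(1)[OF uS(1)[OF u]] m by simp
  qed
  have Hb: "\<bar>HH u (f j u) - HH u (Winf u)\<bar> \<le> msl / real (j + N) * Kc" if u: "u \<in> S" for j u
  proof -
    have fp: "f j u > 0" "Winf u > 0" using lowb(1)[OF u, of j] lowb(2)[OF u] lv by linarith+
    have "\<bar>HH u (f j u) - HH u (Winf u)\<bar> = \<bar>f j u - Winf u\<bar> * (k1 * dd * u / (k2 * f j u * Winf u) + k1 / k2)"
      by (rule HH_diff_abs[OF uS(1)[OF u] fp])
    also have "\<dots> \<le> msl / real (j + N) * Kc"
    proof (rule mult_mono)
      show "\<bar>f j u - Winf u\<bar> \<le> msl / real (j + N)" by (rule closeb[OF u])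
      have "k1 * dd * u / (k2 * f j u * Winf u) \<le> k1 * dd * (2 * v) / (k2 * (ell (v / 2))\<^sup>2)"
      proof (rule frac_le)
        show "0 \<le> k1 * dd * (2 * v)" using k1 dd_pos v by simp
        show "k1 * dd * u \<le> k1 * dd * (2 * v)" using uS[OF u] k1 dd_pos by (simp add: mult_left_mono)
        show "0 < k2 * (ell (v / 2))\<^sup>2" using k2p lv by simp
        have "(ell (v / 2))\<^sup>2 \<le> f j u * Winf u"
          unfolding power2_eq_square by (rule mult_mono) (use lowb(1)[OF u, of j] lowb(2)[OF u] lv in linarith)+
        then show "k2 * (ell (v / 2))\<^sup>2 \<le> k2 * f j u * Winf u" using k2p by (simp add: mult.assoc)
      qed
      then show "k1 * dd * u / (k2 * f j u * Winf u) + k1 / k2 \<le> Kc" by (simp add: Kc_def)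
      show "0 \<le> msl / real (j + N)" using msl_facts(1) by simp
      show "0 \<le> k1 * dd * u / (k2 * f j u * Winf u) + k1 / k2" using k1 dd_pos uS[OF u] k2p fp by simp
    qed
    finally show ?thesis .
  qed
  have vS: "v \<in> S" using v by (simp add: S_def)
  obtain G where G: "\<forall>u\<in>S. (\<lambda>j. f j u) \<longlonglongrightarrow> G u \<and> (G has_derivative (*) (HH u (Winf u))) (at u within S)"
  proof -
    have "\<exists>G. \<forall>u\<in>S. (\<lambda>j. f j u) \<longlonglongrightarrow> G u \<and> (G has_derivative (*) (HH u (Winf u))) (at u within S)"
    proof (rule has_derivative_sequence[where f'="\<lambda>j u. (*) (HH u (f j u))"])
      show "convex S" by (simp add: S_def)
      show "(f j has_derivative (*) (HH u (f j u))) (at u within S)" if "u \<in> S" for j u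
        using has_field_derivative_imp_has_derivative[OF fder[OF that]] has_derivative_at_withinI by blast
      show "v \<in> S" by (rule vS)
      show "(\<lambda>j. f j v) \<longlonglongrightarrow> Winf v"
        unfolding f_def using LIMSEQ_ignore_initial_segment[OF Winf_conv[OF v], of N] by simp
      fix e :: real assume e: "e > 0"
      have "(\<lambda>j. msl * Kc * (1 / real (j + N))) \<longlonglongrightarrow> msl * Kc * 0"
        by (intro tendsto_intros LIMSEQ_ignore_initial_segment[OF lim_inverse_n'])
      then have "\<forall>\<^sub>F j in sequentially. msl * Kc * (1 / real (j + N)) < e" using e by (simp add: order_tendsto_iff)
      then show "\<forall>\<^sub>F j in sequentially. \<forall>u\<in>S. \<forall>h. norm (HH u (f j u) * h - HH u (Winf u) * h) \<le> e * norm h"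
      proof (rule eventually_mono)
        fix j assume j: "msl * Kc * (1 / real (j + N)) < e"
        show "\<forall>u\<in>S. \<forall>h. norm (HH u (f j u) * h - HH u (Winf u) * h) \<le> e * norm h"
        proof (intro ballI allI)
          fix u h assume u: "u \<in> S"
          have "\<bar>HH u (f j u) - HH u (Winf u)\<bar> \<le> e" using Hb[OF u, of j] j by simp
          then have "\<bar>HH u (f j u) - HH u (Winf u)\<bar> * \<bar>h\<bar> \<le> e * \<bar>h\<bar>" by (simp add: mult_right_mono)
          then show "norm (HH u (f j u) * h - HH u (Winf u) * h) \<le> e * norm h"
            by (simp add: left_diff_distrib[symmetric] abs_mult)
        qed
      qed
    qed
    then show ?thesis using that by blast
  qed
  have GW: "G u = Winf u" if "u \<in> S" for u
  proof -
    have "(\<lambda>j. f j u) \<longlonglongrightarrow> Winf u"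
      unfolding f_def using LIMSEQ_ignore_initial_segment[OF Winf_conv[OF uS(1)[OF that]], of N] by simp
    moreover have "(\<lambda>j. f j u) \<longlonglongrightarrow> G u" using G that by blast
    ultimately show ?thesis using LIMSEQ_unique by metis
  qed
  have "(G has_derivative (*) (HH v (Winf v))) (at v within S)" using G vS by blast
  then have "(Winf has_derivative (*) (HH v (Winf v))) (at v within S)"
    by (rule has_derivative_transform[OF vS, rotated]) (simp add: GW)
  moreover have "at v within S = at v" unfolding S_def by (rule at_within_Icc_at) (use v in auto)
  ultimately show ?thesis by (simp add: has_field_derivative_def)
qed

end

lemma lower_end_nontriv: "lower_end K \<noteq> bot"
  by (simp add: lower_end_def)
lemma upper_end_nontriv: "upper_end K \<noteq> bot"
  by (simp add: upper_end_def)

lemma open_interval_below: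
  fixes K :: "real set"
  assumes "open K" "t0 \<in> K"
  shows "\<exists>t\<in>K. t < t0"
proof -
  obtain e where e: "e > 0" "ball t0 e \<subseteq> K" using assms openE by blast
  then have "t0 - e/2 \<in> K" by (auto simp: dist_real_def)
  then show ?thesis using e by (intro bexI[where x="t0 - e/2"]) auto
qed

lemma open_interval_above:
  fixes K :: "real set"
  assumes "open K" "t0 \<in> K"
  shows "\<exists>t\<in>K. t > t0"
proof -
  obtain e where e: "e > 0" "ball t0 e \<subseteq> K" using assms openE by blast
  then have "t0 + e/2 \<in> K" by (auto simp: dist_real_def)
  then show ?thesis using e by (intro bexI[where x="t0 + e/2"]) auto
qed

lemma ev_lower:
  fixes K :: "real set"
  assumes o: "open K" and i: "is_interval K" and t0: "t0 \<in> K"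
  shows "\<forall>\<^sub>F t in lower_end K. t \<in> K \<and> t < t0"
proof (cases "bdd_below K")
  case True
  obtain t1 where t1: "t1 \<in> K" "t1 < t0" using open_interval_below[OF o t0] by blast
  have lt: "Inf K < t0" using True t1 by (meson cInf_lower order_le_less_trans)
  have "\<forall>\<^sub>F t in at_right (Inf K). t \<in> K \<and> t < t0"
    using eventually_at_right_real[OF lt]
  proof (rule eventually_mono)
    fix t assume t: "t \<in> {Inf K<..<t0}"
    then obtain k where "k \<in> K" "k < t" using cInf_less_iff[of K t] t0 True by auto
    then show "t \<in> K \<and> t < t0" using i[unfolded is_interval_1, rule_format, of k t0 t] t t0 by auto
  qed
  then show ?thesis using True by (simp add: lower_end_def)
next
  case False
  have "\<forall>\<^sub>F t in at_bot. t < t0" using eventually_at_bot_dense by blast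
  then have "\<forall>\<^sub>F t in at_bot. t \<in> K \<and> t < t0"
  proof (rule eventually_mono)
    fix t assume t: "t < t0"
    obtain k where "k \<in> K" "k < t" using False unfolding bdd_below_def by (meson not_le)
    then show "t \<in> K \<and> t < t0" using i[unfolded is_interval_1, rule_format, of k t0 t] t t0 by auto
  qed
  then show ?thesis using False by (simp add: lower_end_def)
qed

lemma ev_upper:
  fixes K :: "real set"
  assumes o: "open K" and i: "is_interval K" and t0: "t0 \<in> K"
  shows "\<forall>\<^sub>F t in upper_end K. t \<in> K \<and> t > t0"
proof (cases "bdd_above K")
  case True
  obtain t1 where t1: "t1 \<in> K" "t1 > t0" using open_interval_above[OF o t0] by blast
  have lt: "t0 < Sup K" using True t1 by (meson cSup_upper order_less_le_trans)
  have "\<forall>\<^sub>F t in at_left (Sup K). t \<in> K \<and> t > t0"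
    using eventually_at_left_real[OF lt]
  proof (rule eventually_mono)
    fix t assume t: "t \<in> {t0<..<Sup K}"
    then obtain k where "k \<in> K" "t < k" using less_cSup_iff[of K t] t0 True by auto
    then show "t \<in> K \<and> t0 < t" using i[unfolded is_interval_1, rule_format, of t0 k t] t t0 by auto
  qed
  then show ?thesis using True by (simp add: upper_end_def)
next
  case False
  have "\<forall>\<^sub>F t in at_top. t > t0" by simp
  then have "\<forall>\<^sub>F t in at_top. t \<in> K \<and> t > t0"
  proof (rule eventually_mono)
    fix t assume t: "t0 < t"
    obtain k where "k \<in> K" "t < k" using False unfolding bdd_above_def by (meson not_le)
    then show "t \<in> K \<and> t0 < t" using i[unfolded is_interval_1, rule_format, of t0 k t] t t0 by auto
  qed
  then show ?thesis using False by (simp add: upper_end_def)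
qed

lemma cont_right_ge:
  fixes f :: "real \<Rightarrow> real"
  assumes "isCont f t" "t < b" "\<And>\<tau>. t < \<tau> \<Longrightarrow> \<tau> < b \<Longrightarrow> f \<tau> \<ge> v"
  shows "f t \<ge> v"
proof (rule tendsto_lowerbound)
  show "(f \<longlongrightarrow> f t) (at_right t)"
    using assms(1) by (simp add: isCont_def filterlim_at_split)
  show "\<forall>\<^sub>F x in at_right t. v \<le> f x"
    using eventually_at_right_real[OF assms(2)] by eventually_elim (use assms(3) in auto)
qed simp

lemma cont_right_le:
  fixes f :: "real \<Rightarrow> real"
  assumes "isCont f t" "t < b" "\<And>\<tau>. t < \<tau> \<Longrightarrow> \<tau> < b \<Longrightarrow> f \<tau> \<le> v"
  shows "f t \<le> v"
proof (rule tendsto_upperbound)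
  show "(f \<longlongrightarrow> f t) (at_right t)"
    using assms(1) by (simp add: isCont_def filterlim_at_split)
  show "\<forall>\<^sub>F x in at_right t. f x \<le> v"
    using eventually_at_right_real[OF assms(2)] by eventually_elim (use assms(3) in auto)
qed simp

context mm begin

lemma D_der:
  assumes sol: "is_solution F K z" and t: "t \<in> K" and U: "UU (z t) > 0"
  shows "((\<lambda>t. WW (z t) - Winf (UU (z t))) has_real_derivative
      - (k1 * dd * UU (z t) / Winf (UU (z t)) + k1 * WW (z t)) * (WW (z t) - Winf (UU (z t)))) (at t)"
proof -
  define u where "u = UU (z t)"
  define w where "w = WW (z t)"
  define V where "V = Winf u"
  have Vp: "V > 0" using Winf_bd(4)[of u] U by (simp add: V_def u_def)
  have d: "((\<lambda>t. WW (z t) - Winf (UU (z t))) has_real_derivative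
      (k1 * dd * u - w * (k1 * (u + w) + bb)) - HH u V * (k2 * w)) (at t)"
    using DERIV_diff[OF UW_der(2)[OF sol t] DERIV_chain2[OF Winf_der[OF U] UW_der(1)[OF sol t]]]
    by (simp add: u_def w_def V_def)
  have HV: "HH u V = (k1 * dd * u - V * (k1 * (u + V) + bb)) / (k2 * V)"
    using HH_mul[of V u] Vp k2p by (simp add: field_simps)
  have "(k1 * dd * u - w * (k1 * (u + w) + bb)) - HH u V * (k2 * w)
      = - (k1 * dd * u / V + k1 * w) * (w - V)"
    unfolding HV using Vp k2p by (simp add: field_simps)
  then show ?thesis using d by (simp add: u_def w_def V_def)
qed

lemma UU_cont: "isCont UU p" unfolding UU_def by (intro continuous_intros)
lemma WW_cont: "isCont WW p" unfolding WW_def by (intro continuous_intros)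
lemma pt_cont: "continuous_on UNIV (\<lambda>q. pt (fst q) (snd q))" unfolding pt_def by (intro continuous_intros)

lemma P1_U:
  assumes "((\<lambda>t. poincare (y t)) \<longlongrightarrow> P1) G"
  shows "filterlim (\<lambda>t. UU (y t)) at_top G"
proof -
  define r where "r t = sqrt (1 + (fst (y t))\<^sup>2 + (snd (y t))\<^sup>2)" for t
  have rp: "r t > 0" for t by (simp add: r_def add_pos_nonneg)
  have comps: "((\<lambda>t. fst (y t) / r t) \<longlongrightarrow> 1) G" "((\<lambda>t. snd (y t) / r t) \<longlongrightarrow> 0) G"
      "((\<lambda>t. 1 / r t) \<longlongrightarrow> 0) G"
  proof -
    have e: "poincare (y t) = (fst (y t) / r t, snd (y t) / r t, 1 / r t)" for t
      by (simp add: poincare_def Let_def r_def)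
    have "((\<lambda>t. fst (poincare (y t))) \<longlongrightarrow> fst P1) G" by (intro tendsto_intros assms)
    then show "((\<lambda>t. fst (y t) / r t) \<longlongrightarrow> 1) G" by (simp add: e P1_def)
    have "((\<lambda>t. fst (snd (poincare (y t)))) \<longlongrightarrow> fst (snd P1)) G" by (intro tendsto_intros assms)
    then show "((\<lambda>t. snd (y t) / r t) \<longlongrightarrow> 0) G" by (simp add: e P1_def)
    have "((\<lambda>t. snd (snd (poincare (y t)))) \<longlongrightarrow> snd (snd P1)) G" by (intro tendsto_intros assms)
    then show "((\<lambda>t. 1 / r t) \<longlongrightarrow> 0) G" by (simp add: e P1_def)
  qed
  have q: "((\<lambda>t. fst (y t) / r t + snd (y t) / r t - (s0 + c0) * (1 / r t)) \<longlongrightarrow> 1 + 0 - (s0 + c0) * 0) G"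
    by (intro tendsto_intros comps)
  have rinf: "filterlim (\<lambda>t. inverse (1 / r t)) at_top G"
    by (rule filterlim_inverse_at_top[OF comps(3)]) (simp add: rp)
  have "filterlim (\<lambda>t. (fst (y t) / r t + snd (y t) / r t - (s0 + c0) * (1 / r t)) * inverse (1 / r t)) at_top G"
    by (rule filterlim_tendsto_pos_mult_at_top[OF q _ rinf]) simp
  moreover have "(fst (y t) / r t + snd (y t) / r t - (s0 + c0) * (1 / r t)) * inverse (1 / r t) = UU (y t)" for t
    using rp[of t] by (simp add: UU_def field_simps)
  ultimately show ?thesis by simp
qed

end

context mm begin

lemma graph_image:
  assumes sol: "is_solution F K z"
    and pos: "\<And>t. t \<in> K \<Longrightarrow> UU (z t) > 0 \<and> WW (z t) = Winf (UU (z t))"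
    and lo: "((\<lambda>t. UU (z t)) \<longlongrightarrow> 0) (lower_end K)"
    and hi: "filterlim (\<lambda>t. UU (z t)) at_top (upper_end K)"
  shows "z ` K = {pt u (Winf u) | u. u > 0}"
proof
  show "z ` K \<subseteq> {pt u (Winf u) | u. u > 0}"
  proof
    fix p assume "p \<in> z ` K"
    then obtain t where t: "t \<in> K" "p = z t" by blast
    have "p = pt (UU (z t)) (WW (z t))" using pt_UW[of "z t"] t by simp
    then show "p \<in> {pt u (Winf u) | u. u > 0}" using pos[OF t(1)] by auto
  qed
  show "{pt u (Winf u) | u. u > 0} \<subseteq> z ` K"
  proof
    fix p assume "p \<in> {pt u (Winf u) | u. u > 0}"
    then obtain u where u: "u > 0" "p = pt u (Winf u)" by blast
    have oK: "open K" "is_interval K" "K \<noteq> {}" using sol by (auto simp: is_solution_def)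
    obtain t0 where t0: "t0 \<in> K" using oK(3) by blast
    have e1: "\<forall>\<^sub>F t in lower_end K. UU (z t) < u \<and> (t \<in> K \<and> t < t0)"
      using order_tendstoD(2)[OF lo u(1)] ev_lower[OF oK(1,2) t0] by (rule eventually_conj)
    obtain ta where ta: "UU (z ta) < u" "ta \<in> K" using eventually_happens'[OF lower_end_nontriv e1] by blast
    have e2: "\<forall>\<^sub>F t in upper_end K. u < UU (z t) \<and> (t \<in> K \<and> t > t0)"
      using filterlim_at_top_dense[THEN iffD1, OF hi, rule_format, of u] ev_upper[OF oK(1,2) t0]
      by (rule eventually_conj)
    obtain tb where tb: "u < UU (z tb)" "tb \<in> K" using eventually_happens'[OF upper_end_nontriv e2] by blast
    have cU: "continuous_on K (\<lambda>t. UU (z t))"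
      using UW_der(1)[OF sol] by (meson DERIV_isCont continuous_at_imp_continuous_on)
    have "connected ((\<lambda>t. UU (z t)) ` K)"
      using connected_continuous_image[OF cU] oK(2) by (simp add: is_interval_connected_1)
    then have "is_interval ((\<lambda>t. UU (z t)) ` K)" by (simp add: is_interval_connected_1)
    then have "u \<in> (\<lambda>t. UU (z t)) ` K"
      unfolding is_interval_1 using ta tb by (meson imageI less_imp_le)
    then obtain t where t: "t \<in> K" "UU (z t) = u" by blast
    have "z t = pt (UU (z t)) (WW (z t))" using pt_UW[of "z t"] by simp
    also have "\<dots> = p" using pos[OF t(1)] t(2) u(2) by simp
    finally show "p \<in> z ` K" using t(1) by (metis imageI)
  qed
qed

lemma const_sol: "is_solution F K (\<lambda>t. (s0, c0))" if "open K" "is_interval K" "K \<noteq> {}"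
  using that F_P0 by (auto simp: is_solution_def)

lemma hits_P0:
  assumes sol: "is_solution F K z" and t: "t \<in> K" "z t = (s0, c0)" and t': "t' \<in> K"
  shows "z t' = (s0, c0)"
proof -
  have oK: "open K" "is_interval K" "K \<noteq> {}" using sol by (auto simp: is_solution_def)
  show ?thesis using sol_unique[OF sol const_sol[OF oK] t(1) t(1) _ t' t'] t(2) by simp
qed

end

context mm begin

lemma x_exists:
  "\<exists>x. is_maximal_solution F UNIV x \<and> (x \<longlongrightarrow> (s0, c0)) at_bot \<and>
       ((\<lambda>t. poincare (x t)) \<longlongrightarrow> P1) at_top \<and>
       (\<forall>t. UU (x t) > 0 \<and> WW (x t) = Winf (UU (x t))) \<and>
       ((\<lambda>t. UU (x t)) \<longlongrightarrow> 0) at_bot \<and> filterlim (\<lambda>t. UU (x t)) at_top at_top"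
proof -
  obtain I x where mx: "is_maximal_solution F I x" and I0: "0 \<in> I" and x0: "x 0 = pt 1 (Winf 1)"
    using max_exist by blast
  have sol: "is_solution F I x" using mx by (simp add: is_maximal_solution_def)
  have oI: "open I" "is_interval I" using sol by (auto simp: is_solution_def)
  have seg: "t \<in> I" if "a \<in> I" "b \<in> I" "a \<le> t" "t \<le> b" for a b t
    using oI(2)[unfolded is_interval_1, rule_format, OF that(1,2)] that(3,4) by blast
  define U where "U = (\<lambda>t. UU (x t))"
  define W where "W = (\<lambda>t. WW (x t))"
  define D where "D = (\<lambda>t. W t - Winf (U t))"
  define \<psi> where "\<psi> = (\<lambda>t. k1 * dd * U t / Winf (U t) + k1 * W t)"
  have U0: "U 0 = 1" and W0: "W 0 = Winf 1" using x0 by (simp_all add: U_def W_def)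
  have D0: "D 0 = 0" by (simp add: D_def U0 W0)
  have W1: "ell 1 \<le> Winf 1" "Winf 1 \<le> msl * 1" "Winf 1 \<le> Dl" "Winf 1 > 0" using Winf_bd[of 1] by auto
  note F = fwd[OF mx I0, unfolded x0 UU_pt WW_pt]
  have unbA: "\<not> bdd_above I" using F(1) W1 by simp
  have fw: "t \<in> I \<and> U t > 0 \<and> W t > 0 \<and> W t \<le> Dl \<and> U t \<ge> 1 + k2 * ell 1 * t" if "t \<ge> 0" for t
    using F(2)[of t] W1 that by (simp add: U_def W_def x0)
  have dU: "(U has_real_derivative k2 * W t) (at t)" if "t \<in> I" for t
    using UW_der(1)[OF sol that] by (simp add: U_def W_def)
  have dW: "(W has_real_derivative k1 * dd * U t - W t * (k1 * (U t + W t) + bb)) (at t)" if "t \<in> I" for t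
    using UW_der(2)[OF sol that] by (simp add: U_def W_def)
  have dD: "(D has_real_derivative - \<psi> t * D t) (at t)" if "t \<in> I" "U t > 0" for t
    using D_der[OF sol that(1)] that(2) by (simp add: D_def \<psi>_def U_def W_def)
  have dD2: "((\<lambda>t. (D t)\<^sup>2) has_real_derivative - 2 * \<psi> t * (D t)\<^sup>2) (at t)" if "t \<in> I" "U t > 0" for t
    using DERIV_power[OF dD[OF that], of 2] by (simp add: power2_eq_square algebra_simps)
  have contU: "isCont U t" if "t \<in> I" for t using DERIV_isCont[OF dU[OF that]] .
  have contW: "isCont W t" if "t \<in> I" for t using DERIV_isCont[OF dW[OF that]] .
  have cont\<psi>: "isCont \<psi> t" if "t \<in> I" "U t > 0" for t
  proof -
    have "isCont (\<lambda>t. Winf (U t)) t" using isCont_o2[OF contU[OF that(1)] DERIV_isCont[OF Winf_der[OF that(2)]]] .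
    moreover have "Winf (U t) \<noteq> 0" using Winf_bd(4)[OF that(2)] by simp
    ultimately show ?thesis unfolding \<psi>_def using contU[OF that(1)] contW[OF that(1)]
      by (intro continuous_intros) auto
  qed
  have Dfwd: "D t = 0" if "t \<ge> 0" for t
  proof -
    have "(D t)\<^sup>2 \<le> (D 0)\<^sup>2"
    proof (rule DERIV_nonpos_imp_nonincreasing[where f="\<lambda>t. (D t)\<^sup>2", OF that])
      fix s assume s: "0 \<le> s" "s \<le> t"
      have fs: "s \<in> I" "U s > 0" "W s > 0" using fw[OF s(1)] by auto
      have "\<psi> s \<ge> 0" using fs k1 dd_pos Winf_bd(4)[OF fs(2)] by (simp add: \<psi>_def)
      then have "- 2 * \<psi> s * (D s)\<^sup>2 \<le> 0" by (simp add: mult_nonneg_nonneg)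
      then show "\<exists>y. ((\<lambda>t. (D t)\<^sup>2) has_real_derivative y) (at s) \<and> y \<le> 0" using dD2[OF fs(1,2)] by blast
    qed
    then show ?thesis using D0 by simp
  qed
  have Dback: "D t = 0" if t: "t \<in> I" "t \<le> 0" and posU: "\<And>s. t \<le> s \<Longrightarrow> s \<le> 0 \<Longrightarrow> U s > 0" for t
  proof -
    have inI: "s \<in> I" if "t \<le> s" "s \<le> 0" for s using seg[OF t(1) I0 that] .
    have c\<psi>: "continuous_on {t..0} \<psi>"
      using cont\<psi> inI posU by (meson atLeastAtMost_iff continuous_at_imp_continuous_on)
    obtain M where M: "\<forall>z\<in>\<psi> ` {t..0}. norm z \<le> M"
      using compact_imp_bounded[OF compact_continuous_image[OF c\<psi> compact_Icc]] unfolding bounded_iff by blast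
    show ?thesis
    proof -
      have "(D t)\<^sup>2 = 0"
      proof (rule energy_zero[where e="\<lambda>t. (D t)\<^sup>2" and e'="\<lambda>s. - 2 * \<psi> s * (D s)\<^sup>2"
            and M="2 * M" and a=t and b=0 and tz=0 and t=t])
        fix s assume s: "t \<le> s" "s \<le> 0"
        show "((\<lambda>t. (D t)\<^sup>2) has_real_derivative - 2 * \<psi> s * (D s)\<^sup>2) (at s)"
          using dD2[OF inI[OF s] posU[OF s]] .
        show "0 \<le> (D s)\<^sup>2" by simp
        have "\<bar>\<psi> s\<bar> \<le> M" using M s by auto
        then have "\<bar>\<psi> s\<bar> * (D s)\<^sup>2 \<le> M * (D s)\<^sup>2" by (simp add: mult_right_mono)
        then show "\<bar>- 2 * \<psi> s * (D s)\<^sup>2\<bar> \<le> 2 * M * (D s)\<^sup>2" by (simp add: abs_mult)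
      qed (use t D0 in auto)
      then show ?thesis by simp
    qed
  qed
  have Ubk: "U t > 0" if t: "t \<in> I" "t \<le> 0" for t
  proof (rule ccontr)
    assume nt: "\<not> U t > 0"
    have inI: "s \<in> I" if "t \<le> s" "s \<le> 0" for s using seg[OF t(1) I0 that] .
    define S where "S = {t..0} \<inter> U -` {..0}"
    have cS: "closed S" unfolding S_def
      by (rule continuous_closed_preimage) (use contU inI in \<open>auto intro!: continuous_at_imp_continuous_on\<close>)
    have tS: "t \<in> S" using nt t by (simp add: S_def)
    have bdd: "bdd_above S" by (auto simp: S_def intro: bdd_aboveI[where M=0])
    define \<sigma> where "\<sigma> = Sup S"
    have \<sigma>S: "\<sigma> \<in> S" unfolding \<sigma>_def using closed_contains_Sup[OF _ bdd cS] tS by blast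
    have \<sigma>0: "\<sigma> < 0"
    proof -
      have "\<sigma> \<le> 0" "U \<sigma> \<le> 0" using \<sigma>S by (auto simp: S_def)
      moreover have "\<sigma> \<noteq> 0" using \<open>U \<sigma> \<le> 0\<close> U0 by auto
      ultimately show ?thesis by simp
    qed
    have \<sigma>t: "t \<le> \<sigma>" using \<sigma>S by (simp add: S_def)
    have \<sigma>I: "\<sigma> \<in> I" using inI \<sigma>t \<sigma>0 by simp
    have right: "U s > 0" if "\<sigma> < s" "s \<le> 0" for s
    proof (rule ccontr)
      assume "\<not> U s > 0"
      then have "s \<in> S" using that \<sigma>t by (simp add: S_def)
      then have "s \<le> \<sigma>" unfolding \<sigma>_def using bdd by (simp add: cSup_upper)
      then show False using that by simp
    qed
    have Dr: "D s = 0" if "\<sigma> < s" "s \<le> 0" for s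
      by (rule Dback) (use that inI \<sigma>t right in auto)
    have Wr: "ell (U s) \<le> W s \<and> W s \<le> msl * U s" if "\<sigma> < s" "s \<le> 0" for s
      using Dr[OF that] Winf_bd(1,2)[OF right[OF that]] by (simp add: D_def)
    have "U \<sigma> \<ge> 0"
      by (rule cont_right_ge[OF contU[OF \<sigma>I] \<sigma>0]) (use right in \<open>auto intro: less_imp_le\<close>)
    then have Us: "U \<sigma> = 0" using \<sigma>S by (simp add: S_def)
    have "W \<sigma> - msl * U \<sigma> \<le> 0"
    proof (rule cont_right_le[where f="\<lambda>s. W s - msl * U s", OF _ \<sigma>0])
      show "isCont (\<lambda>s. W s - msl * U s) \<sigma>" using contU[OF \<sigma>I] contW[OF \<sigma>I] by (intro continuous_intros)
      show "W s - msl * U s \<le> 0" if "\<sigma> < s" "s < 0" for s using Wr[of s] that by simp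
    qed
    moreover have "W \<sigma> \<ge> 0"
    proof (rule cont_right_ge[OF contW[OF \<sigma>I] \<sigma>0])
      fix s assume s: "\<sigma> < s" "s < 0"
      have "ell (U s) \<ge> 0" using ell_facts(1)[of "U s"] right[of s] s by simp
      then show "W s \<ge> 0" using Wr[of s] s by simp
    qed
    ultimately have Ws: "W \<sigma> = 0" using Us by simp
    have "x \<sigma> = (s0, c0)" using UW_zero[of "x \<sigma>"] Us Ws by (simp add: U_def W_def)
    then have "x 0 = (s0, c0)" using hits_P0[OF sol \<sigma>I _ I0] by simp
    then show False using U0 by (simp add: U_def UU_def)
  qed
  have Dbk: "D t = 0" if "t \<in> I" "t \<le> 0" for t
    by (rule Dback[OF that]) (use Ubk seg[OF that(1) I0] in auto)
  have Wbk: "W t = Winf (U t)" if "t \<in> I" "t \<le> 0" for t using Dbk[OF that] by (simp add: D_def)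
  have unbB: "\<not> bdd_below I"
  proof (rule blowup_left[OF mx I0, of "\<bar>s0\<bar> + \<bar>c0\<bar> + 1 + 2 * msl"])
    fix t assume t: "t \<in> I" "t \<le> 0"
    have inI: "s \<in> I" if "t \<le> s" "s \<le> 0" for s using seg[OF t(1) I0 that] .
    have "U t \<le> U 0"
    proof (rule DERIV_nonneg_imp_nondecreasing[where f=U, OF t(2)])
      fix s assume s: "t \<le> s" "s \<le> 0"
      have "W s > 0" using Wbk[OF inI[OF s] s(2)] Winf_bd(4)[OF Ubk[OF inI[OF s] s(2)]] by simp
      then show "\<exists>y. (U has_real_derivative y) (at s) \<and> 0 \<le> y"
        using dU[OF inI[OF s]] k2 by (intro exI[where x="k2 * W s"]) simp
    qed
    then have Ut: "0 < U t" "U t \<le> 1" using Ubk[OF t] U0 by auto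
    have "msl * U t \<le> msl" using Ut msl_facts(1) by (simp add: mult_left_le_one_le)
    then have Wt: "0 < W t" "W t \<le> msl" using Wbk[OF t] Winf_bd(2,4)[OF Ut(1)] by auto
    have "norm (x t) = norm (pt (U t) (W t))" using pt_UW[of "x t"] by (simp add: U_def W_def)
    also have "\<dots> \<le> \<bar>s0\<bar> + \<bar>c0\<bar> + \<bar>U t\<bar> + 2 * \<bar>W t\<bar>" by (rule norm_pt)
    also have "\<dots> \<le> \<bar>s0\<bar> + \<bar>c0\<bar> + 1 + 2 * msl" using Ut Wt by simp
    finally show "norm (x t) \<le> \<bar>s0\<bar> + \<bar>c0\<bar> + 1 + 2 * msl" .
  qed
  have IU: "I = UNIV"
  proof -
    have "t \<in> I" for t
    proof -
      obtain a where a: "a \<in> I" "a < t" using unbB unfolding bdd_below_def by (meson not_le)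
      obtain b where b: "b \<in> I" "t < b" using unbA unfolding bdd_above_def by (meson not_le)
      show ?thesis using seg[OF a(1) b(1)] a b by simp
    qed
    then show ?thesis by blast
  qed
  have allp: "U t > 0 \<and> W t = Winf (U t)" for t
  proof (cases "t \<ge> 0")
    case True then show ?thesis using fw[OF True] Dfwd[OF True] by (simp add: D_def)
  next
    case False then show ?thesis using Ubk[of t] Wbk[of t] IU by simp
  qed
  have Wp: "W t > 0" for t using allp[of t] Winf_bd(4)[of "U t"] by simp
  have Umono: "U a \<le> U b" if "a \<le> b" for a b
  proof (rule DERIV_nonneg_imp_nondecreasing[where f=U, OF that])
    fix s show "\<exists>y. (U has_real_derivative y) (at s) \<and> 0 \<le> y"
      using dU[of s] IU Wp[of s] k2 by (intro exI[where x="k2 * W s"]) simp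
  qed
  have Ulim: "(U \<longlongrightarrow> 0) at_bot"
  proof (rule order_tendstoI)
    fix a :: real assume "a < 0"
    then show "\<forall>\<^sub>F t in at_bot. a < U t" using allp by (intro always_eventually) (metis less_trans)
  next
    fix a :: real assume a: "0 < a"
    show "\<forall>\<^sub>F t in at_bot. U t < a"
    proof (rule ccontr)
      assume "\<not> (\<forall>\<^sub>F t in at_bot. U t < a)"
      then have fr: "\<forall>N. \<exists>t\<le>N. U t \<ge> a" unfolding eventually_at_bot_linorder by (meson not_le)
      have Uge: "U t \<ge> a" for t
      proof -
        obtain t' where "t' \<le> t" "U t' \<ge> a" using fr by blast
        then show ?thesis using Umono[of t' t] by simp
      qed
      have la: "ell a > 0" using ell_facts(4)[of a] a by simp
      define T where "T = - 2 / (k2 * ell a)"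
      have T: "T \<le> 0" using k2p la by (simp add: T_def)
      have "U T - k2 * ell a * T \<le> U 0 - k2 * ell a * 0"
      proof (rule DERIV_nonneg_imp_nondecreasing[where f="\<lambda>s. U s - k2 * ell a * s", OF T])
        fix s assume s: "T \<le> s" "s \<le> 0"
        have "((\<lambda>s. U s - k2 * ell a * s) has_real_derivative k2 * W s - k2 * ell a) (at s)"
          using DERIV_diff[OF dU[of s] DERIV_cmult[OF DERIV_ident, of "k2 * ell a"]] IU by simp
        moreover have "k2 * W s - k2 * ell a \<ge> 0"
        proof -
          have "ell a \<le> ell (U s)" using Uge[of s] a by (intro ell_mono) auto
          also have "\<dots> \<le> W s" using allp[of s] Winf_bd(1)[of "U s"] by simp
          finally show ?thesis using k2 by (simp add: mult_left_mono)
        qed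
        ultimately show "\<exists>y. ((\<lambda>s. U s - k2 * ell a * s) has_real_derivative y) (at s) \<and> 0 \<le> y" by blast
      qed
      moreover have "k2 * ell a * T = -2" using k2p la by (simp add: T_def)
      ultimately have "U T \<le> -1" using U0 by simp
      then show False using allp[of T] by simp
    qed
  qed
  have Wlim: "(W \<longlongrightarrow> 0) at_bot"
  proof (rule tendsto_sandwich[where f="\<lambda>t. 0" and h="\<lambda>t. msl * U t"])
    show "\<forall>\<^sub>F n in at_bot. 0 \<le> W n" using Wp by (simp add: less_imp_le)
    show "\<forall>\<^sub>F n in at_bot. W n \<le> msl * U n" using allp Winf_bd(2) by simp
    show "((\<lambda>t. msl * U t) \<longlongrightarrow> 0) at_bot" using tendsto_mult[OF tendsto_const Ulim, of msl] by simp
  qed simp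
  have xeq: "x t = (s0 + U t + W t, c0 - W t)" for t using pt_UW[of "x t"] by (simp add: U_def W_def pt_def)
  have xlim: "(x \<longlongrightarrow> (s0, c0)) at_bot"
  proof -
    have "((\<lambda>t. (s0 + U t + W t, c0 - W t)) \<longlongrightarrow> (s0 + 0 + 0, c0 - 0)) at_bot"
      by (intro tendsto_intros Ulim Wlim)
    moreover have "x = (\<lambda>t. (s0 + U t + W t, c0 - W t))" by (rule ext) (rule xeq)
    ultimately show ?thesis by simp
  qed
  have Utop: "filterlim U at_top at_top"
    unfolding filterlim_at_top eventually_at_top_linorder
  proof
    fix Z
    have l1: "ell 1 > 0" using ell_facts(4)[of 1] by simp
    show "\<exists>N. \<forall>t\<ge>N. Z \<le> U t"
    proof (intro exI allI impI)
      fix t assume t: "\<bar>Z\<bar> / (k2 * ell 1) \<le> t"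
      have t0: "t \<ge> 0" using t k2p l1 by (smt (verit) divide_nonneg_pos mult_pos_pos abs_ge_zero)
      have "\<bar>Z\<bar> \<le> k2 * ell 1 * t" using t k2p l1 by (simp add: divide_le_eq mult.commute)
      then show "Z \<le> U t" using fw[OF t0] by linarith
    qed
  qed
  have l1: "ell 1 > 0" using ell_facts(4)[of 1] by simp
  have stop: "filterlim (\<lambda>t. fst (x t)) at_top at_top"
    unfolding filterlim_at_top eventually_at_top_linorder
  proof
    fix Z
    show "\<exists>N. \<forall>t\<ge>N. Z \<le> fst (x t)"
    proof (intro exI allI impI)
      fix t assume t: "(\<bar>Z\<bar> + \<bar>s0\<bar>) / (k2 * ell 1) \<le> t"
      have "(\<bar>Z\<bar> + \<bar>s0\<bar>) / (k2 * ell 1) \<ge> 0" using k2p l1 by simp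
      then have t0: "t \<ge> 0" using t by linarith
      have "\<bar>Z\<bar> + \<bar>s0\<bar> \<le> k2 * ell 1 * t" using t k2p l1 by (simp add: divide_le_eq mult.commute)
      moreover have "fst (x t) = s0 + U t + W t" using xeq[of t] by simp
      ultimately show "Z \<le> fst (x t)" using fw[OF t0] by linarith
    qed
  qed
  have cb: "\<forall>\<^sub>F t in at_top. \<bar>snd (x t)\<bar> \<le> \<bar>c0\<bar> + Dl"
    unfolding eventually_at_top_linorder
  proof (intro exI[where x=0] allI impI)
    fix t :: real assume t: "t \<ge> 0"
    have "snd (x t) = c0 - W t" using xeq[of t] by simp
    then show "\<bar>snd (x t)\<bar> \<le> \<bar>c0\<bar> + Dl" using fw[OF t] by linarith
  qed
  have plim: "((\<lambda>t. poincare (x t)) \<longlongrightarrow> P1) at_top"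
    using poincare_P1[OF stop cb] by simp
  have mxU: "is_maximal_solution F UNIV x" using mx IU by simp
  show ?thesis
    apply (rule exI[where x=x])
    using mxU xlim plim allp Ulim Utop by (simp add: U_def W_def)
qed

end

lemma not_bdd_below_real: "\<not> bdd_below (UNIV :: real set)"
proof
  assume "bdd_below (UNIV :: real set)"
  then obtain M :: real where "\<And>x. M \<le> x" unfolding bdd_below_def by blast
  from this[of "M - 1"] show False by simp
qed

lemma not_bdd_above_real: "\<not> bdd_above (UNIV :: real set)"
proof
  assume "bdd_above (UNIV :: real set)"
  then obtain M :: real where "\<And>x. x \<le> M" unfolding bdd_above_def by blast
  from this[of "M + 1"] show False by simp
qed

context mm begin

lemma poincare_P0_ne: "poincare (s0, c0) \<noteq> P1"
proof -
  have "sqrt (1 + s0\<^sup>2 + c0\<^sup>2) > 0" by (simp add: add_pos_nonneg)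
  then show ?thesis by (simp add: poincare_def P1_def Let_def)
qed

lemma y_in_graph:
  assumes mx: "is_maximal_solution F J y"
    and lo: "((\<lambda>t. poincare (y t)) \<longlongrightarrow> poincare (s0, c0)) (lower_end J)"
    and hi: "((\<lambda>t. poincare (y t)) \<longlongrightarrow> P1) (upper_end J)"
  shows "y ` J = {pt u (Winf u) | u. u > 0}"
proof -
  have sol: "is_solution F J y" using mx by (simp add: is_maximal_solution_def)
  have oJ: "open J" "is_interval J" "J \<noteq> {}" using sol by (auto simp: is_solution_def)
  have seg: "t \<in> J" if "a \<in> J" "b \<in> J" "a \<le> t" "t \<le> b" for a b t
    using oJ(2)[unfolded is_interval_1, rule_format, OF that(1,2)] that(3,4) by blast
  define U where "U = (\<lambda>t. UU (y t))"
  define W where "W = (\<lambda>t. WW (y t))"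
  have ylo: "(y \<longlongrightarrow> (s0, c0)) (lower_end J)" using lo by (simp add: poincare_tendsto_iff)
  have Ulo: "(U \<longlongrightarrow> 0) (lower_end J)"
    using isCont_tendsto_compose[OF UU_cont ylo] by (simp add: U_def UU_def)
  have Wlo: "(W \<longlongrightarrow> 0) (lower_end J)"
    using isCont_tendsto_compose[OF WW_cont ylo] by (simp add: W_def WW_def)
  have Uhi: "filterlim U at_top (upper_end J)" using P1_U[OF hi] by (simp add: U_def)
  have dU: "(U has_real_derivative k2 * W t) (at t)" if "t \<in> J" for t
    using UW_der(1)[OF sol that] by (simp add: U_def W_def)
  have dW: "(W has_real_derivative k1 * dd * U t - W t * (k1 * (U t + W t) + bb)) (at t)" if "t \<in> J" for t
    using UW_der(2)[OF sol that] by (simp add: U_def W_def)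
  have fwdpos: "U t > 0 \<and> W t > 0" if "t0 \<in> J" "t \<in> J" "t0 \<le> t" "U t0 > 0" "W t0 > 0" for t0 t
  proof (rule quad_inv[where a=k2 and b="k1 * dd" and \<phi>="\<lambda>t. k1 * (U t + W t) + bb" and ta=t0 and tb=t and U=U and W=W])
    show "k2 > 0" "k1 * dd > 0" using k2p k1p dd_pos by simp_all
    show "(U has_real_derivative k2 * W s) (at s)" if "t0 \<le> s" "s \<le> t" for s
      using dU seg[OF \<open>t0 \<in> J\<close> \<open>t \<in> J\<close> that] by simp
    show "(W has_real_derivative k1 * dd * U s - W s * (k1 * (U s + W s) + bb)) (at s)" if "t0 \<le> s" "s \<le> t" for s
      using dW seg[OF \<open>t0 \<in> J\<close> \<open>t \<in> J\<close> that] by simp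
  qed (use that in auto)
  have fwdneg: "U t < 0 \<and> W t < 0" if "t0 \<in> J" "t \<in> J" "t0 \<le> t" "U t0 < 0" "W t0 < 0" for t0 t
  proof -
    have "(\<lambda>s. - U s) t > 0 \<and> (\<lambda>s. - W s) t > 0"
    proof (rule quad_inv[where a=k2 and b="k1 * dd" and \<phi>="\<lambda>t. k1 * (U t + W t) + bb" and ta=t0 and tb=t])
      show "k2 > 0" "k1 * dd > 0" using k2p k1p dd_pos by simp_all
      show "((\<lambda>s. - U s) has_real_derivative k2 * (- W s)) (at s)" if "t0 \<le> s" "s \<le> t" for s
        using DERIV_minus[OF dU[OF seg[OF \<open>t0 \<in> J\<close> \<open>t \<in> J\<close> that]]] by simp
      show "((\<lambda>s. - W s) has_real_derivative k1 * dd * (- U s) - (- W s) * (k1 * (U s + W s) + bb)) (at s)"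
        if "t0 \<le> s" "s \<le> t" for s
        using DERIV_minus[OF dW[OF seg[OF \<open>t0 \<in> J\<close> \<open>t \<in> J\<close> that]]] by (simp add: algebra_simps)
    qed (use that in auto)
    then show ?thesis by simp
  qed
  have notneg: "\<not> (U t < 0 \<and> W t < 0)" if t: "t \<in> J" for t
  proof
    assume h: "U t < 0 \<and> W t < 0"
    have "\<forall>\<^sub>F s in upper_end J. 0 < U s \<and> (s \<in> J \<and> s > t)"
      using filterlim_at_top_dense[THEN iffD1, OF Uhi, rule_format, of 0] ev_upper[OF oJ(1,2) t]
      by (rule eventually_conj)
    then obtain s where s: "0 < U s" "s \<in> J" "s > t" using eventually_happens'[OF upper_end_nontriv] by blast
    then show False using fwdneg[OF t s(2) _ ] h by fastforce
  qed
  have posall: "U t2 > 0 \<and> W t2 > 0" if t2: "t2 \<in> J" for t2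
  proof (rule ccontr)
    assume np: "\<not> (U t2 > 0 \<and> W t2 > 0)"
    have prod: "U t * W t \<le> 0" if "t \<in> J" "t \<le> t2" for t
    proof -
      have "\<not> (U t > 0 \<and> W t > 0)" using fwdpos[OF that(1) t2 that(2)] np by blast
      moreover have "\<not> (U t < 0 \<and> W t < 0)" using notneg[OF that(1)] .
      ultimately show ?thesis by (metis mult_nonneg_nonpos mult_nonpos_nonneg not_le mult_eq_0_iff less_le order_refl)
    qed
    have U2: "(U t)\<^sup>2 \<le> (U \<tau>)\<^sup>2" if "\<tau> \<in> J" "t \<in> J" "\<tau> \<le> t" "t \<le> t2" for \<tau> t
    proof (rule DERIV_nonpos_imp_nonincreasing[where f="\<lambda>s. (U s)\<^sup>2", OF that(3)])
      fix s assume s: "\<tau> \<le> s" "s \<le> t"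
      have sJ: "s \<in> J" using seg[OF that(1,2) s] .
      have "((\<lambda>s. (U s)\<^sup>2) has_real_derivative 2 * k2 * (U s * W s)) (at s)"
        using DERIV_power[OF dU[OF sJ], of 2] by (simp add: algebra_simps)
      moreover have "2 * k2 * (U s * W s) \<le> 0" using prod[OF sJ] s that k2 by (simp add: mult_nonneg_nonpos)
      ultimately show "\<exists>y. ((\<lambda>s. (U s)\<^sup>2) has_real_derivative y) (at s) \<and> y \<le> 0" by blast
    qed
    have U0: "U t = 0" if "t \<in> J" "t \<le> t2" for t
    proof -
      have "(U t)\<^sup>2 \<le> 0"
      proof (rule tendsto_lowerbound[where f="\<lambda>\<tau>. (U \<tau>)\<^sup>2"])
        show "((\<lambda>\<tau>. (U \<tau>)\<^sup>2) \<longlongrightarrow> 0) (lower_end J)" using tendsto_power[OF Ulo, of 2] by simp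
        show "\<forall>\<^sub>F \<tau> in lower_end J. (U t)\<^sup>2 \<le> (U \<tau>)\<^sup>2"
          using ev_lower[OF oJ(1,2) that(1)] by (rule eventually_mono) (use U2 that in auto)
        show "lower_end J \<noteq> bot" by (rule lower_end_nontriv)
      qed
      then show ?thesis by simp
    qed
    obtain t1 where t1: "t1 \<in> J" "t1 < t2" using open_interval_below[OF oJ(1) t2] by blast
    obtain e where e: "e > 0" "ball t1 e \<subseteq> J" using oJ(1) t1(1) openE by blast
    have "k2 * W t1 = 0"
    proof (rule DERIV_local_const[OF dU[OF t1(1)]])
      show "0 < min e (t2 - t1)" using e t1 by simp
      show "\<forall>y. \<bar>t1 - y\<bar> < min e (t2 - t1) \<longrightarrow> U t1 = U y"
      proof (intro allI impI)
        fix y assume y: "\<bar>t1 - y\<bar> < min e (t2 - t1)"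
        have yJ: "y \<in> J" using e y by (auto simp: dist_real_def)
        have "y \<le> t2" using y by (simp add: abs_less_iff)
        then show "U t1 = U y" using U0[OF yJ] U0[OF t1(1)] t1 by simp
      qed
    qed
    then have "W t1 = 0" using k2p by simp
    then have yP0: "y t1 = (s0, c0)" using UW_zero[of "y t1"] U0[OF t1(1)] t1 by (simp add: U_def W_def)
    have ev: "\<forall>\<^sub>F t in upper_end J. poincare (y t) = poincare (s0, c0)"
      using ev_upper[OF oJ(1,2) t1(1)] by (rule eventually_mono) (use hits_P0[OF sol t1(1) yP0] in auto)
    have "((\<lambda>t. poincare (s0, c0)) \<longlongrightarrow> P1) (upper_end J)"
      using Lim_transform_eventually[OF hi ev] .
    then have "poincare (s0, c0) = P1" using tendsto_unique[OF upper_end_nontriv tendsto_const] by blast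
    then show False using poincare_P0_ne by simp
  qed
  define D where "D = (\<lambda>t. W t - Winf (U t))"
  have Dz: "D t = 0" if t: "t \<in> J" for t
  proof -
    have D2: "(D t)\<^sup>2 \<le> (D \<tau>)\<^sup>2" if "\<tau> \<in> J" "\<tau> \<le> t" for \<tau>
    proof (rule DERIV_nonpos_imp_nonincreasing[where f="\<lambda>s. (D s)\<^sup>2", OF that(2)])
      fix s assume s: "\<tau> \<le> s" "s \<le> t"
      have sJ: "s \<in> J" using seg[OF that(1) t s] .
      have ps: "U s > 0" "W s > 0" using posall[OF sJ] by auto
      define \<psi> where "\<psi> = k1 * dd * U s / Winf (U s) + k1 * W s"
      have dD: "(D has_real_derivative - \<psi> * D s) (at s)"
        using D_der[OF sol sJ] ps by (simp add: D_def \<psi>_def U_def W_def)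
      have "((\<lambda>s. (D s)\<^sup>2) has_real_derivative - 2 * \<psi> * (D s)\<^sup>2) (at s)"
        using DERIV_power[OF dD, of 2] by (simp add: power2_eq_square algebra_simps)
      moreover have "\<psi> \<ge> 0" using ps k1 dd_pos Winf_bd(4)[OF ps(1)] by (simp add: \<psi>_def)
      then have "- 2 * \<psi> * (D s)\<^sup>2 \<le> 0" by (simp add: mult_nonneg_nonneg)
      ultimately show "\<exists>y. ((\<lambda>s. (D s)\<^sup>2) has_real_derivative y) (at s) \<and> y \<le> 0" by blast
    qed
    have WU0: "((\<lambda>t. Winf (U t)) \<longlongrightarrow> 0) (lower_end J)"
    proof (rule tendsto_sandwich[where f="\<lambda>t. 0" and h="\<lambda>t. msl * U t"])
      show "\<forall>\<^sub>F n in lower_end J. 0 \<le> Winf (U n)"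
        using ev_lower[OF oJ(1,2) t] by (rule eventually_mono) (use posall Winf_bd(4) in \<open>auto intro: less_imp_le\<close>)
      show "\<forall>\<^sub>F n in lower_end J. Winf (U n) \<le> msl * U n"
        using ev_lower[OF oJ(1,2) t] by (rule eventually_mono) (use posall Winf_bd(2) in auto)
      show "((\<lambda>t. msl * U t) \<longlongrightarrow> 0) (lower_end J)" using tendsto_mult[OF tendsto_const Ulo, of msl] by simp
    qed simp
    have "(D t)\<^sup>2 \<le> 0"
    proof (rule tendsto_lowerbound[where f="\<lambda>\<tau>. (D \<tau>)\<^sup>2"])
      show "((\<lambda>\<tau>. (D \<tau>)\<^sup>2) \<longlongrightarrow> 0) (lower_end J)"
        using tendsto_power[OF tendsto_diff[OF Wlo WU0], of 2] by (simp add: D_def)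
      show "\<forall>\<^sub>F \<tau> in lower_end J. (D t)\<^sup>2 \<le> (D \<tau>)\<^sup>2"
        using ev_lower[OF oJ(1,2) t] by (rule eventually_mono) (use D2 in auto)
      show "lower_end J \<noteq> bot" by (rule lower_end_nontriv)
    qed
    then show ?thesis by simp
  qed
  show ?thesis
  proof (rule graph_image[OF sol])
    show "UU (y t) > 0 \<and> WW (y t) = Winf (UU (y t))" if "t \<in> J" for t
      using posall[OF that] Dz[OF that] by (simp add: U_def W_def D_def)
    show "((\<lambda>t. UU (y t)) \<longlongrightarrow> 0) (lower_end J)" using Ulo by (simp add: U_def)
    show "filterlim (\<lambda>t. UU (y t)) at_top (upper_end J)" using Uhi by (simp add: U_def)
  qed
qed

end

theorem proposition6p3:
  fixes k0 k1 km1 k2 eT :: real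
  assumes "k0 \<ge> 0" "k1 \<ge> 0" "km1 \<ge> 0" "k2 \<ge> 0" "eT \<ge> 0"
    and "k1 \<noteq> 0" "k2 \<noteq> 0" "k2 * eT < k0"
  shows "(\<forall>I x. is_maximal_solution (mm_field k0 k1 km1 k2 eT) I x \<and> 0 \<in> I \<and>
              fst (x 0) \<ge> 0 \<and> snd (x 0) \<ge> 0 \<longrightarrow>
              ((\<lambda>t. poincare (x t)) \<longlongrightarrow> P1) (upper_end I) \<and>
              ((\<lambda>t. snd (x t)) \<longlongrightarrow> eT) (upper_end I))
       \<and> (\<exists>I x. is_maximal_solution (mm_field k0 k1 km1 k2 eT) I x \<and>
              ((\<lambda>t. poincare (x t)) \<longlongrightarrow> poincare (P0 k0 k1 km1 k2 eT)) (lower_end I) \<and>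
              ((\<lambda>t. poincare (x t)) \<longlongrightarrow> P1) (upper_end I) \<and>
              (\<forall>J y. is_maximal_solution (mm_field k0 k1 km1 k2 eT) J y \<and>
                 ((\<lambda>t. poincare (y t)) \<longlongrightarrow> poincare (P0 k0 k1 km1 k2 eT)) (lower_end J) \<and>
                 ((\<lambda>t. poincare (y t)) \<longlongrightarrow> P1) (upper_end J) \<longrightarrow> y ` J = x ` I))"
proof -
  interpret mm k0 k1 km1 k2 eT by unfold_locales (use assms in auto)
  have A: "\<forall>I x. is_maximal_solution (mm_field k0 k1 km1 k2 eT) I x \<and> 0 \<in> I \<and>
              fst (x 0) \<ge> 0 \<and> snd (x 0) \<ge> 0 \<longrightarrow>
              ((\<lambda>t. poincare (x t)) \<longlongrightarrow> P1) (upper_end I) \<and>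
              ((\<lambda>t. snd (x t)) \<longlongrightarrow> eT) (upper_end I)"
  proof (intro allI impI)
    fix I x assume h: "is_maximal_solution (mm_field k0 k1 km1 k2 eT) I x \<and> 0 \<in> I \<and>
              fst (x 0) \<ge> 0 \<and> snd (x 0) \<ge> 0"
    show "((\<lambda>t. poincare (x t)) \<longlongrightarrow> P1) (upper_end I) \<and> ((\<lambda>t. snd (x t)) \<longlongrightarrow> eT) (upper_end I)"
      using part1 h by blast
  qed
  obtain x where mx: "is_maximal_solution (mm_field k0 k1 km1 k2 eT) UNIV x"
    and xlo: "(x \<longlongrightarrow> (s0, c0)) at_bot" and xhi: "((\<lambda>t. poincare (x t)) \<longlongrightarrow> P1) at_top"
    and allp: "\<forall>t. UU (x t) > 0 \<and> WW (x t) = Winf (UU (x t))"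
    and Ulim: "((\<lambda>t. UU (x t)) \<longlongrightarrow> 0) at_bot" and Utop: "filterlim (\<lambda>t. UU (x t)) at_top at_top"
    using x_exists by blast
  have lU: "lower_end UNIV = at_bot" by (simp add: lower_end_def not_bdd_below_real)
  have uU: "upper_end UNIV = at_top" by (simp add: upper_end_def not_bdd_above_real)
  have sol: "is_solution (mm_field k0 k1 km1 k2 eT) UNIV x" using mx by (simp add: is_maximal_solution_def)
  have ximg: "x ` UNIV = {pt u (Winf u) | u. u > 0}"
    by (rule graph_image[OF sol]) (use allp Ulim Utop lU uU in auto)
  have B: "\<exists>I x. is_maximal_solution (mm_field k0 k1 km1 k2 eT) I x \<and>
              ((\<lambda>t. poincare (x t)) \<longlongrightarrow> poincare (P0 k0 k1 km1 k2 eT)) (lower_end I) \<and>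
              ((\<lambda>t. poincare (x t)) \<longlongrightarrow> P1) (upper_end I) \<and>
              (\<forall>J y. is_maximal_solution (mm_field k0 k1 km1 k2 eT) J y \<and>
                 ((\<lambda>t. poincare (y t)) \<longlongrightarrow> poincare (P0 k0 k1 km1 k2 eT)) (lower_end J) \<and>
                 ((\<lambda>t. poincare (y t)) \<longlongrightarrow> P1) (upper_end J) \<longrightarrow> y ` J = x ` I)"
  proof (intro exI[where x=UNIV] exI[where x=x] conjI allI impI)
    show "is_maximal_solution (mm_field k0 k1 km1 k2 eT) UNIV x" by (rule mx)
    show "((\<lambda>t. poincare (x t)) \<longlongrightarrow> poincare (P0 k0 k1 km1 k2 eT)) (lower_end UNIV)"
      unfolding lU P0_eq poincare_tendsto_iff by (rule xlo)
    show "((\<lambda>t. poincare (x t)) \<longlongrightarrow> P1) (upper_end UNIV)" unfolding uU by (rule xhi)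
    fix J y assume h: "is_maximal_solution (mm_field k0 k1 km1 k2 eT) J y \<and>
                 ((\<lambda>t. poincare (y t)) \<longlongrightarrow> poincare (P0 k0 k1 km1 k2 eT)) (lower_end J) \<and>
                 ((\<lambda>t. poincare (y t)) \<longlongrightarrow> P1) (upper_end J)"
    have "y ` J = {pt u (Winf u) | u. u > 0}"
      using y_in_graph[of J y] h by (simp add: P0_eq)
    then show "y ` J = x ` UNIV" using ximg by simp
  qed
  show ?thesis using A B by blast
qed


end
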